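(* Let $P$ be a continuous poset and $(T_\varepsilon)_{\varepsilon\ge0}$ a superlinear family of Scott-continuous translations satisfying TR1 and TR2. Then for all Scott sheaves $\mathcal F,\mathcal G$ on $P^\sigma$ and all persistence modules $M,N$ over $P$: (i) $d_\sigma(\mathcal F,\mathcal G)=d_a(j^*\mathcal F,j^*\mathcal G)=d_a(j^!\mathcal F,j^!\mathcal G)$; (ii) $d_a(M,N)=d_a(\underline M,\underline N)$; (iii) $d_a(M,N)=d_a(\overline M,\overline N)$; (iv) $d_a(M,N)=d_\sigma(j_*M,j_*N)$.
   Context: Let $P$ be a poset (as a category, $p\to q$ iff $p\le q$). A subset is directed if nonempty and any two elements have an upper bound in it. $x\ll y$ means: for every directed $D$ whose supremum exists with $y\le\sup D$, some $d\in D$ satisfies $x\le d$. $P$ is continuous if for each $p$ the set $\{x:x\ll p\}$ is directed with supremum $p$. $U_p=\{x\ge p\}$. $U$ is Scott-open if it is an up-set meeting every directed set whose supremum exists and lies in $U$; $P^\sigma$ is $P$ with this topology, $\mathrm{Int}$ the Scott interior. A map $f\colon P\to P$ is Scott-continuous if order-preserving and $f(\sup D)=\sup f(D)$ for directed $D$ with existing supremum (equivalently, continuous on $P^\sigma$). A translation is an order-preserving $T$ with $p\le T(p)$; a family $(T_\varepsilon)_{\varepsilon\ge0}$ is superlinear if $T_\varepsilon(T_\delta(p))\le T_{\varepsilon+\delta}(p)$. TR1: each $T_\varepsilon$ is an order-isomorphism. TR2: $x\ll T_\varepsilon(x)$ for all $x$ and $\varepsilon>0$. $k$ is a commutative ring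 with unity; persistence modules are functors from $P$ to $k$-modules; Scott sheaves are sheaves of $k$-modules on $P^\sigma$. For a persistence module, $T^*M=M\circ T$ with natural morphism $M\to T^*M$ given by $M(p\le T(p))$; for a Scott sheaf, $T^*\mathcal F$ is the sheaf inverse image along $T\colon P^\sigma\to P^\sigma$, with natural morphism $\mathcal F\to T^*\mathcal F$ induced on stalks by $\mathcal F_p\to\mathcal F_{T(p)}$ (every Scott-open neighbourhood of $p$ contains $T(p)$). Objects $A,B$ (both persistence modules or both Scott sheaves) are $\varepsilon$-interleaved if there are morphisms $f\colon A\to T_\varepsilon^*B$, $g\colon B\to T_\varepsilon^*A$ with $T_\varepsilon^*(g)\circ f$ and $T_\varepsilon^*(f)\circ g$ equal to the natural morphisms $A\to T_\varepsilon^*T_\varepsilon^*A$ and $B\to T_\varepsilon^*T_\varepsilon^*B$. The interleaving distance is the infimum of such $\varepsilon$ ($\infty$ if none): $d_a$ for persistence modules, $d_\sigma$ for Scott sheaves. For $M(U)=\varprojlim_{x\in U}M_x$: $j_*M$ is the Scott sheaf $U\mapsto M(U)$; $j^*\mathcal F$ is the persistence module of stalks $p\mapsto\mathcal F_p$; $j^!\mathcal F$ is $p\mapsto\mathcal F(\mathrm{Int}\,U_p)$ with restrictions. $\underline M_p=\varprojlim_{x\gg p}M_x$, $\overline M_p=\varinjlim_{x\ll p}M_x$. *)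

theory Defs
  imports "HOL-Algebra.Module" "HOL-Library.Extended_Real"
begin

definition directed :: "'p::order set \<Rightarrow> bool" where
  "directed D \<longleftrightarrow> D \<noteq> {} \<and> (\<forall>x\<in>D. \<forall>y\<in>D. \<exists>z\<in>D. x \<le> z \<and> y \<le> z)"

definition is_sup :: "'p::order set \<Rightarrow> 'p \<Rightarrow> bool" where
  "is_sup D s \<longleftrightarrow> (\<forall>x\<in>D. x \<le> s) \<and> (\<forall>u. (\<forall>x\<in>D. x \<le> u) \<longrightarrow> s \<le> u)"

definition way_below :: "'p::order \<Rightarrow> 'p \<Rightarrow> bool" where
  "way_below x y \<longleftrightarrow>
     (\<forall>D s. directed D \<and> is_sup D s \<and> y \<le> s \<longrightarrow> (\<exists>d\<in>D. x \<le> d))"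

definition continuous_poset :: "'p::order itself \<Rightarrow> bool" where
  "continuous_poset (_ :: 'p itself) \<longleftrightarrow>
     (\<forall>p::'p. directed {x. way_below x p} \<and> is_sup {x. way_below x p} p)"

definition upset :: "'p::order \<Rightarrow> 'p set" where
  "upset p = {x. p \<le> x}"

definition scott_open :: "'p::order set \<Rightarrow> bool" where
  "scott_open U \<longleftrightarrow> (\<forall>x\<in>U. \<forall>y. x \<le> y \<longrightarrow> y \<in> U) \<and>
     (\<forall>D s. directed D \<and> is_sup D s \<and> s \<in> U \<longrightarrow> D \<inter> U \<noteq> {})"

definition scott_interior :: "'p::order set \<Rightarrow> 'p set" where
  "scott_interior A = \<Union>{U. scott_open U \<and> U \<subseteq> A}"

definition scott_continuous :: "('p::order \<Rightarrow> 'p) \<Rightarrow> bool" where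
  "scott_continuous f \<longleftrightarrow> mono f \<and>
     (\<forall>D s. directed D \<and> is_sup D s \<longrightarrow> is_sup (f ` D) (f s))"

definition translation :: "('p::order \<Rightarrow> 'p) \<Rightarrow> bool" where
  "translation T \<longleftrightarrow> mono T \<and> (\<forall>p. p \<le> T p)"

definition superlinear :: "(real \<Rightarrow> 'p::order \<Rightarrow> 'p) \<Rightarrow> bool" where
  "superlinear T \<longleftrightarrow>
     (\<forall>\<epsilon> \<delta> p. 0 \<le> \<epsilon> \<and> 0 \<le> \<delta> \<longrightarrow> T \<epsilon> (T \<delta> p) \<le> T (\<epsilon> + \<delta>) p)"

definition order_iso :: "('p::order \<Rightarrow> 'p) \<Rightarrow> bool" where
  "order_iso f \<longleftrightarrow> bij f \<and> (\<forall>x y. f x \<le> f y \<longleftrightarrow> x \<le> y)"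

definition TR1 :: "(real \<Rightarrow> 'p::order \<Rightarrow> 'p) \<Rightarrow> bool" where
  "TR1 T \<longleftrightarrow> (\<forall>\<epsilon>\<ge>0. order_iso (T \<epsilon>))"

definition TR2 :: "(real \<Rightarrow> 'p::order \<Rightarrow> 'p) \<Rightarrow> bool" where
  "TR2 T \<longleftrightarrow> (\<forall>\<epsilon>>0. \<forall>x. way_below x (T \<epsilon> x))"

section \<open>Module homomorphisms (k-linear maps), equality of maps is on the carrier\<close>

definition module_hom ::
  "('k, 'r) ring_scheme \<Rightarrow> ('k, 'a) module \<Rightarrow> ('k, 'b) module \<Rightarrow> ('a \<Rightarrow> 'b) set" where
  "module_hom R M N = {f. (\<forall>x\<in>carrier M. f x \<in> carrier N) \<and>
     (\<forall>x\<in>carrier M. \<forall>y\<in>carrier M. f (add M x y) = add N (f x) (f y)) \<and>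
     (\<forall>r\<in>carrier R. \<forall>x\<in>carrier M. f (smult M r x) = smult N r (f x))}"

text \<open>A diagram: index set I, relation rel, objects Mo i, maps Ma i j : Mo i -> Mo j for rel i j.\<close>

definition lim_carrier :: "'i set \<Rightarrow> ('i \<Rightarrow> 'i \<Rightarrow> bool) \<Rightarrow> ('i \<Rightarrow> ('k,'m) module)
     \<Rightarrow> ('i \<Rightarrow> 'i \<Rightarrow> 'm \<Rightarrow> 'm) \<Rightarrow> ('i \<Rightarrow> 'm) set" where
  "lim_carrier I rel Mo Ma = {f. (\<forall>i\<in>I. f i \<in> carrier (Mo i)) \<and>
      (\<forall>i\<in>I. \<forall>j\<in>I. rel i j \<longrightarrow> Ma i j (f i) = f j) \<and> (\<forall>i. i \<notin> I \<longrightarrow> f i = undefined)}"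

definition lim_module :: "'i set \<Rightarrow> ('i \<Rightarrow> 'i \<Rightarrow> bool) \<Rightarrow> ('i \<Rightarrow> ('k,'m) module)
     \<Rightarrow> ('i \<Rightarrow> 'i \<Rightarrow> 'm \<Rightarrow> 'm) \<Rightarrow> ('k, 'i \<Rightarrow> 'm) module" where
  "lim_module I rel Mo Ma =
     \<lparr>carrier = lim_carrier I rel Mo Ma,
      mult = undefined, one = undefined,
      zero = (\<lambda>i. if i \<in> I then zero (Mo i) else undefined),
      add = (\<lambda>f g i. if i \<in> I then add (Mo i) (f i) (g i) else undefined),
      smult = (\<lambda>r f i. if i \<in> I then smult (Mo i) r (f i) else undefined)\<rparr>"

text \<open>Restriction of limits along an inclusion of index sets J \<subseteq> I.\<close>
definition lim_restr :: "'i set \<Rightarrow> ('i \<Rightarrow> 'm) \<Rightarrow> ('i \<Rightarrow> 'm)" where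
  "lim_restr J f = (\<lambda>i. if i \<in> J then f i else undefined)"

definition dsum_module :: "'i set \<Rightarrow> ('i \<Rightarrow> ('k,'m) module) \<Rightarrow> ('k, 'i \<Rightarrow> 'm) module" where
  "dsum_module I Mo =
     \<lparr>carrier = {v. (\<forall>i\<in>I. v i \<in> carrier (Mo i)) \<and> (\<forall>i. i \<notin> I \<longrightarrow> v i = undefined)
                   \<and> finite {i\<in>I. v i \<noteq> zero (Mo i)}},
      mult = undefined, one = undefined,
      zero = (\<lambda>i. if i \<in> I then zero (Mo i) else undefined),
      add = (\<lambda>f g i. if i \<in> I then add (Mo i) (f i) (g i) else undefined),
      smult = (\<lambda>r f i. if i \<in> I then smult (Mo i) r (f i) else undefined)\<rparr>"

definition dsum_ins :: "'i set \<Rightarrow> ('i \<Rightarrow> ('k,'m) module) \<Rightarrow> 'i \<Rightarrow> 'm \<Rightarrow> ('i \<Rightarrow> 'm)" where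
  "dsum_ins I Mo i a = (\<lambda>j. if j = i then a else if j \<in> I then zero (Mo j) else undefined)"

definition colim_gens :: "'i set \<Rightarrow> ('i \<Rightarrow> 'i \<Rightarrow> bool) \<Rightarrow> ('i \<Rightarrow> ('k,'m) module)
     \<Rightarrow> ('i \<Rightarrow> 'i \<Rightarrow> 'm \<Rightarrow> 'm) \<Rightarrow> ('i \<Rightarrow> 'm) set" where
  "colim_gens I rel Mo Ma = {a_minus (dsum_module I Mo) (dsum_ins I Mo j (Ma i j a)) (dsum_ins I Mo i a)
       | i j a. i \<in> I \<and> j \<in> I \<and> rel i j \<and> a \<in> carrier (Mo i)}"

definition colim_rel :: "('k,'r) ring_scheme \<Rightarrow> 'i set \<Rightarrow> ('i \<Rightarrow> 'i \<Rightarrow> bool)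
     \<Rightarrow> ('i \<Rightarrow> ('k,'m) module) \<Rightarrow> ('i \<Rightarrow> 'i \<Rightarrow> 'm \<Rightarrow> 'm) \<Rightarrow> ('i \<Rightarrow> 'm) set" where
  "colim_rel R I rel Mo Ma =
     \<Inter>{S. Module.submodule S R (dsum_module I Mo) \<and> colim_gens I rel Mo Ma \<subseteq> S}"

text \<open>Quotient module M / K, elements are cosets.\<close>
definition qclass :: "('k,'m) module \<Rightarrow> 'm set \<Rightarrow> 'm \<Rightarrow> 'm set" where
  "qclass M K v = {w \<in> carrier M. a_minus M w v \<in> K}"

definition quot_module :: "('k,'m) module \<Rightarrow> 'm set \<Rightarrow> ('k, 'm set) module" where
  "quot_module M K =
     \<lparr>carrier = qclass M K ` carrier M,
      mult = undefined, one = undefined,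
      zero = qclass M K (zero M),
      add = (\<lambda>A B. qclass M K (add M (SOME a. a \<in> A) (SOME b. b \<in> B))),
      smult = (\<lambda>r A. qclass M K (smult M r (SOME a. a \<in> A)))\<rparr>"

definition colim_module :: "('k,'r) ring_scheme \<Rightarrow> 'i set \<Rightarrow> ('i \<Rightarrow> 'i \<Rightarrow> bool)
     \<Rightarrow> ('i \<Rightarrow> ('k,'m) module) \<Rightarrow> ('i \<Rightarrow> 'i \<Rightarrow> 'm \<Rightarrow> 'm) \<Rightarrow> ('k, ('i \<Rightarrow> 'm) set) module" where
  "colim_module R I rel Mo Ma = quot_module (dsum_module I Mo) (colim_rel R I rel Mo Ma)"

text \<open>Induced map of colimits along an inclusion of index sets I \<subseteq> J (same diagram).\<close>
definition colim_ext :: "('k,'r) ring_scheme \<Rightarrow> 'i set \<Rightarrow> 'i set \<Rightarrow> ('i \<Rightarrow> 'i \<Rightarrow> bool)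
     \<Rightarrow> ('i \<Rightarrow> ('k,'m) module) \<Rightarrow> ('i \<Rightarrow> 'i \<Rightarrow> 'm \<Rightarrow> 'm) \<Rightarrow> ('i \<Rightarrow> 'm) set \<Rightarrow> ('i \<Rightarrow> 'm) set" where
  "colim_ext R I J rel Mo Ma A =
     qclass (dsum_module J Mo) (colim_rel R J rel Mo Ma)
       (let v = (SOME v. v \<in> A) in
        (\<lambda>i. if i \<in> I then v i else if i \<in> J then zero (Mo i) else undefined))"

text \<open>A persistence module: objects p \<mapsto> M_p and maps M(p \<le> q).\<close>
type_synonym ('p, 'k, 'm) pmod = "('p \<Rightarrow> ('k, 'm) module) \<times> ('p \<Rightarrow> 'p \<Rightarrow> 'm \<Rightarrow> 'm)"

definition persistence_module :: "('k,'r) ring_scheme \<Rightarrow> ('p::order, 'k, 'm) pmod \<Rightarrow> bool" where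
  "persistence_module R M \<longleftrightarrow>
     (\<forall>p. Module.module R (fst M p)) \<and>
     (\<forall>p q. p \<le> q \<longrightarrow> snd M p q \<in> module_hom R (fst M p) (fst M q)) \<and>
     (\<forall>p. \<forall>x\<in>carrier (fst M p). snd M p p x = x) \<and>
     (\<forall>p q r. p \<le> q \<and> q \<le> r \<longrightarrow> (\<forall>x\<in>carrier (fst M p). snd M q r (snd M p q x) = snd M p r x))"

definition pm_morph :: "('k,'r) ring_scheme \<Rightarrow> ('p::order, 'k, 'a) pmod \<Rightarrow> ('p, 'k, 'b) pmod
     \<Rightarrow> ('p \<Rightarrow> 'a \<Rightarrow> 'b) \<Rightarrow> bool" where
  "pm_morph R M N f \<longleftrightarrow>
     (\<forall>p. f p \<in> module_hom R (fst M p) (fst N p)) \<and>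
     (\<forall>p q. p \<le> q \<longrightarrow> (\<forall>x\<in>carrier (fst M p). f q (snd M p q x) = snd N p q (f p x)))"

definition pm_pull :: "('p \<Rightarrow> 'p) \<Rightarrow> ('p::order, 'k, 'm) pmod \<Rightarrow> ('p, 'k, 'm) pmod" where
  "pm_pull T M = (\<lambda>p. fst M (T p), \<lambda>p q. snd M (T p) (T q))"

text \<open>f : M \<rightarrow> T^*N, g : N \<rightarrow> T^*M with T^*(g) \<circ> f = (M \<rightarrow> T^*T^*M) and symmetrically;
  (T^* g)_p = g_{T p} and the natural morphism M \<rightarrow> T^*T^*M at p is M(p \<le> T(T p)).\<close>
definition pm_interleaved :: "('k,'r) ring_scheme \<Rightarrow> ('p \<Rightarrow> 'p) \<Rightarrow> ('p::order, 'k, 'a) pmod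
     \<Rightarrow> ('p, 'k, 'b) pmod \<Rightarrow> bool" where
  "pm_interleaved R T M N \<longleftrightarrow> (\<exists>f g.
     pm_morph R M (pm_pull T N) f \<and> pm_morph R N (pm_pull T M) g \<and>
     (\<forall>p. \<forall>x\<in>carrier (fst M p). g (T p) (f p x) = snd M p (T (T p)) x) \<and>
     (\<forall>p. \<forall>y\<in>carrier (fst N p). f (T p) (g p y) = snd N p (T (T p)) y))"

definition d_a :: "('k,'r) ring_scheme \<Rightarrow> (real \<Rightarrow> 'p \<Rightarrow> 'p) \<Rightarrow> ('p::order, 'k, 'a) pmod
     \<Rightarrow> ('p, 'k, 'b) pmod \<Rightarrow> ereal" where
  "d_a R T M N = Inf {ereal \<epsilon> | \<epsilon>. 0 \<le> \<epsilon> \<and> pm_interleaved R (T \<epsilon>) M N}"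

text \<open>A presheaf on P^sigma: sections F(U) for Scott-open U, restrictions F(U) \<rightarrow> F(V) for V \<subseteq> U.\<close>
type_synonym ('p, 'k, 'm) psh = "('p set \<Rightarrow> ('k, 'm) module) \<times> ('p set \<Rightarrow> 'p set \<Rightarrow> 'm \<Rightarrow> 'm)"

definition scott_presheaf :: "('k,'r) ring_scheme \<Rightarrow> ('p::order, 'k, 'm) psh \<Rightarrow> bool" where
  "scott_presheaf R F \<longleftrightarrow>
     (\<forall>U. scott_open U \<longrightarrow> Module.module R (fst F U)) \<and>
     (\<forall>U V. scott_open U \<and> scott_open V \<and> V \<subseteq> U \<longrightarrow>
        snd F U V \<in> module_hom R (fst F U) (fst F V)) \<and>
     (\<forall>U. scott_open U \<longrightarrow> (\<forall>x\<in>carrier (fst F U). snd F U U x = x)) \<and>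
     (\<forall>U V W. scott_open U \<and> scott_open V \<and> scott_open W \<and> W \<subseteq> V \<and> V \<subseteq> U \<longrightarrow>
        (\<forall>x\<in>carrier (fst F U). snd F V W (snd F U V x) = snd F U W x))"

definition scott_sheaf :: "('k,'r) ring_scheme \<Rightarrow> ('p::order, 'k, 'm) psh \<Rightarrow> bool" where
  "scott_sheaf R F \<longleftrightarrow> scott_presheaf R F \<and>
     (\<forall>\<U>. (\<forall>V\<in>\<U>. scott_open V) \<longrightarrow>
        (\<forall>s\<in>carrier (fst F (\<Union>\<U>)). \<forall>t\<in>carrier (fst F (\<Union>\<U>)).
           (\<forall>V\<in>\<U>. snd F (\<Union>\<U>) V s = snd F (\<Union>\<U>) V t) \<longrightarrow> s = t) \<and>
        (\<forall>s. (\<forall>V\<in>\<U>. s V \<in> carrier (fst F V)) \<and>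
             (\<forall>V\<in>\<U>. \<forall>W\<in>\<U>. snd F V (V \<inter> W) (s V) = snd F W (V \<inter> W) (s W)) \<longrightarrow>
           (\<exists>t\<in>carrier (fst F (\<Union>\<U>)). \<forall>V\<in>\<U>. snd F (\<Union>\<U>) V t = s V)))"

definition sh_morph :: "('k,'r) ring_scheme \<Rightarrow> ('p::order, 'k, 'a) psh \<Rightarrow> ('p, 'k, 'b) psh
     \<Rightarrow> ('p set \<Rightarrow> 'a \<Rightarrow> 'b) \<Rightarrow> bool" where
  "sh_morph R F G f \<longleftrightarrow>
     (\<forall>U. scott_open U \<longrightarrow> f U \<in> module_hom R (fst F U) (fst G U)) \<and>
     (\<forall>U V. scott_open U \<and> scott_open V \<and> V \<subseteq> U \<longrightarrow>
        (\<forall>x\<in>carrier (fst F U). f V (snd F U V x) = snd G U V (f U x)))"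

text \<open>Under TR1 every T is an order isomorphism, hence a homeomorphism
  of P^sigma, and the sheaf inverse image is (T^* F)(U) = F(T(U)), with restrictions those of F.
  The natural morphism F \<rightarrow> T^* F is the restriction F(U) \<rightarrow> F(T(U)) (note T(U) \<subseteq> U).\<close>
definition sh_pull :: "('p \<Rightarrow> 'p) \<Rightarrow> ('p::order, 'k, 'm) psh \<Rightarrow> ('p, 'k, 'm) psh" where
  "sh_pull T F = (\<lambda>U. fst F (T ` U), \<lambda>U V. snd F (T ` U) (T ` V))"

definition sh_interleaved :: "('k,'r) ring_scheme \<Rightarrow> ('p \<Rightarrow> 'p) \<Rightarrow> ('p::order, 'k, 'a) psh
     \<Rightarrow> ('p, 'k, 'b) psh \<Rightarrow> bool" where
  "sh_interleaved R T F G \<longleftrightarrow> (\<exists>f g.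
     sh_morph R F (sh_pull T G) f \<and> sh_morph R G (sh_pull T F) g \<and>
     (\<forall>U. scott_open U \<longrightarrow> (\<forall>x\<in>carrier (fst F U). g (T ` U) (f U x) = snd F U (T ` T ` U) x)) \<and>
     (\<forall>U. scott_open U \<longrightarrow> (\<forall>y\<in>carrier (fst G U). f (T ` U) (g U y) = snd G U (T ` T ` U) y)))"

definition d_sigma :: "('k,'r) ring_scheme \<Rightarrow> (real \<Rightarrow> 'p \<Rightarrow> 'p) \<Rightarrow> ('p::order, 'k, 'a) psh
     \<Rightarrow> ('p, 'k, 'b) psh \<Rightarrow> ereal" where
  "d_sigma R T F G = Inf {ereal \<epsilon> | \<epsilon>. 0 \<le> \<epsilon> \<and> sh_interleaved R (T \<epsilon>) F G}"

definition nbhds :: "'p::order \<Rightarrow> 'p set set" where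
  "nbhds p = {U. scott_open U \<and> p \<in> U}"

text \<open>Stalk F_p = colim over Scott-open neighbourhoods U of p (ordered by reverse inclusion).\<close>
definition stalk :: "('k,'r) ring_scheme \<Rightarrow> ('p::order, 'k, 'm) psh \<Rightarrow> 'p \<Rightarrow> ('k, ('p set \<Rightarrow> 'm) set) module" where
  "stalk R F p = colim_module R (nbhds p) (\<lambda>U V. V \<subseteq> U) (fst F) (snd F)"

definition j_upper_star :: "('k,'r) ring_scheme \<Rightarrow> ('p::order, 'k, 'm) psh \<Rightarrow> ('p, 'k, ('p set \<Rightarrow> 'm) set) pmod" where
  "j_upper_star R F = (stalk R F,
     \<lambda>p q. colim_ext R (nbhds p) (nbhds q) (\<lambda>U V. V \<subseteq> U) (fst F) (snd F))"

definition j_shriek :: "('p::order, 'k, 'm) psh \<Rightarrow> ('p, 'k, 'm) pmod" where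
  "j_shriek F = (\<lambda>p. fst F (scott_interior (upset p)),
     \<lambda>p q. snd F (scott_interior (upset p)) (scott_interior (upset q)))"

definition j_lower_star :: "('p::order, 'k, 'm) pmod \<Rightarrow> ('p, 'k, 'p \<Rightarrow> 'm) psh" where
  "j_lower_star M = (\<lambda>U. lim_module U (\<le>) (fst M) (snd M), \<lambda>U V. lim_restr V)"

definition pm_under :: "('p::order, 'k, 'm) pmod \<Rightarrow> ('p, 'k, 'p \<Rightarrow> 'm) pmod" where
  "pm_under M = (\<lambda>p. lim_module {x. way_below p x} (\<le>) (fst M) (snd M),
     \<lambda>p q. lim_restr {x. way_below q x})"

definition pm_over :: "('k,'r) ring_scheme \<Rightarrow> ('p::order, 'k, 'm) pmod \<Rightarrow> ('p, 'k, ('p \<Rightarrow> 'm) set) pmod" where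
  "pm_over R M = (\<lambda>p. colim_module R {x. way_below x p} (\<le>) (fst M) (snd M),
     \<lambda>p q. colim_ext R {x. way_below x p} {x. way_below x q} (\<le>) (fst M) (snd M))"

end

theory Submission
  imports Defs
begin


lemma wb_le: "way_below x y \<Longrightarrow> x \<le> y"
  unfolding way_below_def
  by (drule spec[of _ "{y}"], drule spec[of _ y]) (auto simp: directed_def is_sup_def)

lemma wb_mono: "a \<le> b \<Longrightarrow> way_below b c \<Longrightarrow> c \<le> d \<Longrightarrow> way_below a d"
  unfolding way_below_def
proof (intro allI impI)
  fix D s assume ab: "a \<le> b" and w: "\<forall>D s. directed D \<and> is_sup D s \<and> c \<le> s \<longrightarrow> (\<exists>d\<in>D. b \<le> d)"
    and cd: "c \<le> d" and D: "directed D \<and> is_sup D s \<and> d \<le> s"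
  then have "c \<le> s" using order.trans by blast
  then obtain x where "x \<in> D" "b \<le> x" using w D by blast
  then show "\<exists>d\<in>D. a \<le> d" using order.trans[OF ab] by blast
qed

lemma sopenI: "(\<And>x y. x \<in> U \<Longrightarrow> x \<le> y \<Longrightarrow> y \<in> U) \<Longrightarrow>
   (\<And>D s. directed D \<Longrightarrow> is_sup D s \<Longrightarrow> s \<in> U \<Longrightarrow> D \<inter> U \<noteq> {}) \<Longrightarrow> scott_open U"
  unfolding scott_open_def by blast

lemma open_up: "scott_open U \<Longrightarrow> x \<in> U \<Longrightarrow> x \<le> y \<Longrightarrow> y \<in> U"
  unfolding scott_open_def by blast

lemma open_dir: "scott_open U \<Longrightarrow> directed D \<Longrightarrow> is_sup D s \<Longrightarrow> s \<in> U \<Longrightarrow> D \<inter> U \<noteq> {}"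
  unfolding scott_open_def by blast

lemma sopen_Union: assumes "\<forall>U\<in>\<U>. scott_open U" shows "scott_open (\<Union>\<U>)"
proof (rule sopenI)
  fix x y assume "x \<in> \<Union>\<U>" "x \<le> y"
  then obtain U where "U \<in> \<U>" "x \<in> U" by blast
  then have "y \<in> U" using assms open_up \<open>x \<le> y\<close> by metis
  then show "y \<in> \<Union>\<U>" using \<open>U \<in> \<U>\<close> by blast
next
  fix D s assume a: "directed D" "is_sup D s" "s \<in> \<Union>\<U>"
  then obtain U where "U \<in> \<U>" "s \<in> U" by blast
  then have "D \<inter> U \<noteq> {}" using a assms open_dir by metis
  then show "D \<inter> \<Union>\<U> \<noteq> {}" using \<open>U \<in> \<U>\<close> by blast
qed

lemma sopen_Int: assumes U: "scott_open U" and V: "scott_open V" shows "scott_open (U \<inter> V)"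
proof (rule sopenI)
  fix x y assume "x \<in> U \<inter> V" "x \<le> y" then show "y \<in> U \<inter> V" using open_up U V by blast
next
  fix D s assume D: "directed D" "is_sup D s" "s \<in> U \<inter> V"
  then obtain d1 d2 where d: "d1 \<in> D" "d1 \<in> U" "d2 \<in> D" "d2 \<in> V" using open_dir[OF U] open_dir[OF V] by blast
  then obtain d3 where d3: "d3 \<in> D" "d1 \<le> d3" "d2 \<le> d3" using D(1) unfolding directed_def by blast
  then have "d3 \<in> U" "d3 \<in> V" using open_up U V d by blast+
  then show "D \<inter> (U \<inter> V) \<noteq> {}" using d3 by blast
qed

lemma sopen_empty: "scott_open {}" by (rule sopenI) auto

lemma interior_open: "scott_open (scott_interior A)"
  unfolding scott_interior_def by (rule sopen_Union) auto

lemma interior_sub: "scott_interior A \<subseteq> A"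
  unfolding scott_interior_def by auto

lemma interior_max: "scott_open U \<Longrightarrow> U \<subseteq> A \<Longrightarrow> U \<subseteq> scott_interior A"
  unfolding scott_interior_def by auto

lemma interior_mono: "A \<subseteq> B \<Longrightarrow> scott_interior A \<subseteq> scott_interior B"
  unfolding scott_interior_def by auto

abbreviation Iu :: "'p::order \<Rightarrow> 'p set" where "Iu p \<equiv> scott_interior (upset p)"

abbreviation wbu :: "'p::order \<Rightarrow> 'p set" where "wbu p \<equiv> {x. way_below p x}"

lemma Iu_open: "scott_open (Iu p)" by (rule interior_open)

lemma Iu_anti: "p \<le> q \<Longrightarrow> Iu q \<subseteq> Iu p"
  by (rule interior_mono) (auto simp: upset_def)

lemma Iu_sub: "x \<in> Iu p \<Longrightarrow> p \<le> x"
  using interior_sub unfolding upset_def by blast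

lemma Iu_in_open: "scott_open U \<Longrightarrow> p \<in> U \<Longrightarrow> Iu p \<subseteq> U"
  using interior_sub open_up unfolding upset_def by blast

lemma wbu_open:
  assumes cp: "continuous_poset TYPE('p::order)"
  shows "scott_open (wbu (p::'p))"
  unfolding scott_open_def
proof (intro conjI ballI allI impI)
  fix x y assume "x \<in> wbu p" "x \<le> y" then show "y \<in> wbu p" using wb_mono by auto
next
  fix D and s :: 'p assume a: "directed D \<and> is_sup D s \<and> s \<in> wbu p"
  have cpd: "\<And>q::'p. directed {x. way_below x q} \<and> is_sup {x. way_below x q} q"
    using cp unfolding continuous_poset_def by blast
  define E where "E = {z. \<exists>d\<in>D. way_below z d}"
  have "directed E" unfolding directed_def
  proof (intro conjI ballI)
    obtain d where "d \<in> D" using a unfolding directed_def by blast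
    then obtain z where "way_below z d" using cpd[of d] unfolding directed_def by blast
    then show "E \<noteq> {}" using \<open>d\<in>D\<close> E_def by blast
  next
    fix x y assume "x \<in> E" "y \<in> E"
    then obtain d1 d2 where d: "d1 \<in> D" "d2 \<in> D" "way_below x d1" "way_below y d2" unfolding E_def by blast
    then obtain d3 where d3: "d3 \<in> D" "d1 \<le> d3" "d2 \<le> d3" using a unfolding directed_def by blast
    have "way_below x d3" "way_below y d3" using d d3 wb_mono by blast+
    then obtain z where "way_below z d3" "x \<le> z" "y \<le> z" using cpd[of d3] unfolding directed_def by blast
    then show "\<exists>z\<in>E. x \<le> z \<and> y \<le> z" using d3 E_def by blast
  qed
  moreover have "is_sup E s" unfolding is_sup_def
  proof (intro conjI allI ballI impI)
    fix z assume "z \<in> E" then obtain d where "d \<in> D" "way_below z d" unfolding E_def by blast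
    then have "z \<le> d" "d \<le> s" using a wb_le unfolding is_sup_def by auto
    then show "z \<le> s" by (rule order.trans)
  next
    fix u assume u: "\<forall>x\<in>E. x \<le> u"
    have "\<forall>d\<in>D. d \<le> u"
    proof
      fix d assume "d \<in> D"
      then have "\<forall>z\<in>{x. way_below x d}. z \<le> u" using u E_def by blast
      then show "d \<le> u" using cpd[of d] unfolding is_sup_def by blast
    qed
    then show "s \<le> u" using a unfolding is_sup_def by blast
  qed
  ultimately obtain z where "z \<in> E" "p \<le> z" using a unfolding way_below_def by blast
  then obtain d where "d \<in> D" "way_below z d" unfolding E_def by blast
  then have "way_below p d" using \<open>p \<le> z\<close> wb_mono by blast
  then show "D \<inter> wbu p \<noteq> {}" using \<open>d \<in> D\<close> by blast
qed

lemma wbu_Iu: "continuous_poset TYPE('p::order) \<Longrightarrow> wbu (p::'p) \<subseteq> Iu p"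
  by (rule interior_max) (auto simp: wbu_open upset_def wb_le)

section \<open>Order isomorphisms\<close>

abbreviation finv :: "('a \<Rightarrow> 'b) \<Rightarrow> 'b \<Rightarrow> 'a" where "finv f \<equiv> inv_into UNIV f"


lemma oiso_inv: assumes "order_iso f" shows "order_iso (finv f)"
proof -
  have b: "bij f" and le: "\<And>x y. f x \<le> f y \<longleftrightarrow> x \<le> y" using assms unfolding order_iso_def by auto
  have "bij (finv f)" using b by (simp add: bij_imp_bij_inv)
  moreover have "finv f x \<le> finv f y \<longleftrightarrow> x \<le> y" for x y
    using le[of "finv f x" "finv f y"] b by (simp add: bij_inv_eq_iff surj_f_inv_f bij_is_surj)
  ultimately show ?thesis unfolding order_iso_def by blast
qed

lemma oiso_le: "order_iso f \<Longrightarrow> f x \<le> f y \<longleftrightarrow> x \<le> y" unfolding order_iso_def by blast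
lemma oiso_fi: "order_iso f \<Longrightarrow> f (finv f y) = y" unfolding order_iso_def by (simp add: bij_is_surj surj_f_inv_f)
lemma oiso_if: "order_iso f \<Longrightarrow> finv f (f y) = y" unfolding order_iso_def by (simp add: bij_is_inj inv_f_f)

lemma oiso_dir: assumes "order_iso f" "directed D" shows "directed (f ` D)"
  using assms unfolding directed_def order_iso_def by auto

lemma oiso_sup: assumes f: "order_iso f" and "is_sup D s" shows "is_sup (f ` D) (f s)"
  unfolding is_sup_def
proof (intro conjI ballI allI impI)
  fix x assume "x \<in> f ` D" then show "x \<le> f s" using assms oiso_le[OF f] unfolding is_sup_def by auto
next
  fix u assume "\<forall>x\<in>f ` D. x \<le> u"
  then have "\<forall>x\<in>D. x \<le> finv f u" using oiso_le[OF f, of _ "finv f u"] oiso_fi[OF f] by auto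
  then have "s \<le> finv f u" using assms unfolding is_sup_def by blast
  then show "f s \<le> u" using oiso_le[OF f, of s "finv f u"] oiso_fi[OF f] by auto
qed

lemma oiso_wb: assumes f: "order_iso f" "way_below x y" shows "way_below (f x) (f y)"
  unfolding way_below_def
proof (intro allI impI)
  fix D s assume a: "directed D \<and> is_sup D s \<and> f y \<le> s"
  have g: "order_iso (finv f)" using oiso_inv f by blast
  have "directed (finv f ` D)" "is_sup (finv f ` D) (finv f s)" using a oiso_dir[OF g] oiso_sup[OF g] by auto
  moreover have "y \<le> finv f s" using a oiso_le[OF g, of "f y" s] oiso_if[OF f(1)] by simp
  ultimately obtain d where "d \<in> D" "x \<le> finv f d" using f(2) unfolding way_below_def by blast
  then show "\<exists>d\<in>D. f x \<le> d" using oiso_le[OF f(1), of x "finv f d"] oiso_fi[OF f(1)] by auto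
qed

lemma oiso_wb_iff: assumes f: "order_iso f" shows "way_below (f x) (f y) \<longleftrightarrow> way_below x y"
  using oiso_wb[OF f] oiso_wb[OF oiso_inv[OF f], of "f x" "f y"] oiso_if[OF f] by auto

lemma oiso_open: assumes f: "order_iso f" "scott_open U" shows "scott_open (f ` U)"
  unfolding scott_open_def
proof (intro conjI ballI allI impI)
  fix x y assume "x \<in> f ` U" "x \<le> y"
  then obtain u where "u \<in> U" "x = f u" by blast
  then have "u \<le> finv f y" using \<open>x \<le> y\<close> oiso_le[OF f(1), of u "finv f y"] oiso_fi[OF f(1)] by auto
  then have "finv f y \<in> U" using \<open>u \<in> U\<close> f(2) open_up by blast
  then show "y \<in> f ` U" using oiso_fi[OF f(1)] by (metis image_eqI)
next
  fix D s assume a: "directed D \<and> is_sup D s \<and> s \<in> f ` U"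
  have g: "order_iso (finv f)" using oiso_inv f by blast
  have "directed (finv f ` D)" "is_sup (finv f ` D) (finv f s)" using a oiso_dir[OF g] oiso_sup[OF g] by auto
  moreover have "finv f s \<in> U" using a oiso_if[OF f(1)] by auto
  ultimately obtain d where "d \<in> D" "finv f d \<in> U" using f(2) unfolding scott_open_def by blast
  then show "D \<inter> f ` U \<noteq> {}" using oiso_fi[OF f(1)] by (metis IntI empty_iff image_eqI)
qed

lemma oiso_upset: assumes f: "order_iso f" shows "f ` upset p = upset (f p)"
proof
  show "f ` upset p \<subseteq> upset (f p)" using oiso_le[OF f] unfolding upset_def by auto
  show "upset (f p) \<subseteq> f ` upset p"
  proof
    fix y assume "y \<in> upset (f p)"
    then have "p \<le> finv f y" using oiso_le[OF f, of p "finv f y"] oiso_fi[OF f] unfolding upset_def by auto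
    then show "y \<in> f ` upset p" using oiso_fi[OF f] unfolding upset_def by (metis image_eqI mem_Collect_eq)
  qed
qed

lemma oiso_interior: assumes f: "order_iso f" shows "f ` scott_interior A = scott_interior (f ` A)"
proof
  show "f ` scott_interior A \<subseteq> scott_interior (f ` A)"
    using oiso_open[OF f interior_open] interior_max interior_sub by (metis image_mono)
  have g: "order_iso (finv f)" using oiso_inv f by blast
  have "finv f ` scott_interior (f ` A) \<subseteq> scott_interior (finv f ` f ` A)"
    using oiso_open[OF g interior_open] interior_max interior_sub by (metis image_mono)
  moreover have "finv f ` f ` A = A" using oiso_if[OF f] by (simp add: image_comp)
  ultimately have "f ` finv f ` scott_interior (f ` A) \<subseteq> f ` scott_interior A" by auto
  moreover have "f ` finv f ` X = X" for X using oiso_fi[OF f] by (simp add: image_comp)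
  ultimately show "scott_interior (f ` A) \<subseteq> f ` scott_interior A" by metis
qed

lemma oiso_Iu: "order_iso f \<Longrightarrow> f ` Iu p = Iu (f p)"
  by (simp add: oiso_interior oiso_upset)

locale tfam =
  fixes T :: "real \<Rightarrow> 'p::order \<Rightarrow> 'p"
  assumes cp: "continuous_poset TYPE('p)"
    and trs: "\<forall>\<epsilon>\<ge>0. translation (T \<epsilon>) \<and> scott_continuous (T \<epsilon>)"
    and sl: "superlinear T" and tr1: "TR1 T" and tr2: "TR2 T"
begin

lemma Tmono: "0 \<le> e \<Longrightarrow> x \<le> y \<Longrightarrow> T e x \<le> T e y"
  using trs unfolding translation_def mono_def by blast
lemma Tinc: "0 \<le> e \<Longrightarrow> x \<le> T e x"
  using trs unfolding translation_def by blast
lemma Ttr: "0 \<le> e \<Longrightarrow> translation (T e)" using trs by blast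
lemma Tcomp: "0 \<le> e \<Longrightarrow> 0 \<le> d \<Longrightarrow> T e (T d p) \<le> T (e + d) p"
  using sl unfolding superlinear_def by blast
lemma Tiso: "0 \<le> e \<Longrightarrow> order_iso (T e)" using tr1 unfolding TR1_def by blast
lemma Twb: "0 < d \<Longrightarrow> way_below p (T d p)" using tr2 unfolding TR2_def by blast
lemma Tle: "0 \<le> e \<Longrightarrow> e \<le> e' \<Longrightarrow> T e p \<le> T e' p"
proof -
  assume "0 \<le> e" "e \<le> e'"
  then have "T e p \<le> T (e' - e) (T e p)" using Tinc by simp
  also have "\<dots> \<le> T (e' - e + e) p" using Tcomp[of "e' - e" e p] \<open>0 \<le> e\<close> \<open>e \<le> e'\<close> by simp
  finally show ?thesis by simp
qed

end

section \<open>Generic interleavings of persistence modules\<close>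

lemma mh_comp: "f \<in> module_hom R A B \<Longrightarrow> g \<in> module_hom R B C \<Longrightarrow> (\<lambda>x. g (f x)) \<in> module_hom R A C"
  unfolding module_hom_def by auto

lemma mh_carr: "f \<in> module_hom R A B \<Longrightarrow> x \<in> carrier A \<Longrightarrow> f x \<in> carrier B"
  unfolding module_hom_def by auto

definition pm_func :: "('k,'r) ring_scheme \<Rightarrow> ('p::order, 'k, 'm) pmod \<Rightarrow> bool" where
  "pm_func R A \<longleftrightarrow> (\<forall>p q. p \<le> q \<longrightarrow> snd A p q \<in> module_hom R (fst A p) (fst A q)) \<and>
     (\<forall>p q r. p \<le> q \<and> q \<le> r \<longrightarrow> (\<forall>x\<in>carrier (fst A p). snd A q r (snd A p q x) = snd A p r x))"

lemma pmf_hom: "pm_func R A \<Longrightarrow> p \<le> q \<Longrightarrow> snd A p q \<in> module_hom R (fst A p) (fst A q)"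
  unfolding pm_func_def by simp
lemma pmf_carr: "pm_func R A \<Longrightarrow> p \<le> q \<Longrightarrow> x \<in> carrier (fst A p) \<Longrightarrow> snd A p q x \<in> carrier (fst A q)"
  by (rule mh_carr[OF pmf_hom])
lemma pmf_comp: "pm_func R A \<Longrightarrow> p \<le> q \<Longrightarrow> q \<le> r \<Longrightarrow> x \<in> carrier (fst A p) \<Longrightarrow> snd A q r (snd A p q x) = snd A p r x"
  unfolding pm_func_def by simp

lemma persistence_pm_func: "persistence_module R M \<Longrightarrow> pm_func R M"
  unfolding persistence_module_def pm_func_def by simp

lemma pmm_hom: "pm_morph R A B f \<Longrightarrow> f p \<in> module_hom R (fst A p) (fst B p)"
  unfolding pm_morph_def by simp
lemma pmm_nat: "pm_morph R A B f \<Longrightarrow> p \<le> q \<Longrightarrow> x \<in> carrier (fst A p) \<Longrightarrow> f q (snd A p q x) = snd B p q (f p x)"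
  unfolding pm_morph_def by simp

definition icomp :: "('p \<Rightarrow> 'p) \<Rightarrow> ('p \<Rightarrow> 'p) \<Rightarrow> ('p \<Rightarrow> 'p) \<Rightarrow> ('p, 'k, 'c) pmod
   \<Rightarrow> ('p \<Rightarrow> 'a \<Rightarrow> 'b) \<Rightarrow> ('p \<Rightarrow> 'b \<Rightarrow> 'c) \<Rightarrow> 'p \<Rightarrow> 'a \<Rightarrow> 'c" where
  "icomp Te Td S C f f' p x = snd C (Td (Te p)) (S p) (f' (Te p) (f p x))"

lemma tr_mono: "translation f \<Longrightarrow> x \<le> y \<Longrightarrow> f x \<le> f y" unfolding translation_def mono_def by blast
lemma tr_inc: "translation f \<Longrightarrow> x \<le> f x" unfolding translation_def by blast

lemma icomp_morph:
  fixes A :: "('p::order, 'k, 'a) pmod" and B :: "('p, 'k, 'b) pmod" and C :: "('p, 'k, 'c) pmod"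
  assumes Te: "translation Te" and Td: "translation Td" and S: "translation S"
    and TS: "\<And>p. Td (Te p) \<le> S p"
    and B: "pm_func R B" and C: "pm_func R C"
    and f: "pm_morph R A (pm_pull Te B) f" and f': "pm_morph R B (pm_pull Td C) f'"
  shows "pm_morph R A (pm_pull S C) (icomp Te Td S C f f')"
  unfolding pm_morph_def
proof (intro conjI allI impI ballI)
  fix p
  have "f p \<in> module_hom R (fst A p) (fst B (Te p))" using pmm_hom[OF f] by (simp add: pm_pull_def)
  moreover have "f' (Te p) \<in> module_hom R (fst B (Te p)) (fst C (Td (Te p)))" using pmm_hom[OF f'] by (simp add: pm_pull_def)
  moreover have "snd C (Td (Te p)) (S p) \<in> module_hom R (fst C (Td (Te p))) (fst C (S p))" using pmf_hom[OF C TS] .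
  ultimately show "icomp Te Td S C f f' p \<in> module_hom R (fst A p) (fst (pm_pull S C) p)"
    unfolding icomp_def pm_pull_def by (simp add: mh_comp[OF mh_comp])
next
  fix p q x assume pq: "p \<le> q" and x: "x \<in> carrier (fst A p)"
  have fx: "f p x \<in> carrier (fst B (Te p))" using pmm_hom[OF f] x mh_carr by (fastforce simp: pm_pull_def)
  have ffx: "f' (Te p) (f p x) \<in> carrier (fst C (Td (Te p)))" using pmm_hom[OF f'] fx mh_carr by (fastforce simp: pm_pull_def)
  have m1: "Te p \<le> Te q" using tr_mono[OF Te pq] .
  have m2: "Td (Te p) \<le> Td (Te q)" using tr_mono[OF Td m1] .
  have "f q (snd A p q x) = snd B (Te p) (Te q) (f p x)" using pmm_nat[OF f pq x] by (simp add: pm_pull_def)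
  then have "f' (Te q) (f q (snd A p q x)) = snd C (Td (Te p)) (Td (Te q)) (f' (Te p) (f p x))"
    using pmm_nat[OF f' m1 fx] by (simp add: pm_pull_def)
  then have "icomp Te Td S C f f' q (snd A p q x) = snd C (Td (Te p)) (S q) (f' (Te p) (f p x))"
    unfolding icomp_def using pmf_comp[OF C m2 TS ffx] by simp
  moreover have "snd C (S p) (S q) (icomp Te Td S C f f' p x) = snd C (Td (Te p)) (S q) (f' (Te p) (f p x))"
    unfolding icomp_def using pmf_comp[OF C TS tr_mono[OF S pq] ffx] by simp
  ultimately show "icomp Te Td S C f f' q (snd A p q x) = snd (pm_pull S C) p q (icomp Te Td S C f f' p x)"
    by (simp add: pm_pull_def)
qed

lemma icomp_eq:
  fixes A :: "('p::order, 'k, 'a) pmod" and B :: "('p, 'k, 'b) pmod" and C :: "('p, 'k, 'c) pmod"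
  assumes Te: "translation Te" and Td: "translation Td" and S: "translation S"
    and TS: "\<And>p. Td (Te p) \<le> S p" and TS': "\<And>p. Te (Td p) \<le> S p"
    and A: "pm_func R A" and B: "pm_func R B" and C: "pm_func R C"
    and f: "pm_morph R A (pm_pull Te B) f" and f': "pm_morph R B (pm_pull Td C) f'"
    and g: "pm_morph R B (pm_pull Te A) g" and g': "pm_morph R C (pm_pull Td B) g'"
    and fg: "\<forall>p. \<forall>x\<in>carrier (fst A p). g (Te p) (f p x) = snd A p (Te (Te p)) x"
    and fg': "\<forall>p. \<forall>x\<in>carrier (fst B p). g' (Td p) (f' p x) = snd B p (Td (Td p)) x"
    and x: "x \<in> carrier (fst A p)"
  shows "icomp Td Te S A g' g (S p) (icomp Te Td S C f f' p x) = snd A p (S (S p)) x"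
proof -
  define q u where "q = S p" and "u = Td (Te p)"
  have fx: "f p x \<in> carrier (fst B (Te p))" using pmm_hom[OF f] x mh_carr by (fastforce simp: pm_pull_def)
  have y0: "f' (Te p) (f p x) \<in> carrier (fst C u)" using pmm_hom[OF f'] fx mh_carr u_def by (fastforce simp: pm_pull_def)
  have uq: "u \<le> q" using TS u_def q_def by simp
  have "g' q (snd C u q (f' (Te p) (f p x))) = snd B (Td u) (Td q) (g' u (f' (Te p) (f p x)))"
    using pmm_nat[OF g' uq y0] by (simp add: pm_pull_def)
  also have "g' u (f' (Te p) (f p x)) = snd B (Te p) (Td u) (f p x)" using fg' fx u_def by simp
  also have "snd B (Td u) (Td q) (snd B (Te p) (Td u) (f p x)) = snd B (Te p) (Td q) (f p x)"
  proof -
    have "Te p \<le> Td u" using tr_inc[OF Td, of "Te p"] tr_inc[OF Td, of u] u_def by (metis order.trans)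
    then show ?thesis using pmf_comp[OF B _ tr_mono[OF Td uq] fx] by blast
  qed
  finally have e1: "g' q (snd C u q (f' (Te p) (f p x))) = snd B (Te p) (Td q) (f p x)" .
  have "Te p \<le> u" using tr_inc[OF Td, of "Te p"] u_def by simp
  then have ple: "Te p \<le> Td q" using uq tr_inc[OF Td, of q] by (metis order.trans)
  have "g (Td q) (snd B (Te p) (Td q) (f p x)) = snd A (Te (Te p)) (Te (Td q)) (g (Te p) (f p x))"
    using pmm_nat[OF g ple fx] by (simp add: pm_pull_def)
  also have "g (Te p) (f p x) = snd A p (Te (Te p)) x" using fg x by simp
  also have "snd A (Te (Te p)) (Te (Td q)) (snd A p (Te (Te p)) x) = snd A p (Te (Td q)) x"
  proof -
    have "p \<le> Te (Te p)" using tr_inc[OF Te, of p] tr_inc[OF Te, of "Te p"] by (metis order.trans)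
    then show ?thesis using pmf_comp[OF A _ tr_mono[OF Te ple] x] by blast
  qed
  finally have e2: "g (Td q) (snd B (Te p) (Td q) (f p x)) = snd A p (Te (Td q)) x" .
  have "p \<le> Te (Td q)" using ple tr_inc[OF Te, of p] tr_inc[OF Te, of "Td q"] by (metis order.trans)
  then have e3: "snd A (Te (Td q)) (S q) (snd A p (Te (Td q)) x) = snd A p (S q) x"
    using pmf_comp[OF A _ TS' x] by blast
  show ?thesis unfolding icomp_def using e1 e2 e3 q_def u_def by simp
qed

lemma pm_inter_sym: "pm_interleaved R T A B \<Longrightarrow> pm_interleaved R T B A"
  unfolding pm_interleaved_def by blast

lemma pm_inter_trans:
  fixes A :: "('p::order, 'k, 'a) pmod" and B :: "('p, 'k, 'b) pmod" and C :: "('p, 'k, 'c) pmod"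
  assumes Te: "translation Te" and Td: "translation Td" and S: "translation S"
    and TS: "\<And>p. Td (Te p) \<le> S p" and TS': "\<And>p. Te (Td p) \<le> S p"
    and A: "pm_func R A" and B: "pm_func R B" and C: "pm_func R C"
    and AB: "pm_interleaved R Te A B" and BC: "pm_interleaved R Td B C"
  shows "pm_interleaved R S A C"
proof -
  obtain f g where fg: "pm_morph R A (pm_pull Te B) f" "pm_morph R B (pm_pull Te A) g"
    "\<forall>p. \<forall>x\<in>carrier (fst A p). g (Te p) (f p x) = snd A p (Te (Te p)) x"
    "\<forall>p. \<forall>y\<in>carrier (fst B p). f (Te p) (g p y) = snd B p (Te (Te p)) y"
    using AB unfolding pm_interleaved_def by blast
  obtain f' g' where fg': "pm_morph R B (pm_pull Td C) f'" "pm_morph R C (pm_pull Td B) g'"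
    "\<forall>p. \<forall>x\<in>carrier (fst B p). g' (Td p) (f' p x) = snd B p (Td (Td p)) x"
    "\<forall>p. \<forall>y\<in>carrier (fst C p). f' (Td p) (g' p y) = snd C p (Td (Td p)) y"
    using BC unfolding pm_interleaved_def by blast
  show ?thesis unfolding pm_interleaved_def
    apply (rule exI[of _ "icomp Te Td S C f f'"], rule exI[of _ "icomp Td Te S A g' g"])
    apply (intro conjI)
       apply (rule icomp_morph[OF Te Td S TS B C fg(1) fg'(1)])
      apply (rule icomp_morph[OF Td Te S TS' B A fg'(2) fg(2)])
     apply (intro allI ballI)
     apply (rule icomp_eq[OF Te Td S TS TS' A B C fg(1) fg'(1) fg(2) fg'(2) fg(3) fg'(3)], assumption)
    apply (intro allI ballI)
    apply (rule icomp_eq[OF Td Te S TS' TS C B A fg'(2) fg(2) fg'(1) fg(1) fg'(4) fg(4)], assumption)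
    done
qed

context tfam begin

lemma pm_inter_trans':
  fixes A :: "('p, 'k, 'a) pmod" and B :: "('p, 'k, 'b) pmod" and C :: "('p, 'k, 'c) pmod"
  assumes "0 \<le> e" "0 \<le> d" "pm_func R A" "pm_func R B" "pm_func R C"
    "pm_interleaved R (T e) A B" "pm_interleaved R (T d) B C"
  shows "pm_interleaved R (T (e + d)) A C"
  apply (rule pm_inter_trans[OF Ttr Ttr Ttr _ _ assms(3-7)])
  using assms Tcomp[of d e] Tcomp[of e d] by (auto simp: add.commute)

lemma ereal_eps_le: "(\<And>d. 0 < d \<Longrightarrow> x \<le> ereal (e + 2 * d)) \<Longrightarrow> x \<le> ereal e"
proof (rule ereal_le_epsilon2)
  fix d :: real assume "0 < d" "(\<And>d. 0 < d \<Longrightarrow> x \<le> ereal (e + 2 * d))"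
  then have "x \<le> ereal (e + 2 * (d/2))" by (meson half_gt_zero)
  then show "x \<le> ereal e + ereal d" by simp
qed

lemma d_a_close_le:
  fixes A :: "('p, 'k, 'a) pmod" and B :: "('p, 'k, 'b) pmod"
    and A' :: "('p, 'k, 'a2) pmod" and B' :: "('p, 'k, 'b2) pmod"
  assumes "pm_func R A" "pm_func R B" "pm_func R A'" "pm_func R B'"
    and AA: "\<And>d. 0 < d \<Longrightarrow> pm_interleaved R (T d) A A'"
    and BB: "\<And>d. 0 < d \<Longrightarrow> pm_interleaved R (T d) B B'"
  shows "d_a R T A' B' \<le> d_a R T A B"
  unfolding d_a_def
proof (rule Inf_greatest, clarify)
  fix e assume e: "0 \<le> e" "pm_interleaved R (T e) A B"
  show "Inf {ereal e |e. 0 \<le> e \<and> pm_interleaved R (T e) A' B'} \<le> ereal e"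
  proof (rule ereal_eps_le)
    fix d :: real assume d: "0 < d"
    have "pm_interleaved R (T d) A' A" using AA[OF d] by (rule pm_inter_sym)
    then have "pm_interleaved R (T (d + e)) A' B"
      using pm_inter_trans'[of d e R A' A B] assms e d by auto
    then have "pm_interleaved R (T ((d + e) + d)) A' B'"
      using pm_inter_trans'[of "d + e" d R A' B B'] assms e d by auto
    moreover have "(d + e) + d = e + 2 * d" by simp
    ultimately have "pm_interleaved R (T (e + 2 * d)) A' B'" by metis
    then have "ereal (e + 2 * d) \<in> {ereal e |e. 0 \<le> e \<and> pm_interleaved R (T e) A' B'}"
      using e d by auto
    then show "Inf {ereal e |e. 0 \<le> e \<and> pm_interleaved R (T e) A' B'} \<le> ereal (e + 2 * d)"
      by (rule Inf_lower)
  qed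
qed

lemma d_a_close:
  fixes A :: "('p, 'k, 'a) pmod" and B :: "('p, 'k, 'b) pmod"
    and A' :: "('p, 'k, 'a2) pmod" and B' :: "('p, 'k, 'b2) pmod"
  assumes "pm_func R A" "pm_func R B" "pm_func R A'" "pm_func R B'"
    and AA: "\<And>d. 0 < d \<Longrightarrow> pm_interleaved R (T d) A A'"
    and BB: "\<And>d. 0 < d \<Longrightarrow> pm_interleaved R (T d) B B'"
  shows "d_a R T A B = d_a R T A' B'"
  using d_a_close_le[OF assms] d_a_close_le[OF assms(3,4,1,2)] AA BB pm_inter_sym
  by (metis order_antisym)

end



section \<open>Limits\<close>

definition Lm :: "('p::order, 'k, 'm) pmod \<Rightarrow> ('p \<Rightarrow> 'p set) \<Rightarrow> ('p, 'k, 'p \<Rightarrow> 'm) pmod" where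
  "Lm M S = (\<lambda>p. lim_module (S p) (\<le>) (fst M) (snd M), \<lambda>p q. lim_restr (S q))"

lemma lim_carrier_iff: "f \<in> carrier (lim_module I rel Mo Ma) \<longleftrightarrow>
   (\<forall>i\<in>I. f i \<in> carrier (Mo i)) \<and> (\<forall>i\<in>I. \<forall>j\<in>I. rel i j \<longrightarrow> Ma i j (f i) = f j) \<and> (\<forall>i. i \<notin> I \<longrightarrow> f i = undefined)"
  by (simp add: lim_module_def lim_carrier_def)

lemma lim_add: "add (lim_module I rel Mo Ma) f g = (\<lambda>i. if i \<in> I then add (Mo i) (f i) (g i) else undefined)"
  by (simp add: lim_module_def)
lemma lim_smult: "smult (lim_module I rel Mo Ma) r f = (\<lambda>i. if i \<in> I then smult (Mo i) r (f i) else undefined)"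
  by (simp add: lim_module_def)

lemma mhI: "(\<And>x. x \<in> carrier A \<Longrightarrow> f x \<in> carrier B) \<Longrightarrow>
  (\<And>x y. x \<in> carrier A \<Longrightarrow> y \<in> carrier A \<Longrightarrow> f (add A x y) = add B (f x) (f y)) \<Longrightarrow>
  (\<And>r x. r \<in> carrier R \<Longrightarrow> x \<in> carrier A \<Longrightarrow> f (smult A r x) = smult B r (f x)) \<Longrightarrow> f \<in> module_hom R A B"
  unfolding module_hom_def by blast

lemma mh_add: "f \<in> module_hom R A B \<Longrightarrow> x \<in> carrier A \<Longrightarrow> y \<in> carrier A \<Longrightarrow> f (add A x y) = add B (f x) (f y)"
  unfolding module_hom_def by simp
lemma mh_smult: "f \<in> module_hom R A B \<Longrightarrow> r \<in> carrier R \<Longrightarrow> x \<in> carrier A \<Longrightarrow> f (smult A r x) = smult B r (f x)"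
  unfolding module_hom_def by simp

lemma pm_hom: "persistence_module R M \<Longrightarrow> p \<le> q \<Longrightarrow> snd M p q \<in> module_hom R (fst M p) (fst M q)"
  unfolding persistence_module_def by simp
lemma pm_comp: "persistence_module R M \<Longrightarrow> p \<le> q \<Longrightarrow> q \<le> r \<Longrightarrow> x \<in> carrier (fst M p) \<Longrightarrow> snd M q r (snd M p q x) = snd M p r x"
  unfolding persistence_module_def by simp
lemma pm_id: "persistence_module R M \<Longrightarrow> x \<in> carrier (fst M p) \<Longrightarrow> snd M p p x = x"
  unfolding persistence_module_def by simp
lemma pm_module: "persistence_module R M \<Longrightarrow> Module.module R (fst M p)"
  unfolding persistence_module_def by simp

lemma restr_hom:
  assumes "J \<subseteq> I"
  shows "lim_restr J \<in> module_hom R (lim_module I rel Mo Ma) (lim_module J rel Mo Ma)"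
proof (rule mhI)
  fix x assume "x \<in> carrier (lim_module I rel Mo Ma)"
  then show "lim_restr J x \<in> carrier (lim_module J rel Mo Ma)"
    using assms unfolding lim_carrier_iff lim_restr_def by (force simp: subset_iff)
next
  fix x y assume "x \<in> carrier (lim_module I rel Mo Ma)" "y \<in> carrier (lim_module I rel Mo Ma)"
  then show "lim_restr J (add (lim_module I rel Mo Ma) x y) = add (lim_module J rel Mo Ma) (lim_restr J x) (lim_restr J y)"
    using assms unfolding lim_add lim_restr_def by (auto intro!: ext)
next
  fix r x assume "x \<in> carrier (lim_module I rel Mo Ma)"
  then show "lim_restr J (smult (lim_module I rel Mo Ma) r x) = smult (lim_module J rel Mo Ma) r (lim_restr J x)"
    using assms unfolding lim_smult lim_restr_def by (auto intro!: ext)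
qed

lemma restr_restr: "K \<subseteq> J \<Longrightarrow> lim_restr K (lim_restr J f) = lim_restr K f"
  unfolding lim_restr_def by (auto intro!: ext)

lemma restr_id: "x \<in> carrier (lim_module I rel Mo Ma) \<Longrightarrow> lim_restr I x = x"
  unfolding lim_restr_def lim_carrier_iff by (auto intro!: ext)

lemma Lm_func:
  assumes S: "\<And>p q. p \<le> q \<Longrightarrow> S q \<subseteq> S p"
  shows "pm_func R (Lm M S)"
  unfolding pm_func_def Lm_def fst_conv snd_conv
proof (intro conjI allI impI ballI)
  fix p q :: 'a assume "p \<le> q" then show "lim_restr (S q) \<in> module_hom R (lim_module (S p) (\<le>) (fst M) (snd M)) (lim_module (S q) (\<le>) (fst M) (snd M))"
    using S by (intro restr_hom) 
next
  fix p q r :: 'a and x assume "p \<le> q \<and> q \<le> r" then show "lim_restr (S r) (lim_restr (S q) x) = lim_restr (S r) x"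
    using S by (intro restr_restr) blast
qed

lemma lim_close:
  fixes M :: "('p::order, 'k, 'm) pmod"
  assumes M: "persistence_module R M" and Td: "translation Td"
    and S: "\<And>p q. p \<le> q \<Longrightarrow> S q \<subseteq> S p" and Sin: "\<And>p. Td p \<in> S p" and Sup: "\<And>p x. x \<in> S p \<Longrightarrow> p \<le> x"
  shows "pm_interleaved R Td M (Lm M S)"
proof -
  define f where "f = (\<lambda>p m x. if x \<in> S (Td p) then snd M p x m else undefined)"
  define g where "g = (\<lambda>(p::'p) (s::'p \<Rightarrow> 'm). s (Td p))"
  have pTd: "p \<le> Td p" for p using tr_inc[OF Td] .
  have Sup': "x \<in> S (Td p) \<Longrightarrow> p \<le> x" for x p using order.trans[OF pTd Sup] by blast
  have fc: "f p m \<in> carrier (lim_module (S (Td p)) (\<le>) (fst M) (snd M))" if m: "m \<in> carrier (fst M p)" for p m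
    unfolding lim_carrier_iff
  proof (intro conjI ballI allI impI)
    fix i assume i: "i \<in> S (Td p)" then show "f p m i \<in> carrier (fst M i)"
      using mh_carr[OF pm_hom[OF M Sup'[OF i]] m] unfolding f_def by simp
  next
    fix i j assume "i \<in> S (Td p)" "j \<in> S (Td p)" "i \<le> j"
    then show "snd M i j (f p m i) = f p m j" using Sup' m pm_comp[OF M] unfolding f_def by auto
  next
    fix i assume "i \<notin> S (Td p)" then show "f p m i = undefined" unfolding f_def by auto
  qed
  have gc: "g p s \<in> carrier (fst M (Td p))" if "s \<in> carrier (lim_module (S p) (\<le>) (fst M) (snd M))" for p s
    using that Sin unfolding lim_carrier_iff g_def by auto
  show ?thesis unfolding pm_interleaved_def
  proof (intro exI conjI)
    show "pm_morph R M (pm_pull Td (Lm M S)) f" unfolding pm_morph_def pm_pull_def Lm_def fst_conv snd_conv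
    proof (intro conjI allI impI ballI)
      fix p show "f p \<in> module_hom R (fst M p) (lim_module (S (Td p)) (\<le>) (fst M) (snd M))"
      proof (rule mhI)
        fix x assume "x \<in> carrier (fst M p)" then show "f p x \<in> carrier (lim_module (S (Td p)) (\<le>) (fst M) (snd M))" by (rule fc)
      next
        fix x y assume "x \<in> carrier (fst M p)" "y \<in> carrier (fst M p)"
        then show "f p (add (fst M p) x y) = add (lim_module (S (Td p)) (\<le>) (fst M) (snd M)) (f p x) (f p y)"
          unfolding lim_add f_def by (intro ext) (simp add: mh_add[OF pm_hom[OF M Sup']])
      next
        fix r x assume "r \<in> carrier R" "x \<in> carrier (fst M p)"
        then show "f p (smult (fst M p) r x) = smult (lim_module (S (Td p)) (\<le>) (fst M) (snd M)) r (f p x)"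
          unfolding lim_smult f_def by (intro ext) (simp add: mh_smult[OF pm_hom[OF M Sup']])
      qed
    next
      fix p q x assume pq: "p \<le> q" and x: "x \<in> carrier (fst M p)"
      have sub: "S (Td q) \<subseteq> S (Td p)" using S tr_mono[OF Td pq] by blast
      show "f q (snd M p q x) = lim_restr (S (Td q)) (f p x)"
        unfolding f_def lim_restr_def
      proof (intro ext)
        fix i show "(if i \<in> S (Td q) then snd M q i (snd M p q x) else undefined) =
          (if i \<in> S (Td q) then if i \<in> S (Td p) then snd M p i x else undefined else undefined)"
          using sub Sup'[of i q] pm_comp[OF M pq _ x, of i] by auto
      qed
    qed
  next
    show "pm_morph R (Lm M S) (pm_pull Td M) g" unfolding pm_morph_def pm_pull_def Lm_def fst_conv snd_conv
    proof (intro conjI allI impI ballI)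
      fix p show "g p \<in> module_hom R (lim_module (S p) (\<le>) (fst M) (snd M)) (fst M (Td p))"
      proof (rule mhI)
        fix x assume "x \<in> carrier (lim_module (S p) (\<le>) (fst M) (snd M))" then show "g p x \<in> carrier (fst M (Td p))" by (rule gc)
      qed (simp_all add: g_def lim_add lim_smult Sin)
    next
      fix p q x assume pq: "p \<le> q" and x: "x \<in> carrier (lim_module (S p) (\<le>) (fst M) (snd M))"
      have "Td q \<in> S p" using Sin S pq by blast
      moreover have "Td p \<le> Td q" using tr_mono[OF Td pq] .
      ultimately show "g q (lim_restr (S q) x) = snd M (Td p) (Td q) (g p x)"
        using x Sin unfolding g_def lim_restr_def lim_carrier_iff by auto
    qed
  next
    show "\<forall>p. \<forall>x\<in>carrier (fst M p). g (Td p) (f p x) = snd M p (Td (Td p)) x"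
    proof (intro allI ballI)
      fix p x assume x: "x \<in> carrier (fst M p)"
      have "p \<le> Td (Td p)" using order.trans[OF pTd pTd] by blast
      then show "g (Td p) (f p x) = snd M p (Td (Td p)) x" unfolding g_def f_def using Sin by simp
    qed
  next
    show "\<forall>p. \<forall>y\<in>carrier (fst (Lm M S) p). f (Td p) (g p y) = snd (Lm M S) p (Td (Td p)) y"
      unfolding Lm_def fst_conv snd_conv
    proof (intro allI ballI)
      fix p y assume y: "y \<in> carrier (lim_module (S p) (\<le>) (fst M) (snd M))"
      have sub: "S (Td (Td p)) \<subseteq> S p" using S[OF order.trans[OF pTd pTd]] by blast
      have "\<And>x. x \<in> S (Td (Td p)) \<Longrightarrow> snd M (Td p) x (y (Td p)) = y x"
      proof -
        fix x assume "x \<in> S (Td (Td p))"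
        then have "x \<in> S p" "Td p \<le> x" using sub order.trans[OF pTd[of "Td p"] Sup] by blast+
        then show "snd M (Td p) x (y (Td p)) = y x" using y Sin unfolding lim_carrier_iff by blast
      qed
      then show "f (Td p) (g p y) = lim_restr (S (Td (Td p))) y"
        unfolding f_def g_def lim_restr_def by (intro ext) simp
    qed
  qed
qed

context tfam begin

lemma wbu_anti: "p \<le> q \<Longrightarrow> wbu q \<subseteq> wbu p" using wb_mono by blast

lemma lim_close_T:
  fixes M :: "('p, 'k, 'm) pmod"
  assumes M: "persistence_module R M"
    and S: "\<And>p q. p \<le> q \<Longrightarrow> S q \<subseteq> S p" and Sin: "\<And>d p. 0 < d \<Longrightarrow> T d p \<in> S p" and Sup: "\<And>p x. x \<in> S p \<Longrightarrow> p \<le> x"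
    and that: "persistence_module R N"
  shows "d_a R T M N = d_a R T (Lm M S) (Lm N S)"
proof (rule d_a_close[OF persistence_pm_func[OF M] persistence_pm_func[OF that] Lm_func[OF S] Lm_func[OF S]])
  fix d :: real assume d: "0 < d"
  show "pm_interleaved R (T d) M (Lm M S)" by (rule lim_close[OF M Ttr S Sin Sup]) (use d in auto)
  show "pm_interleaved R (T d) N (Lm N S)" by (rule lim_close[OF that Ttr S Sin Sup]) (use d in auto)
qed

lemma part_ii: assumes "persistence_module R M" "persistence_module R N"
  shows "d_a R T M N = d_a R T (pm_under M) (pm_under N)"
proof -
  have e: "pm_under X = Lm X wbu" for X :: "('p, 'k, 'z) pmod" unfolding pm_under_def Lm_def by simp
  show ?thesis unfolding e
    by (rule lim_close_T[where S=wbu, OF assms(1) wbu_anti _ _ assms(2)]) (auto simp: Twb wb_le)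
qed

lemma Iu_Td: "0 < d \<Longrightarrow> T d p \<in> Iu p"
  using wbu_Iu[OF cp] Twb by blast

lemma jlj: "j_shriek (j_lower_star M) = Lm M Iu"
  unfolding j_shriek_def j_lower_star_def Lm_def by simp

lemma jlj_close: assumes "persistence_module R M" "persistence_module R N"
  shows "d_a R T M N = d_a R T (j_shriek (j_lower_star M)) (j_shriek (j_lower_star N))"
  unfolding jlj
  by (rule lim_close_T[OF assms(1) Iu_anti Iu_Td Iu_sub assms(2)])

end



context abelian_group begin

lemma ag_minus_self: "x \<in> carrier G \<Longrightarrow> x \<ominus> x = \<zero>"
  by (simp add: minus_eq r_neg)

lemma ag_trans: "x \<in> carrier G \<Longrightarrow> v \<in> carrier G \<Longrightarrow> w \<in> carrier G \<Longrightarrow> (x \<ominus> v) \<oplus> (v \<ominus> w) = x \<ominus> w"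
  by (simp add: minus_eq a_assoc r_neg1)

lemma ag_neg_minus: "v \<in> carrier G \<Longrightarrow> w \<in> carrier G \<Longrightarrow> \<ominus> (v \<ominus> w) = w \<ominus> v"
  by (simp add: minus_eq minus_add minus_minus a_comm)

lemma ag_minus_add: "a \<in> carrier G \<Longrightarrow> b \<in> carrier G \<Longrightarrow> c \<in> carrier G \<Longrightarrow> d \<in> carrier G \<Longrightarrow>
   (a \<oplus> b) \<ominus> (c \<oplus> d) = (a \<ominus> c) \<oplus> (b \<ominus> d)"
  by (simp add: minus_eq minus_add a_ac)

lemma ag_cancel: assumes "x \<in> carrier G" "x \<oplus> x = x" shows "x = \<zero>"
proof -
  have "\<ominus> x \<oplus> (x \<oplus> x) = \<ominus> x \<oplus> x" using assms by simp
  then show ?thesis using assms by (simp add: r_neg1 l_neg)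
qed

lemma ag_minus_zero: "a \<in> carrier G \<Longrightarrow> b \<in> carrier G \<Longrightarrow> a \<ominus> b = \<zero> \<Longrightarrow> a = b"
  by (metis add.inv_closed add.inv_equality minus_eq minus_minus r_neg a_comm)

end

lemma mh_zero:
  assumes f: "f \<in> module_hom R A B" and A: "abelian_group A" and B: "abelian_group B"
  shows "f (zero A) = zero B"
proof -
  interpret A: abelian_group A by (rule A)
  interpret B: abelian_group B by (rule B)
  have "f (zero A) = f (add A (zero A) (zero A))" by simp
  also have "\<dots> = add B (f (zero A)) (f (zero A))" using mh_add[OF f A.zero_closed A.zero_closed] by simp
  finally show ?thesis using B.ag_cancel mh_carr[OF f A.zero_closed] by metis
qed

lemma mh_neg:
  assumes f: "f \<in> module_hom R A B" and A: "abelian_group A" and B: "abelian_group B" and x: "x \<in> carrier A"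
  shows "f (a_inv A x) = a_inv B (f x)"
proof -
  interpret A: abelian_group A by (rule A)
  interpret B: abelian_group B by (rule B)
  have "add B (f (a_inv A x)) (f x) = f (add A (a_inv A x) x)" using mh_add[OF f] x by simp
  also have "\<dots> = zero B" using mh_zero[OF f A B] x by (simp add: A.l_neg)
  finally show ?thesis using B.minus_equality mh_carr[OF f] x by (metis A.a_inv_closed)
qed

lemma mh_minus:
  assumes f: "f \<in> module_hom R A B" and A: "abelian_group A" and B: "abelian_group B"
    and x: "x \<in> carrier A" and y: "y \<in> carrier A"
  shows "f (a_minus A x y) = a_minus B (f x) (f y)"
  using mh_add[OF f] mh_neg[OF f A B y] x y abelian_group.a_inv_closed[OF A]
  by (simp add: a_minus_def)

lemma sm_zero: "submodule H R M \<Longrightarrow> zero M \<in> H"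
  using subgroup.one_closed[OF submodule.axioms(1)] by fastforce
lemma sm_add: "submodule H R M \<Longrightarrow> a \<in> H \<Longrightarrow> b \<in> H \<Longrightarrow> add M a b \<in> H"
  using subgroup.m_closed[OF submodule.axioms(1)] by fastforce
lemma sm_inv: "submodule H R M \<Longrightarrow> a \<in> H \<Longrightarrow> a_inv M a \<in> H"
  using subgroup.m_inv_closed[OF submodule.axioms(1)] unfolding a_inv_def by fastforce
lemma sm_smult: "submodule H R M \<Longrightarrow> r \<in> carrier R \<Longrightarrow> a \<in> H \<Longrightarrow> smult M r a \<in> H"
  using submodule.smult_closed by fastforce
lemma sm_sub: "submodule H R M \<Longrightarrow> H \<subseteq> carrier M"
  using subgroup.subset[OF submodule.axioms(1)] by fastforce
lemma sm_minus: "submodule H R M \<Longrightarrow> a \<in> H \<Longrightarrow> b \<in> H \<Longrightarrow> a_minus M a b \<in> H"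
  unfolding a_minus_def using sm_add sm_inv by fastforce

locale cdiag =
  fixes R :: "('k,'r) ring_scheme" and I :: "'i set" and Mo :: "'i \<Rightarrow> ('k,'m) module"
  assumes cr: "cring R"
    and modI: "\<And>i. i \<in> I \<Longrightarrow> Module.module R (Mo i)"
begin

abbreviation DS where "DS \<equiv> dsum_module I Mo"

definition supp where "supp v = {i\<in>I. v i \<noteq> zero (Mo i)}"

lemma DS_carr: "v \<in> carrier DS \<longleftrightarrow> (\<forall>i\<in>I. v i \<in> carrier (Mo i)) \<and> (\<forall>i. i \<notin> I \<longrightarrow> v i = undefined) \<and> finite (supp v)"
  by (simp add: dsum_module_def supp_def)

lemma DS_add: "add DS v w = (\<lambda>i. if i \<in> I then add (Mo i) (v i) (w i) else undefined)"
  by (simp add: dsum_module_def)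
lemma DS_zero: "zero DS = (\<lambda>i. if i \<in> I then zero (Mo i) else undefined)"
  by (simp add: dsum_module_def)
lemma DS_smult: "smult DS r v = (\<lambda>i. if i \<in> I then smult (Mo i) r (v i) else undefined)"
  by (simp add: dsum_module_def)

lemma Mo_ag: "i \<in> I \<Longrightarrow> abelian_group (Mo i)"
  using modI Module.module.axioms(2) by blast

lemma Mo_facts:
  assumes i: "i \<in> I"
  shows "zero (Mo i) \<in> carrier (Mo i)"
    and "x \<in> carrier (Mo i) \<Longrightarrow> y \<in> carrier (Mo i) \<Longrightarrow> add (Mo i) x y \<in> carrier (Mo i)"
    and "x \<in> carrier (Mo i) \<Longrightarrow> y \<in> carrier (Mo i) \<Longrightarrow> z \<in> carrier (Mo i) \<Longrightarrow> add (Mo i) (add (Mo i) x y) z = add (Mo i) x (add (Mo i) y z)"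
    and "x \<in> carrier (Mo i) \<Longrightarrow> y \<in> carrier (Mo i) \<Longrightarrow> add (Mo i) x y = add (Mo i) y x"
    and "x \<in> carrier (Mo i) \<Longrightarrow> add (Mo i) (zero (Mo i)) x = x"
    and "x \<in> carrier (Mo i) \<Longrightarrow> add (Mo i) x (zero (Mo i)) = x"
    and "x \<in> carrier (Mo i) \<Longrightarrow> a_inv (Mo i) x \<in> carrier (Mo i)"
    and "x \<in> carrier (Mo i) \<Longrightarrow> add (Mo i) (a_inv (Mo i) x) x = zero (Mo i)"
    and "a_inv (Mo i) (zero (Mo i)) = zero (Mo i)"
    and "r \<in> carrier R \<Longrightarrow> x \<in> carrier (Mo i) \<Longrightarrow> smult (Mo i) r x \<in> carrier (Mo i)"
    and "r \<in> carrier R \<Longrightarrow> smult (Mo i) r (zero (Mo i)) = zero (Mo i)"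
    and "r \<in> carrier R \<Longrightarrow> s \<in> carrier R \<Longrightarrow> x \<in> carrier (Mo i) \<Longrightarrow> smult (Mo i) (add R r s) x = add (Mo i) (smult (Mo i) r x) (smult (Mo i) s x)"
    and "r \<in> carrier R \<Longrightarrow> x \<in> carrier (Mo i) \<Longrightarrow> y \<in> carrier (Mo i) \<Longrightarrow> smult (Mo i) r (add (Mo i) x y) = add (Mo i) (smult (Mo i) r x) (smult (Mo i) r y)"
    and "r \<in> carrier R \<Longrightarrow> s \<in> carrier R \<Longrightarrow> x \<in> carrier (Mo i) \<Longrightarrow> smult (Mo i) (mult R r s) x = smult (Mo i) r (smult (Mo i) s x)"
    and "x \<in> carrier (Mo i) \<Longrightarrow> smult (Mo i) (one R) x = x"
proof -
  interpret Mi: Module.module R "Mo i" by (rule modI[OF i])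
  show "zero (Mo i) \<in> carrier (Mo i)" by simp
  show "x \<in> carrier (Mo i) \<Longrightarrow> y \<in> carrier (Mo i) \<Longrightarrow> add (Mo i) x y \<in> carrier (Mo i)" by simp
  show "x \<in> carrier (Mo i) \<Longrightarrow> y \<in> carrier (Mo i) \<Longrightarrow> z \<in> carrier (Mo i) \<Longrightarrow> add (Mo i) (add (Mo i) x y) z = add (Mo i) x (add (Mo i) y z)" by (simp add: Mi.a_assoc)
  show "x \<in> carrier (Mo i) \<Longrightarrow> y \<in> carrier (Mo i) \<Longrightarrow> add (Mo i) x y = add (Mo i) y x" by (simp add: Mi.a_comm)
  show "x \<in> carrier (Mo i) \<Longrightarrow> add (Mo i) (zero (Mo i)) x = x" by simp
  show "x \<in> carrier (Mo i) \<Longrightarrow> add (Mo i) x (zero (Mo i)) = x" by simp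
  show "x \<in> carrier (Mo i) \<Longrightarrow> a_inv (Mo i) x \<in> carrier (Mo i)" by simp
  show "x \<in> carrier (Mo i) \<Longrightarrow> add (Mo i) (a_inv (Mo i) x) x = zero (Mo i)" by (simp add: Mi.l_neg)
  show "a_inv (Mo i) (zero (Mo i)) = zero (Mo i)" by simp
  show "r \<in> carrier R \<Longrightarrow> x \<in> carrier (Mo i) \<Longrightarrow> smult (Mo i) r x \<in> carrier (Mo i)" by simp
  show "r \<in> carrier R \<Longrightarrow> smult (Mo i) r (zero (Mo i)) = zero (Mo i)" by simp
  show "r \<in> carrier R \<Longrightarrow> s \<in> carrier R \<Longrightarrow> x \<in> carrier (Mo i) \<Longrightarrow> smult (Mo i) (add R r s) x = add (Mo i) (smult (Mo i) r x) (smult (Mo i) s x)" by (simp add: Mi.smult_l_distr)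
  show "r \<in> carrier R \<Longrightarrow> x \<in> carrier (Mo i) \<Longrightarrow> y \<in> carrier (Mo i) \<Longrightarrow> smult (Mo i) r (add (Mo i) x y) = add (Mo i) (smult (Mo i) r x) (smult (Mo i) r y)" by (simp add: Mi.smult_r_distr)
  show "r \<in> carrier R \<Longrightarrow> s \<in> carrier R \<Longrightarrow> x \<in> carrier (Mo i) \<Longrightarrow> smult (Mo i) (mult R r s) x = smult (Mo i) r (smult (Mo i) s x)" by (simp add: Mi.smult_assoc1)
  show "x \<in> carrier (Mo i) \<Longrightarrow> smult (Mo i) (one R) x = x" by simp
qed

lemma DS_ag: "abelian_group DS"
proof (rule abelian_groupI)
  fix x y assume x: "x \<in> carrier DS" and y: "y \<in> carrier DS"
  have "supp (add DS x y) \<subseteq> supp x \<union> supp y"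
  proof
    fix i assume "i \<in> supp (add DS x y)"
    then have i: "i \<in> I" and ne: "add (Mo i) (x i) (y i) \<noteq> zero (Mo i)" by (auto simp: supp_def DS_add)
    interpret Mi: Module.module R "Mo i" by (rule modI[OF i])
    show "i \<in> supp x \<union> supp y"
    proof (rule ccontr)
      assume "i \<notin> supp x \<union> supp y" then have "x i = zero (Mo i)" "y i = zero (Mo i)" using i by (auto simp: supp_def)
      then show False using ne by simp
    qed
  qed
  moreover have "\<forall>i\<in>I. add (Mo i) (x i) (y i) \<in> carrier (Mo i)"
    using x y modI unfolding DS_carr by (simp add: Mo_facts)
  ultimately show "add DS x y \<in> carrier DS" using x y unfolding DS_carr
    by (auto simp: DS_add intro: finite_subset)
next
  show "zero DS \<in> carrier DS" unfolding DS_carr supp_def DS_zero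
    using modI by (simp add: Mo_facts)
next
  fix x y z assume "x \<in> carrier DS" "y \<in> carrier DS" "z \<in> carrier DS"
  then show "add DS (add DS x y) z = add DS x (add DS y z)"
    unfolding DS_carr DS_add by (intro ext) (auto simp: Mo_facts(2,3))
next
  fix x y assume "x \<in> carrier DS" "y \<in> carrier DS"
  then show "add DS x y = add DS y x"
    unfolding DS_carr DS_add by (intro ext) (auto simp: Mo_facts(4))
next
  fix x assume "x \<in> carrier DS"
  then show "add DS (zero DS) x = x"
    unfolding DS_carr DS_add DS_zero by (intro ext) (auto simp: Mo_facts(5))
next
  fix x assume x: "x \<in> carrier DS"
  define y where "y = (\<lambda>i. if i \<in> I then a_inv (Mo i) (x i) else undefined)"
  have "supp y \<subseteq> supp x"
  proof
    fix i assume "i \<in> supp y"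
    then have i: "i \<in> I" and ne: "a_inv (Mo i) (x i) \<noteq> zero (Mo i)" by (auto simp: supp_def y_def)
    interpret Mi: Module.module R "Mo i" by (rule modI[OF i])
    show "i \<in> supp x" using ne i Mi.minus_zero unfolding supp_def by auto
  qed
  then have "y \<in> carrier DS" using x modI unfolding DS_carr y_def
    by (auto simp: Mo_facts intro: finite_subset)
  moreover have "add DS y x = zero DS"
    unfolding DS_add DS_zero y_def using x unfolding DS_carr
    by (intro ext) (auto simp: Mo_facts(8))
  ultimately show "\<exists>y\<in>carrier DS. add DS y x = zero DS" by blast
qed

lemma DS_module: "Module.module R DS"
proof (rule moduleI[OF cr DS_ag])
  fix a x assume a: "a \<in> carrier R" and x: "x \<in> carrier DS"
  have "supp (smult DS a x) \<subseteq> supp x"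
  proof
    fix i assume "i \<in> supp (smult DS a x)"
    then have i: "i \<in> I" and ne: "smult (Mo i) a (x i) \<noteq> zero (Mo i)" by (auto simp: supp_def DS_smult)
    interpret Mi: Module.module R "Mo i" by (rule modI[OF i])
    show "i \<in> supp x" using ne i a unfolding supp_def by auto
  qed
  then show "smult DS a x \<in> carrier DS" using x a modI unfolding DS_carr
    by (auto simp: DS_smult Mo_facts intro: finite_subset)
next
  fix a b x assume "a \<in> carrier R" "b \<in> carrier R" "x \<in> carrier DS"
  then show "smult DS (add R a b) x = add DS (smult DS a x) (smult DS b x)"
    unfolding DS_carr DS_add DS_smult using modI by (intro ext) (simp add: Mo_facts)
next
  fix a x y assume "a \<in> carrier R" "x \<in> carrier DS" "y \<in> carrier DS"
  then show "smult DS a (add DS x y) = add DS (smult DS a x) (smult DS a y)"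
    unfolding DS_carr DS_add DS_smult using modI by (intro ext) (simp add: Mo_facts)
next
  fix a b x assume "a \<in> carrier R" "b \<in> carrier R" "x \<in> carrier DS"
  then show "smult DS (mult R a b) x = smult DS a (smult DS b x)"
    unfolding DS_carr DS_smult using modI by (intro ext) (simp add: Mo_facts)
next
  fix x assume "x \<in> carrier DS"
  then show "smult DS (one R) x = x"
    unfolding DS_carr DS_smult using modI by (intro ext) (simp add: Mo_facts)
qed

lemma DS_neg: assumes x: "x \<in> carrier DS"
  shows "a_inv DS x = (\<lambda>i. if i \<in> I then a_inv (Mo i) (x i) else undefined)"
proof -
  interpret D: abelian_group DS by (rule DS_ag)
  define y where "y = (\<lambda>i. if i \<in> I then a_inv (Mo i) (x i) else undefined)"
  have "supp y \<subseteq> supp x"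
  proof
    fix i assume "i \<in> supp y"
    then have i: "i \<in> I" and ne: "a_inv (Mo i) (x i) \<noteq> zero (Mo i)" by (auto simp: supp_def y_def)
    interpret Mi: Module.module R "Mo i" by (rule modI[OF i])
    show "i \<in> supp x" using ne i Mi.minus_zero unfolding supp_def by auto
  qed
  then have yc: "y \<in> carrier DS" using x modI unfolding DS_carr y_def
    by (auto simp: Mo_facts intro: finite_subset)
  moreover have "add DS y x = zero DS"
    unfolding DS_add DS_zero y_def using x unfolding DS_carr
    by (intro ext) (auto simp: Mo_facts(8))
  ultimately show ?thesis using D.minus_equality x y_def by blast
qed

lemma DS_minus: assumes x: "x \<in> carrier DS" and y: "y \<in> carrier DS"
  shows "a_minus DS x y = (\<lambda>i. if i \<in> I then a_minus (Mo i) (x i) (y i) else undefined)"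
  unfolding a_minus_def DS_neg[OF y] DS_add by (intro ext) simp

abbreviation ins where "ins \<equiv> dsum_ins I Mo"

lemma ins_carr: assumes i: "i \<in> I" and a: "a \<in> carrier (Mo i)" shows "ins i a \<in> carrier DS"
proof -
  have "supp (ins i a) \<subseteq> {i}" unfolding supp_def dsum_ins_def by auto
  then show ?thesis unfolding DS_carr using i a modI
    by (auto simp: dsum_ins_def Mo_facts intro: finite_subset)
qed

lemma ins_hom: assumes i: "i \<in> I" shows "ins i \<in> module_hom R (Mo i) DS"
proof (rule mhI)
  fix x assume "x \<in> carrier (Mo i)" then show "ins i x \<in> carrier DS" using ins_carr i by blast
next
  fix x y assume "x \<in> carrier (Mo i)" "y \<in> carrier (Mo i)"
  then show "ins i (add (Mo i) x y) = add DS (ins i x) (ins i y)"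
    unfolding dsum_ins_def DS_add using modI i by (intro ext) (simp add: Mo_facts)
next
  fix r x assume "r \<in> carrier R" "x \<in> carrier (Mo i)"
  then show "ins i (smult (Mo i) r x) = smult DS r (ins i x)"
    unfolding dsum_ins_def DS_smult using modI i by (intro ext) (simp add: Mo_facts)
qed

lemma DS_induct:
  assumes z: "P (zero DS)"
    and step: "\<And>v i a. v \<in> carrier DS \<Longrightarrow> P v \<Longrightarrow> i \<in> I \<Longrightarrow> a \<in> carrier (Mo i) \<Longrightarrow> P (add DS v (ins i a))"
    and v: "v \<in> carrier DS"
  shows "P v"
proof -
  have "\<forall>v. v \<in> carrier DS \<longrightarrow> supp v \<subseteq> F \<longrightarrow> P v" if "finite F" for F
    using that
  proof (induction F)
    case empty
    show ?case
    proof (intro allI impI)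
      fix v assume v: "v \<in> carrier DS" "supp v \<subseteq> {}"
      have "v = zero DS" unfolding DS_zero
      proof (rule ext)
        fix i show "v i = (if i \<in> I then zero (Mo i) else undefined)"
          using v unfolding DS_carr supp_def by auto
      qed
      then show "P v" using z by simp
    qed
  next
    case (insert i F)
    show ?case
    proof (intro allI impI)
      fix v assume v: "v \<in> carrier DS" "supp v \<subseteq> insert i F"
      show "P v"
      proof (cases "i \<in> I")
        case False
        then have "supp v \<subseteq> F" using v(2) unfolding supp_def by auto
        then show ?thesis using insert.IH v by blast
      next
        case True
        interpret Mi: Module.module R "Mo i" by (rule modI[OF True])
        define v' where "v' = (\<lambda>j. if j = i then zero (Mo i) else v j)"
        have vi: "v i \<in> carrier (Mo i)" using v True unfolding DS_carr by blast
        have s': "supp v' \<subseteq> F" using v(2) unfolding supp_def v'_def by auto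
        then have v'c: "v' \<in> carrier DS" using v True insert.hyps(1) unfolding DS_carr v'_def by (auto intro: finite_subset simp: Mo_facts(1))
        then have "P v'" using insert.IH s' by blast
        moreover have "v = add DS v' (ins i (v i))" unfolding DS_add dsum_ins_def
        proof (rule ext)
          fix j show "v j = (if j \<in> I then add (Mo j) (v' j) (if j = i then v i else if j \<in> I then zero (Mo j) else undefined) else undefined)"
          proof (cases "j = i")
            case True then show ?thesis using vi \<open>i \<in> I\<close> by (simp add: v'_def)
          next
            case False
            show ?thesis
            proof (cases "j \<in> I")
              case True
              interpret Mj: Module.module R "Mo j" by (rule modI[OF True])
              show ?thesis using v True False unfolding DS_carr v'_def by simp
            next
              case f2: False then show ?thesis using v unfolding DS_carr by simp
            qed
          qed
        qed
        ultimately show ?thesis using step[OF v'c _ True vi] by simp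
      qed
    qed
  qed
  then show ?thesis using v unfolding DS_carr by blast
qed

end

section \<open>Colimits\<close>

locale cdiag2 = cdiag R I Mo for R :: "('k,'r) ring_scheme" and I :: "'i set" and Mo :: "'i \<Rightarrow> ('k,'m) module" +
  fixes rel :: "'i \<Rightarrow> 'i \<Rightarrow> bool" and Ma :: "'i \<Rightarrow> 'i \<Rightarrow> 'm \<Rightarrow> 'm"
  assumes homI: "\<And>i j. i \<in> I \<Longrightarrow> j \<in> I \<Longrightarrow> rel i j \<Longrightarrow> Ma i j \<in> module_hom R (Mo i) (Mo j)"
begin

abbreviation KK where "KK \<equiv> colim_rel R I rel Mo Ma"
abbreviation CC where "CC \<equiv> colim_module R I rel Mo Ma"
abbreviation cl where "cl \<equiv> qclass DS KK"

lemma gens_mem: "x \<in> colim_gens I rel Mo Ma \<longleftrightarrow>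
  (\<exists>i j a. x = a_minus DS (ins j (Ma i j a)) (ins i a) \<and> i \<in> I \<and> j \<in> I \<and> rel i j \<and> a \<in> carrier (Mo i))"
  unfolding colim_gens_def by (rule mem_Collect_eq)

lemma gens_carr: "colim_gens I rel Mo Ma \<subseteq> carrier DS"
proof
  fix x assume "x \<in> colim_gens I rel Mo Ma"
  then obtain i j a where x: "x = a_minus DS (ins j (Ma i j a)) (ins i a)" and ij: "i \<in> I" "j \<in> I" "rel i j" "a \<in> carrier (Mo i)"
    unfolding gens_mem by blast
  have "Ma i j a \<in> carrier (Mo j)" using mh_carr[OF homI[OF ij(1-3)] ij(4)] .
  then have "ins j (Ma i j a) \<in> carrier DS" "ins i a \<in> carrier DS" using ins_carr ij by auto
  then show "x \<in> carrier DS" unfolding x by (rule abelian_group.minus_closed[OF DS_ag])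
qed

lemma KK_mem: "x \<in> KK \<longleftrightarrow> (\<forall>S. submodule S R DS \<and> colim_gens I rel Mo Ma \<subseteq> S \<longrightarrow> x \<in> S)"
  unfolding colim_rel_def by simp

lemma KK_D: "x \<in> KK \<Longrightarrow> submodule S R DS \<Longrightarrow> colim_gens I rel Mo Ma \<subseteq> S \<Longrightarrow> x \<in> S"
  unfolding KK_mem by simp

lemma KK_I: "(\<And>S. submodule S R DS \<Longrightarrow> colim_gens I rel Mo Ma \<subseteq> S \<Longrightarrow> x \<in> S) \<Longrightarrow> x \<in> KK"
  unfolding KK_mem by simp

lemma KK_sub: "submodule KK R DS"
proof -
  interpret D: Module.module R DS by (rule DS_module)
  have cF: "submodule (carrier DS) R DS" using D.carrier_is_submodule .
  show ?thesis
  proof (rule D.submoduleI)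
    show "KK \<subseteq> carrier DS"
    proof
      fix x assume "x \<in> KK" then show "x \<in> carrier DS" by (rule KK_D[OF _ cF gens_carr])
    qed
    show "zero DS \<in> KK" by (rule KK_I) (rule sm_zero)
    show "\<And>a. a \<in> KK \<Longrightarrow> a_inv DS a \<in> KK"
    proof (rule KK_I)
      fix a S assume "a \<in> KK" "submodule S R DS" "colim_gens I rel Mo Ma \<subseteq> S"
      then show "a_inv DS a \<in> S" using KK_D sm_inv by metis
    qed
    show "\<And>a b. a \<in> KK \<Longrightarrow> b \<in> KK \<Longrightarrow> add DS a b \<in> KK"
    proof (rule KK_I)
      fix a b S assume "a \<in> KK" "b \<in> KK" "submodule S R DS" "colim_gens I rel Mo Ma \<subseteq> S"
      then show "add DS a b \<in> S" using KK_D sm_add by metis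
    qed
    show "\<And>a x. a \<in> carrier R \<Longrightarrow> x \<in> KK \<Longrightarrow> smult DS a x \<in> KK"
    proof (rule KK_I)
      fix a x S assume "a \<in> carrier R" "x \<in> KK" "submodule S R DS" "colim_gens I rel Mo Ma \<subseteq> S"
      then show "smult DS a x \<in> S" using KK_D sm_smult by metis
    qed
  qed
qed

lemma gens_KK: "colim_gens I rel Mo Ma \<subseteq> KK"
proof
  fix x assume "x \<in> colim_gens I rel Mo Ma" then show "x \<in> KK" by (intro KK_I) blast
qed

lemma KK_least: assumes "submodule S R DS" "colim_gens I rel Mo Ma \<subseteq> S" shows "KK \<subseteq> S"
proof
  fix x assume "x \<in> KK" then show "x \<in> S" using assms by (rule KK_D)
qed

lemma KK_carr: "KK \<subseteq> carrier DS" using sm_sub[OF KK_sub] .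

lemma cl_self: "v \<in> carrier DS \<Longrightarrow> v \<in> cl v"
  unfolding qclass_def using abelian_group.ag_minus_self[OF DS_ag] sm_zero[OF KK_sub] by simp

lemma cl_mem: "w \<in> cl v \<longleftrightarrow> w \<in> carrier DS \<and> a_minus DS w v \<in> KK"
  unfolding qclass_def by simp

lemma cl_eq: assumes v: "v \<in> carrier DS" and w: "w \<in> carrier DS" and vw: "a_minus DS v w \<in> KK"
  shows "cl v = cl w"
proof -
  interpret D: abelian_group DS by (rule DS_ag)
  have wv: "a_minus DS w v \<in> KK" using sm_inv[OF KK_sub vw] D.ag_neg_minus[OF v w] by simp
  show ?thesis
  proof (intro equalityI subsetI)
    fix x assume "x \<in> cl v"
    then have x: "x \<in> carrier DS" "a_minus DS x v \<in> KK" unfolding cl_mem by auto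
    have "a_minus DS x w = add DS (a_minus DS x v) (a_minus DS v w)" using D.ag_trans x(1) v w by simp
    then show "x \<in> cl w" using sm_add[OF KK_sub x(2) vw] x(1) unfolding cl_mem by simp
  next
    fix x assume "x \<in> cl w"
    then have x: "x \<in> carrier DS" "a_minus DS x w \<in> KK" unfolding cl_mem by auto
    have "a_minus DS x v = add DS (a_minus DS x w) (a_minus DS w v)" using D.ag_trans x(1) v w by simp
    then show "x \<in> cl v" using sm_add[OF KK_sub x(2) wv] x(1) unfolding cl_mem by simp
  qed
qed

lemma cl_eq_iff: assumes v: "v \<in> carrier DS" and w: "w \<in> carrier DS" shows "cl v = cl w \<longleftrightarrow> a_minus DS v w \<in> KK"
proof
  assume "cl v = cl w"
  then have "v \<in> cl w" using cl_self[OF v] by simp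
  then show "a_minus DS v w \<in> KK" unfolding cl_mem by simp
qed (rule cl_eq[OF v w])

lemma some_cl: assumes v: "v \<in> carrier DS" shows "(SOME a. a \<in> cl v) \<in> carrier DS" "cl (SOME a. a \<in> cl v) = cl v"
proof -
  have "(SOME a. a \<in> cl v) \<in> cl v" using cl_self[OF v] by (rule someI[of "\<lambda>a. a \<in> cl v"])
  then have "(SOME a. a \<in> cl v) \<in> carrier DS" "a_minus DS (SOME a. a \<in> cl v) v \<in> KK" unfolding cl_mem by simp_all
  then show "(SOME a. a \<in> cl v) \<in> carrier DS" "cl (SOME a. a \<in> cl v) = cl v"
    using cl_eq v by simp_all
qed

lemma CC_carr: "carrier CC = cl ` carrier DS"
  by (simp add: colim_module_def quot_module_def)

lemma CC_add: assumes v: "v \<in> carrier DS" and w: "w \<in> carrier DS"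
  shows "add CC (cl v) (cl w) = cl (add DS v w)"
proof -
  interpret D: abelian_group DS by (rule DS_ag)
  define a b where "a = (SOME a. a \<in> cl v)" and "b = (SOME a. a \<in> cl w)"
  have a: "a \<in> carrier DS" "cl a = cl v" and b: "b \<in> carrier DS" "cl b = cl w" using some_cl v w a_def b_def by auto
  have "a_minus DS a v \<in> KK" "a_minus DS b w \<in> KK" using a b v w cl_eq_iff by auto
  then have "a_minus DS (add DS a b) (add DS v w) \<in> KK"
    using D.ag_minus_add a(1) b(1) v w sm_add[OF KK_sub] by simp
  then have "cl (add DS a b) = cl (add DS v w)" using cl_eq a b v w by simp
  then show ?thesis by (simp add: colim_module_def quot_module_def a_def b_def)
qed

lemma CC_smult: assumes r: "r \<in> carrier R" and v: "v \<in> carrier DS"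
  shows "smult CC r (cl v) = cl (smult DS r v)"
proof -
  interpret D: Module.module R DS by (rule DS_module)
  define a where "a = (SOME a. a \<in> cl v)"
  have a: "a \<in> carrier DS" "cl a = cl v" using some_cl v a_def by auto
  have k: "a_minus DS a v \<in> KK" using a v cl_eq_iff by auto
  have "a_minus DS (smult DS r a) (smult DS r v) = smult DS r (a_minus DS a v)"
    using a(1) v r by (simp add: a_minus_def D.smult_r_distr D.smult_r_minus)
  then have "a_minus DS (smult DS r a) (smult DS r v) \<in> KK" using sm_smult[OF KK_sub r k] by simp
  then have "cl (smult DS r a) = cl (smult DS r v)" using cl_eq a v r by simp
  then show ?thesis by (simp add: colim_module_def quot_module_def a_def)
qed

lemma cl_hom: "cl \<in> module_hom R DS CC"
  by (rule mhI) (auto simp: CC_carr CC_add CC_smult)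

lemma clins_hom: "i \<in> I \<Longrightarrow> (\<lambda>a. cl (ins i a)) \<in> module_hom R (Mo i) CC"
  using mh_comp[OF ins_hom cl_hom] by simp

lemma clins_carr: "i \<in> I \<Longrightarrow> a \<in> carrier (Mo i) \<Longrightarrow> cl (ins i a) \<in> carrier CC"
  using CC_carr ins_carr by blast

lemma gen_eq: assumes ij: "i \<in> I" "j \<in> I" "rel i j" and a: "a \<in> carrier (Mo i)"
  shows "cl (ins j (Ma i j a)) = cl (ins i a)"
proof (rule cl_eq)
  show "ins j (Ma i j a) \<in> carrier DS" using ins_carr ij mh_carr[OF homI[OF ij] a] by blast
  show "ins i a \<in> carrier DS" using ins_carr ij a by blast
  show "a_minus DS (ins j (Ma i j a)) (ins i a) \<in> KK"
    by (rule subsetD[OF gens_KK]) (unfold gens_mem, use ij a in blast)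
qed

lemma CC_uniq:
  assumes f: "f \<in> module_hom R CC Y" and g: "g \<in> module_hom R CC Y" and Y: "abelian_group Y"
    and fg: "\<And>i a. i \<in> I \<Longrightarrow> a \<in> carrier (Mo i) \<Longrightarrow> f (cl (ins i a)) = g (cl (ins i a))"
    and A: "A \<in> carrier CC"
  shows "f A = g A"
proof -
  interpret D: abelian_group DS by (rule DS_ag)
  interpret Y: abelian_group Y by (rule Y)
  obtain v where v: "v \<in> carrier DS" "A = cl v" using A CC_carr by blast
  have z: "h (cl (zero DS)) = zero Y" if h: "h \<in> module_hom R CC Y" for h
  proof -
    have "h (cl (zero DS)) = h (add CC (cl (zero DS)) (cl (zero DS)))" using CC_add by simp
    also have "\<dots> = add Y (h (cl (zero DS))) (h (cl (zero DS)))" using mh_add[OF h] CC_carr by simp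
    finally show "h (cl (zero DS)) = zero Y" using Y.ag_cancel mh_carr[OF h] CC_carr by (metis D.zero_closed image_eqI)
  qed
  have "f (cl v) = g (cl v)"
  proof (rule DS_induct[where P="\<lambda>v. f (cl v) = g (cl v)", OF _ _ v(1)])
    show "f (cl (zero DS)) = g (cl (zero DS))" using z[OF f] z[OF g] by simp
  next
    fix w i a assume w: "w \<in> carrier DS" "f (cl w) = g (cl w)" "i \<in> I" "a \<in> carrier (Mo i)"
    have ic: "ins i a \<in> carrier DS" using ins_carr[OF w(3,4)] .
    have c1: "cl w \<in> carrier CC" "cl (ins i a) \<in> carrier CC" using CC_carr w(1) ic by auto
    have "f (cl (add DS w (ins i a))) = add Y (f (cl w)) (f (cl (ins i a)))"
      using CC_add[OF w(1) ic] mh_add[OF f c1] by simp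
    moreover have "g (cl (add DS w (ins i a))) = add Y (g (cl w)) (g (cl (ins i a)))"
      using CC_add[OF w(1) ic] mh_add[OF g c1] by simp
    ultimately show "f (cl (add DS w (ins i a))) = g (cl (add DS w (ins i a)))" using w fg by simp
  qed
  then show ?thesis using v by simp
qed

end



context cdiag begin

lemma supp_add: assumes x: "x \<in> carrier DS" and y: "y \<in> carrier DS"
  shows "supp (add DS x y) \<subseteq> supp x \<union> supp y"
proof
  fix i assume "i \<in> supp (add DS x y)"
  then have i: "i \<in> I" and ne: "add (Mo i) (x i) (y i) \<noteq> zero (Mo i)" by (auto simp: supp_def DS_add)
  show "i \<in> supp x \<union> supp y"
  proof (rule ccontr)
    assume "i \<notin> supp x \<union> supp y" then have "x i = zero (Mo i)" "y i = zero (Mo i)" using i by (auto simp: supp_def)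
    then show False using ne Mo_facts(1,5)[OF i] by simp
  qed
qed

lemma supp_smult: assumes a: "a \<in> carrier R" and x: "x \<in> carrier DS"
  shows "supp (smult DS a x) \<subseteq> supp x"
proof
  fix i assume "i \<in> supp (smult DS a x)"
  then have i: "i \<in> I" and ne: "smult (Mo i) a (x i) \<noteq> zero (Mo i)" by (auto simp: supp_def DS_smult)
  show "i \<in> supp x" using ne i a Mo_facts(11)[OF i a] unfolding supp_def by auto
qed

lemma supp_sub: "supp v \<subseteq> I" unfolding supp_def by auto

lemma DS_add_closed: "v \<in> carrier DS \<Longrightarrow> w \<in> carrier DS \<Longrightarrow> add DS v w \<in> carrier DS"
proof -
  interpret D: abelian_group DS by (rule DS_ag)
  show "v \<in> carrier DS \<Longrightarrow> w \<in> carrier DS \<Longrightarrow> add DS v w \<in> carrier DS" by simp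
qed

lemma supp_fin: "v \<in> carrier DS \<Longrightarrow> finite (supp v)" unfolding DS_carr by simp

lemma ins_supp: "supp (ins i a) \<subseteq> {i}" unfolding supp_def dsum_ins_def by auto

end

context cdiag2 begin

lemma CC_E: assumes "A \<in> carrier CC" obtains v where "v \<in> carrier DS" "A = cl v"
  using assms unfolding CC_carr by (rule imageE)

lemma CC_I: "v \<in> carrier DS \<Longrightarrow> cl v \<in> carrier CC"
  unfolding CC_carr by (rule imageI)

end

locale clift = cdiag2 R I Mo rel Ma for R :: "('k,'r) ring_scheme" and I :: "'i set" and Mo :: "'i \<Rightarrow> ('k,'m) module"
  and rel and Ma +
  fixes X :: "('k,'x) module" and h :: "'i \<Rightarrow> 'm \<Rightarrow> 'x"
  assumes X: "Module.module R X"
    and hX: "\<And>i. i \<in> I \<Longrightarrow> h i \<in> module_hom R (Mo i) X"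
    and hc: "\<And>i j a. i \<in> I \<Longrightarrow> j \<in> I \<Longrightarrow> rel i j \<Longrightarrow> a \<in> carrier (Mo i) \<Longrightarrow> h j (Ma i j a) = h i a"
begin

interpretation XX: Module.module R X by (rule X)

definition Phi where "Phi v = finsum X (\<lambda>i. h i (v i)) (supp v)"
definition lift where "lift A = Phi (SOME v. v \<in> A)"

lemma h0: "i \<in> I \<Longrightarrow> h i (zero (Mo i)) = zero X"
  by (rule mh_zero[OF hX Mo_ag XX.abelian_group_axioms])

lemma hcarr: "i \<in> I \<Longrightarrow> a \<in> carrier (Mo i) \<Longrightarrow> h i a \<in> carrier X"
  by (rule mh_carr[OF hX])

lemma hPi: "v \<in> carrier DS \<Longrightarrow> F \<subseteq> I \<Longrightarrow> (\<lambda>i. h i (v i)) \<in> F \<rightarrow> carrier X"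
  using hcarr unfolding DS_carr by blast

lemma Phi_F: assumes v: "v \<in> carrier DS" and F: "finite F" "supp v \<subseteq> F" "F \<subseteq> I"
  shows "Phi v = finsum X (\<lambda>i. h i (v i)) F"
  unfolding Phi_def
proof (rule XX.add.finprod_mono_neutral_cong_left[OF F(1,2)])
  fix i assume "i \<in> F - supp v"
  then have "i \<in> I" "v i = zero (Mo i)" using F unfolding supp_def by auto
  then show "h i (v i) = zero X" using h0 by simp
qed (use hPi[OF v F(3)] in auto)

lemma Phi_carr: "v \<in> carrier DS \<Longrightarrow> Phi v \<in> carrier X"
  unfolding Phi_def by (rule XX.finsum_closed) (rule hPi[OF _ supp_sub])

lemma Phi_add: assumes v: "v \<in> carrier DS" and w: "w \<in> carrier DS"
  shows "Phi (add DS v w) = add X (Phi v) (Phi w)"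
proof -
  interpret D: abelian_group DS by (rule DS_ag)
  define F where "F = supp v \<union> supp w"
  have F: "finite F" "F \<subseteq> I" unfolding F_def using supp_fin v w supp_sub by auto
  have vw: "add DS v w \<in> carrier DS" using v w by simp
  have "Phi (add DS v w) = finsum X (\<lambda>i. h i (add DS v w i)) F"
    by (rule Phi_F[OF vw F(1) _ F(2)]) (use supp_add[OF v w] F_def in simp)
  also have "\<dots> = finsum X (\<lambda>i. add X (h i (v i)) (h i (w i))) F"
  proof (rule XX.finsum_cong')
    show "(\<lambda>i. add X (h i (v i)) (h i (w i))) \<in> F \<rightarrow> carrier X"
      using hPi[OF v F(2)] hPi[OF w F(2)] by auto
    fix i assume "i \<in> F"
    then have i: "i \<in> I" using F by auto
    then have "v i \<in> carrier (Mo i)" "w i \<in> carrier (Mo i)" using v w unfolding DS_carr by auto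
    then show "h i (add DS v w i) = add X (h i (v i)) (h i (w i))"
      using i mh_add[OF hX[OF i]] unfolding DS_add by simp
  qed simp
  also have "\<dots> = add X (finsum X (\<lambda>i. h i (v i)) F) (finsum X (\<lambda>i. h i (w i)) F)"
    by (rule XX.finsum_addf) (use hPi[OF v F(2)] hPi[OF w F(2)] in auto)
  also have "\<dots> = add X (Phi v) (Phi w)"
    using Phi_F[OF v F(1) _ F(2)] Phi_F[OF w F(1) _ F(2)] F_def by simp
  finally show ?thesis .
qed

lemma Phi_smult: assumes r: "r \<in> carrier R" and v: "v \<in> carrier DS"
  shows "Phi (smult DS r v) = smult X r (Phi v)"
proof -
  interpret D: Module.module R DS by (rule DS_module)
  define F where "F = supp v"
  have F: "finite F" "F \<subseteq> I" unfolding F_def using supp_fin v supp_sub by auto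
  have rv: "smult DS r v \<in> carrier DS" using r v by simp
  have "Phi (smult DS r v) = finsum X (\<lambda>i. h i (smult DS r v i)) F"
    by (rule Phi_F[OF rv F(1) _ F(2)]) (use supp_smult[OF r v] F_def in simp)
  also have "\<dots> = finsum X (\<lambda>i. smult X r (h i (v i))) F"
  proof (rule XX.finsum_cong')
    show "(\<lambda>i. smult X r (h i (v i))) \<in> F \<rightarrow> carrier X"
      using hPi[OF v F(2)] r by auto
    fix i assume "i \<in> F"
    then have i: "i \<in> I" using F by auto
    then have "v i \<in> carrier (Mo i)" using v unfolding DS_carr by auto
    then show "h i (smult DS r v i) = smult X r (h i (v i))"
      using i mh_smult[OF hX[OF i] r] unfolding DS_smult by simp
  qed simp
  also have "\<dots> = smult X r (finsum X (\<lambda>i. h i (v i)) F)"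
    by (rule XX.finsum_smult_ldistr[symmetric]) (use F r hPi[OF v F(2)] in auto)
  finally show ?thesis unfolding Phi_def F_def .
qed

lemma Phi_hom: "Phi \<in> module_hom R DS X"
  by (rule mhI) (simp_all add: Phi_carr Phi_add Phi_smult)

lemma Phi_ins: assumes i: "i \<in> I" and a: "a \<in> carrier (Mo i)" shows "Phi (ins i a) = h i a"
proof -
  have "Phi (ins i a) = finsum X (\<lambda>j. h j (ins i a j)) {i}"
    by (rule Phi_F[OF ins_carr[OF i a]]) (use ins_supp i in auto)
  also have "\<dots> = h i a" using hcarr[OF i a] by (simp add: dsum_ins_def)
  finally show ?thesis .
qed

lemma Phi_KK: "v \<in> KK \<Longrightarrow> Phi v = zero X"
proof -
  interpret D: Module.module R DS by (rule DS_module)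
  let ?N = "{v \<in> carrier DS. Phi v = zero X}"
  have neg: "Phi (a_inv DS a) = a_inv X (Phi a)" if "a \<in> carrier DS" for a
    by (rule mh_neg[OF Phi_hom D.abelian_group_axioms XX.abelian_group_axioms that])
  have "submodule ?N R DS"
  proof (rule D.submoduleI)
    show "?N \<subseteq> carrier DS" by blast
    show "zero DS \<in> ?N" using mh_zero[OF Phi_hom D.abelian_group_axioms XX.abelian_group_axioms] by simp
    show "\<And>a. a \<in> ?N \<Longrightarrow> a_inv DS a \<in> ?N" using neg by simp
    show "\<And>a b. a \<in> ?N \<Longrightarrow> b \<in> ?N \<Longrightarrow> add DS a b \<in> ?N" using Phi_add by simp
    show "\<And>a x. a \<in> carrier R \<Longrightarrow> x \<in> ?N \<Longrightarrow> smult DS a x \<in> ?N" using Phi_smult by simp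
  qed
  moreover have "colim_gens I rel Mo Ma \<subseteq> ?N"
  proof
    fix x assume "x \<in> colim_gens I rel Mo Ma"
    then obtain i j a where x: "x = a_minus DS (ins j (Ma i j a)) (ins i a)" and ij: "i \<in> I" "j \<in> I" "rel i j" "a \<in> carrier (Mo i)"
      unfolding gens_mem by blast
    have ma: "Ma i j a \<in> carrier (Mo j)" using mh_carr[OF homI[OF ij(1-3)] ij(4)] .
    have c: "ins j (Ma i j a) \<in> carrier DS" "ins i a \<in> carrier DS" using ins_carr ij ma by auto
    have "Phi x = a_minus X (Phi (ins j (Ma i j a))) (Phi (ins i a))"
      unfolding x by (rule mh_minus[OF Phi_hom D.abelian_group_axioms XX.abelian_group_axioms c])
    also have "\<dots> = a_minus X (h i a) (h i a)" using Phi_ins ij ma hc by simp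
    also have "\<dots> = zero X" using XX.ag_minus_self hcarr ij by simp
    finally show "x \<in> ?N" using x c by simp
  qed
  ultimately have "KK \<subseteq> ?N" by (rule KK_least)
  then show "v \<in> KK \<Longrightarrow> Phi v = zero X" by blast
qed

lemma Phi_cl: assumes v: "v \<in> carrier DS" and w: "w \<in> carrier DS" and e: "cl v = cl w"
  shows "Phi v = Phi w"
proof -
  interpret D: Module.module R DS by (rule DS_module)
  have "a_minus DS v w \<in> KK" using cl_eq_iff[OF v w] e by simp
  then have "Phi (a_minus DS v w) = zero X" by (rule Phi_KK)
  then have "a_minus X (Phi v) (Phi w) = zero X"
    using mh_minus[OF Phi_hom D.abelian_group_axioms XX.abelian_group_axioms v w] by simp
  then show ?thesis using XX.ag_minus_zero Phi_carr v w by blast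
qed

lemma lift_cl: assumes v: "v \<in> carrier DS" shows "lift (cl v) = Phi v"
  unfolding lift_def by (rule Phi_cl[OF some_cl(1)[OF v] v some_cl(2)[OF v]])

lemma lift_hom: "lift \<in> module_hom R CC X"
proof (rule mhI)
  fix A assume "A \<in> carrier CC" then obtain v where v: "v \<in> carrier DS" "A = cl v" by (rule CC_E)
  show "lift A \<in> carrier X" unfolding v(2) lift_cl[OF v(1)] by (rule Phi_carr[OF v(1)])
next
  fix A B assume A: "A \<in> carrier CC" and B: "B \<in> carrier CC"
  obtain v where v: "v \<in> carrier DS" "A = cl v" using A by (rule CC_E)
  obtain w where w: "w \<in> carrier DS" "B = cl w" using B by (rule CC_E)
  have vw: "add DS v w \<in> carrier DS" using DS_add_closed[OF v(1) w(1)] .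
  show "lift (add CC A B) = add X (lift A) (lift B)"
    unfolding v(2) w(2) CC_add[OF v(1) w(1)] lift_cl[OF v(1)] lift_cl[OF w(1)] lift_cl[OF vw] by (rule Phi_add[OF v(1) w(1)])
next
  fix r A assume r: "r \<in> carrier R" and A: "A \<in> carrier CC"
  obtain v where v: "v \<in> carrier DS" "A = cl v" using A by (rule CC_E)
  have rv: "smult DS r v \<in> carrier DS" using Module.module.smult_closed[OF DS_module r v(1)] .
  show "lift (smult CC r A) = smult X r (lift A)"
    unfolding v(2) CC_smult[OF r v(1)] lift_cl[OF v(1)] lift_cl[OF rv] by (rule Phi_smult[OF r v(1)])
qed

lemma lift_ins: "i \<in> I \<Longrightarrow> a \<in> carrier (Mo i) \<Longrightarrow> lift (cl (ins i a)) = h i a"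
  using lift_cl[OF ins_carr] Phi_ins by simp

end

context cdiag2 begin

lemma CC_uniq2:
  assumes f: "f \<in> module_hom R CC Y" and g: "g \<in> module_hom R CC Y" and ne: "I \<noteq> {}"
    and fg: "\<And>i a. i \<in> I \<Longrightarrow> a \<in> carrier (Mo i) \<Longrightarrow> f (cl (ins i a)) = g (cl (ins i a))"
    and A: "A \<in> carrier CC"
  shows "f A = g A"
proof -
  obtain v where v: "v \<in> carrier DS" "A = cl v" using A by (rule CC_E)
  obtain i0 where i0: "i0 \<in> I" using ne by blast
  have "zero DS = ins i0 (zero (Mo i0))" unfolding DS_zero dsum_ins_def using i0 by (intro ext) auto
  then have z: "f (cl (zero DS)) = g (cl (zero DS))" using fg[OF i0 Mo_facts(1)[OF i0]] by simp
  have "f (cl v) = g (cl v)"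
  proof (rule DS_induct[where P="\<lambda>v. f (cl v) = g (cl v)", OF z _ v(1)])
    fix w i a assume w: "w \<in> carrier DS" "f (cl w) = g (cl w)" "i \<in> I" "a \<in> carrier (Mo i)"
    have ic: "ins i a \<in> carrier DS" using ins_carr[OF w(3,4)] .
    have c1: "cl w \<in> carrier CC" "cl (ins i a) \<in> carrier CC" using CC_I w(1) ic by auto
    have "f (cl (add DS w (ins i a))) = add Y (f (cl w)) (f (cl (ins i a)))"
      using CC_add[OF w(1) ic] mh_add[OF f c1] by simp
    moreover have "g (cl (add DS w (ins i a))) = add Y (g (cl w)) (g (cl (ins i a)))"
      using CC_add[OF w(1) ic] mh_add[OF g c1] by simp
    ultimately show "f (cl (add DS w (ins i a))) = g (cl (add DS w (ins i a)))" using w fg by simp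
  qed
  then show ?thesis using v by simp
qed

end

locale cext = I: cdiag2 R I Mo rel Ma + J: cdiag2 R J Mo rel Ma
  for R :: "('k,'r) ring_scheme" and I J :: "'i set" and Mo :: "'i \<Rightarrow> ('k,'m) module" and rel Ma +
  assumes IJ: "I \<subseteq> J"
begin

definition ext where "ext v = (\<lambda>i. if i \<in> I then v i else if i \<in> J then zero (Mo i) else undefined)"

lemma ext_carr: assumes v: "v \<in> carrier I.DS" shows "ext v \<in> carrier J.DS"
proof -
  have "J.supp (ext v) \<subseteq> I.supp v" unfolding J.supp_def I.supp_def ext_def by auto
  then show ?thesis using v IJ unfolding I.DS_carr J.DS_carr ext_def
    by (auto simp: J.Mo_facts(1) intro: finite_subset)
qed

lemma ext_hom: "ext \<in> module_hom R I.DS J.DS"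
proof (rule mhI)
  fix x assume "x \<in> carrier I.DS" then show "ext x \<in> carrier J.DS" by (rule ext_carr)
next
  fix x y assume "x \<in> carrier I.DS" "y \<in> carrier I.DS"
  then show "ext (add I.DS x y) = add J.DS (ext x) (ext y)"
    unfolding ext_def I.DS_add J.DS_add using IJ by (intro ext) (auto simp: J.Mo_facts(1,5))
next
  fix r x assume "r \<in> carrier R" "x \<in> carrier I.DS"
  then show "ext (smult I.DS r x) = smult J.DS r (ext x)"
    unfolding ext_def I.DS_smult J.DS_smult using IJ by (intro ext) (auto simp: J.Mo_facts(11))
qed

lemma ext_ins: "i \<in> I \<Longrightarrow> ext (I.ins i a) = J.ins i a"
  unfolding ext_def dsum_ins_def using IJ by (intro ext) auto

lemma ext_KK: assumes v: "v \<in> I.KK" shows "ext v \<in> J.KK"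
proof -
  interpret DI: Module.module R I.DS by (rule I.DS_module)
  interpret DJ: Module.module R J.DS by (rule J.DS_module)
  let ?N = "{v \<in> carrier I.DS. ext v \<in> J.KK}"
  have "submodule ?N R I.DS"
  proof (rule DI.submoduleI)
    show "?N \<subseteq> carrier I.DS" by blast
    show "zero I.DS \<in> ?N" using mh_zero[OF ext_hom DI.abelian_group_axioms DJ.abelian_group_axioms] sm_zero[OF J.KK_sub] by simp
    show "\<And>a. a \<in> ?N \<Longrightarrow> a_inv I.DS a \<in> ?N"
      using mh_neg[OF ext_hom DI.abelian_group_axioms DJ.abelian_group_axioms] sm_inv[OF J.KK_sub] by simp
    show "\<And>a b. a \<in> ?N \<Longrightarrow> b \<in> ?N \<Longrightarrow> add I.DS a b \<in> ?N"
      using mh_add[OF ext_hom] sm_add[OF J.KK_sub] by simp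
    show "\<And>a x. a \<in> carrier R \<Longrightarrow> x \<in> ?N \<Longrightarrow> smult I.DS a x \<in> ?N"
      using mh_smult[OF ext_hom] sm_smult[OF J.KK_sub] by simp
  qed
  moreover have "colim_gens I rel Mo Ma \<subseteq> ?N"
  proof
    fix x assume "x \<in> colim_gens I rel Mo Ma"
    then obtain i j a where x: "x = a_minus I.DS (I.ins j (Ma i j a)) (I.ins i a)" and ij: "i \<in> I" "j \<in> I" "rel i j" "a \<in> carrier (Mo i)"
      unfolding I.gens_mem by blast
    have ma: "Ma i j a \<in> carrier (Mo j)" using mh_carr[OF I.homI[OF ij(1-3)] ij(4)] .
    have c: "I.ins j (Ma i j a) \<in> carrier I.DS" "I.ins i a \<in> carrier I.DS" using I.ins_carr ij ma by auto
    have "ext x = a_minus J.DS (J.ins j (Ma i j a)) (J.ins i a)"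
      unfolding x mh_minus[OF ext_hom DI.abelian_group_axioms DJ.abelian_group_axioms c] using ext_ins ij by simp
    moreover have "a_minus J.DS (J.ins j (Ma i j a)) (J.ins i a) \<in> J.KK"
      by (rule subsetD[OF J.gens_KK]) (unfold J.gens_mem, use ij IJ in blast)
    ultimately show "x \<in> ?N" using x c by simp
  qed
  ultimately have "I.KK \<subseteq> ?N" by (rule I.KK_least)
  then show ?thesis using v by blast
qed

abbreviation cext where "cext \<equiv> colim_ext R I J rel Mo Ma"

lemma cext_cl: assumes v: "v \<in> carrier I.DS" shows "cext (I.cl v) = J.cl (ext v)"
proof -
  interpret DI: Module.module R I.DS by (rule I.DS_module)
  interpret DJ: Module.module R J.DS by (rule J.DS_module)
  define a where "a = (SOME a. a \<in> I.cl v)"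
  have a: "a \<in> carrier I.DS" "I.cl a = I.cl v" using I.some_cl v a_def by auto
  have "cext (I.cl v) = J.cl (ext a)" unfolding colim_ext_def a_def[symmetric] ext_def Let_def by simp
  also have "\<dots> = J.cl (ext v)"
  proof (rule J.cl_eq)
    show "ext a \<in> carrier J.DS" "ext v \<in> carrier J.DS" using ext_carr a v by auto
    have "a_minus I.DS a v \<in> I.KK" using I.cl_eq_iff a v by simp
    then have "ext (a_minus I.DS a v) \<in> J.KK" by (rule ext_KK)
    then show "a_minus J.DS (ext a) (ext v) \<in> J.KK"
      using mh_minus[OF ext_hom DI.abelian_group_axioms DJ.abelian_group_axioms a(1) v] by simp
  qed
  finally show ?thesis .
qed

lemma cext_hom: "cext \<in> module_hom R I.CC J.CC"
proof (rule mhI)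
  fix A assume "A \<in> carrier I.CC" then obtain v where v: "v \<in> carrier I.DS" "A = I.cl v" by (rule I.CC_E)
  show "cext A \<in> carrier J.CC" unfolding v(2) cext_cl[OF v(1)] by (rule J.CC_I[OF ext_carr[OF v(1)]])
next
  fix A B assume A: "A \<in> carrier I.CC" and B: "B \<in> carrier I.CC"
  obtain v where v: "v \<in> carrier I.DS" "A = I.cl v" using A by (rule I.CC_E)
  obtain w where w: "w \<in> carrier I.DS" "B = I.cl w" using B by (rule I.CC_E)
  have vw: "add I.DS v w \<in> carrier I.DS" using I.DS_add_closed[OF v(1) w(1)] .
  show "cext (add I.CC A B) = add J.CC (cext A) (cext B)"
    unfolding v(2) w(2) I.CC_add[OF v(1) w(1)] cext_cl[OF v(1)] cext_cl[OF w(1)] cext_cl[OF vw]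
      J.CC_add[OF ext_carr[OF v(1)] ext_carr[OF w(1)]] mh_add[OF ext_hom v(1) w(1)] ..
next
  fix r A assume r: "r \<in> carrier R" and A: "A \<in> carrier I.CC"
  obtain v where v: "v \<in> carrier I.DS" "A = I.cl v" using A by (rule I.CC_E)
  have rv: "smult I.DS r v \<in> carrier I.DS" using Module.module.smult_closed[OF I.DS_module r v(1)] .
  show "cext (smult I.CC r A) = smult J.CC r (cext A)"
    unfolding v(2) I.CC_smult[OF r v(1)] cext_cl[OF v(1)] cext_cl[OF rv]
      J.CC_smult[OF r ext_carr[OF v(1)]] mh_smult[OF ext_hom r v(1)] ..
qed

lemma cext_ins: "i \<in> I \<Longrightarrow> a \<in> carrier (Mo i) \<Longrightarrow> cext (I.cl (I.ins i a)) = J.cl (J.ins i a)"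
  using cext_cl[OF I.ins_carr] ext_ins by simp

end

lemma cext_comp:
  assumes IJ: "cext R I J Mo rel Ma" and JL: "cext R J L Mo rel Ma" and IL: "cext R I L Mo rel Ma"
    and A: "A \<in> carrier (colim_module R I rel Mo Ma)"
  shows "colim_ext R J L rel Mo Ma (colim_ext R I J rel Mo Ma A) = colim_ext R I L rel Mo Ma A"
proof -
  interpret IJ: cext R I J Mo rel Ma by (rule IJ)
  interpret JL: cext R J L Mo rel Ma by (rule JL)
  interpret IL: cext R I L Mo rel Ma by (rule IL)
  obtain v where v: "v \<in> carrier IJ.I.DS" "A = IJ.I.cl v" using A by (rule IJ.I.CC_E)
  have "JL.ext (IJ.ext v) = IL.ext v"
    unfolding JL.ext_def IJ.ext_def IL.ext_def using IJ.IJ JL.IJ by (intro ext) auto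
  then show ?thesis unfolding v(2) IJ.cext_cl[OF v(1)] JL.cext_cl[OF IJ.ext_carr[OF v(1)]] IL.cext_cl[OF v(1)] by simp
qed



lemma sopen_UNIV: "scott_open UNIV" by (rule sopenI) (auto simp: directed_def)

lemma pm_cring: "persistence_module R M \<Longrightarrow> cring R"
  using Module.module.axioms(1)[OF pm_module] by blast

abbreviation wd :: "'p::order \<Rightarrow> 'p set" where "wd p \<equiv> {x. way_below x p}"

section \<open>overline M\<close>

lemma over_diag: "persistence_module R M \<Longrightarrow> cdiag2 R (wd p) (fst M) (\<le>) (snd M)"
  unfolding cdiag2_def cdiag_def cdiag2_axioms_def
  using pm_cring pm_module pm_hom by blast

lemma over_ext: "persistence_module R M \<Longrightarrow> p \<le> q \<Longrightarrow> cext R (wd p) (wd q) (fst M) (\<le>) (snd M)"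
  unfolding cext_def cext_axioms_def using over_diag wb_mono[OF order.refl] by blast

lemma over_func: fixes M :: "('p::order, 'k, 'm) pmod" assumes M: "persistence_module R M" shows "pm_func R (pm_over R M)"
  unfolding pm_func_def pm_over_def fst_conv snd_conv
proof (intro conjI allI impI ballI)
  fix p q :: 'p assume "p \<le> q"
  then interpret E: cext R "wd p" "wd q" "fst M" "(\<le>)" "snd M" using over_ext[OF M] by blast
  show "E.cext \<in> module_hom R E.I.CC E.J.CC" by (rule E.cext_hom)
next
  fix p q r :: 'p and x assume pqr: "p \<le> q \<and> q \<le> r" and x: "x \<in> carrier (colim_module R (wd p) (\<le>) (fst M) (snd M))"
  show "colim_ext R (wd q) (wd r) (\<le>) (fst M) (snd M) (colim_ext R (wd p) (wd q) (\<le>) (fst M) (snd M) x) =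
        colim_ext R (wd p) (wd r) (\<le>) (fst M) (snd M) x"
    by (rule cext_comp[OF over_ext[OF M] over_ext[OF M] over_ext[OF M] x]) (use pqr order.trans in blast)+
qed

lemma over_close:
  fixes M :: "('p::order, 'k, 'm) pmod"
  assumes M: "persistence_module R M" and Td: "translation Td" and wTd: "\<And>p. way_below p (Td p)"
    and cp: "continuous_poset TYPE('p)"
  shows "pm_interleaved R Td M (pm_over R M)"
proof -
  have ne: "wd p \<noteq> {}" for p :: 'p using cp unfolding continuous_poset_def directed_def by blast
  have pT: "p \<le> Td p" for p using tr_inc[OF Td] .
  have wdT: "x \<in> wd p \<Longrightarrow> x \<in> wd (Td p)" for x p using wb_mono[OF order.refl _ pT] by blast
  have wdle: "x \<in> wd p \<Longrightarrow> x \<le> p" for x p using wb_le by blast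
  define f where "f = (\<lambda>p m. qclass (dsum_module (wd (Td p)) (fst M)) (colim_rel R (wd (Td p)) (\<le>) (fst M) (snd M)) (dsum_ins (wd (Td p)) (fst M) p m))"
  define g where "g = (\<lambda>p A. clift.lift (wd p) (fst M) (fst M (Td p)) (\<lambda>x. snd M x (Td p)) A)"
  have CL: "clift R (wd p) (fst M) (\<le>) (snd M) (fst M (Td p)) (\<lambda>x. snd M x (Td p))" for p
    unfolding clift_def clift_axioms_def
  proof (intro conjI allI impI over_diag[OF M] pm_module[OF M])
    fix i assume "i \<in> wd p" then have "i \<le> Td p" using wdle pT order.trans by metis
    then show "snd M i (Td p) \<in> module_hom R (fst M i) (fst M (Td p))" by (rule pm_hom[OF M])
  next
    fix i j a assume "i \<in> wd p" "j \<in> wd p" "i \<le> j" "a \<in> carrier (fst M i)"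
    moreover then have "j \<le> Td p" using wdle pT order.trans by metis
    ultimately show "snd M j (Td p) (snd M i j a) = snd M i (Td p) a" using pm_comp[OF M] by blast
  qed
  show ?thesis unfolding pm_interleaved_def
  proof (intro exI conjI)
    show "pm_morph R M (pm_pull Td (pm_over R M)) f" unfolding pm_morph_def pm_pull_def pm_over_def fst_conv snd_conv
    proof (intro conjI allI impI ballI)
      fix p
      interpret C: cdiag2 R "wd (Td p)" "fst M" "(\<le>)" "snd M" by (rule over_diag[OF M])
      show "f p \<in> module_hom R (fst M p) C.CC" unfolding f_def by (rule C.clins_hom) (simp add: wTd)
    next
      fix p q x assume pq: "p \<le> q" and x: "x \<in> carrier (fst M p)"
      interpret E: cext R "wd (Td p)" "wd (Td q)" "fst M" "(\<le>)" "snd M" by (rule over_ext[OF M tr_mono[OF Td pq]])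
      have p1: "p \<in> wd (Td p)" "p \<in> wd (Td q)" "q \<in> wd (Td q)" using wTd wb_mono[OF order.refl wTd tr_mono[OF Td pq]] by auto
      have "f q (snd M p q x) = E.J.cl (E.J.ins p x)"
        unfolding f_def by (rule E.J.gen_eq[OF p1(2,3) pq x])
      also have "\<dots> = E.cext (E.I.cl (E.I.ins p x))" using E.cext_ins[OF p1(1) x] by simp
      finally show "f q (snd M p q x) = E.cext (f p x)" unfolding f_def .
    qed
  next
    show "pm_morph R (pm_over R M) (pm_pull Td M) g" unfolding pm_morph_def pm_pull_def pm_over_def fst_conv snd_conv
    proof (intro conjI allI impI ballI)
      fix p
      interpret L: clift R "wd p" "fst M" "(\<le>)" "snd M" "fst M (Td p)" "\<lambda>x. snd M x (Td p)" by (rule CL)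
      show "g p \<in> module_hom R L.CC (fst M (Td p))" unfolding g_def by (rule L.lift_hom)
    next
      fix p q A assume pq: "p \<le> q" and A: "A \<in> carrier (colim_module R (wd p) (\<le>) (fst M) (snd M))"
      interpret E: cext R "wd p" "wd q" "fst M" "(\<le>)" "snd M" by (rule over_ext[OF M pq])
      interpret Lp: clift R "wd p" "fst M" "(\<le>)" "snd M" "fst M (Td p)" "\<lambda>x. snd M x (Td p)" by (rule CL)
      interpret Lq: clift R "wd q" "fst M" "(\<le>)" "snd M" "fst M (Td q)" "\<lambda>x. snd M x (Td q)" by (rule CL)
      have TT: "Td p \<le> Td q" using tr_mono[OF Td pq] .
      show "g q (E.cext A) = snd M (Td p) (Td q) (g p A)" unfolding g_def
      proof (rule E.I.CC_uniq2[OF _ _ ne _ A])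
        show "(\<lambda>A. Lq.lift (E.cext A)) \<in> module_hom R E.I.CC (fst M (Td q))" by (rule mh_comp[OF E.cext_hom Lq.lift_hom])
        show "(\<lambda>A. snd M (Td p) (Td q) (Lp.lift A)) \<in> module_hom R E.I.CC (fst M (Td q))"
          by (rule mh_comp[OF Lp.lift_hom pm_hom[OF M TT]])
        fix i a assume i: "i \<in> wd p" and a: "a \<in> carrier (fst M i)"
        have iq: "i \<in> wd q" using wb_mono[OF order.refl _ pq] i by blast
        have "Lq.lift (E.cext (E.I.cl (E.I.ins i a))) = snd M i (Td q) a"
          using E.cext_ins[OF i a] Lq.lift_ins[OF iq a] by simp
        moreover have "snd M (Td p) (Td q) (Lp.lift (E.I.cl (E.I.ins i a))) = snd M i (Td q) a"
          using Lp.lift_ins[OF i a] pm_comp[OF M _ TT a] wdle[OF i] pT order.trans by metis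
        ultimately show "Lq.lift (E.cext (E.I.cl (E.I.ins i a))) = snd M (Td p) (Td q) (Lp.lift (E.I.cl (E.I.ins i a)))" by simp
      qed
    qed
  next
    show "\<forall>p. \<forall>x\<in>carrier (fst M p). g (Td p) (f p x) = snd M p (Td (Td p)) x"
    proof (intro allI ballI)
      fix p x assume x: "x \<in> carrier (fst M p)"
      interpret L: clift R "wd (Td p)" "fst M" "(\<le>)" "snd M" "fst M (Td (Td p))" "\<lambda>x. snd M x (Td (Td p))" by (rule CL)
      show "g (Td p) (f p x) = snd M p (Td (Td p)) x" unfolding g_def f_def
        by (rule L.lift_ins) (use wTd x in auto)
    qed
  next
    show "\<forall>p. \<forall>A\<in>carrier (fst (pm_over R M) p). f (Td p) (g p A) = snd (pm_over R M) p (Td (Td p)) A"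
      unfolding pm_over_def fst_conv snd_conv
    proof (intro allI ballI)
      fix p A assume A: "A \<in> carrier (colim_module R (wd p) (\<le>) (fst M) (snd M))"
      have pTT: "p \<le> Td (Td p)" using pT order.trans by metis
      interpret E: cext R "wd p" "wd (Td (Td p))" "fst M" "(\<le>)" "snd M" by (rule over_ext[OF M pTT])
      interpret L: clift R "wd p" "fst M" "(\<le>)" "snd M" "fst M (Td p)" "\<lambda>x. snd M x (Td p)" by (rule CL)
      have Tw: "Td p \<in> wd (Td (Td p))" using wTd by simp
      show "f (Td p) (g p A) = E.cext A" unfolding g_def f_def
      proof (rule E.I.CC_uniq2[OF _ E.cext_hom ne _ A])
        show "(\<lambda>A. E.J.cl (E.J.ins (Td p) (L.lift A))) \<in> module_hom R E.I.CC E.J.CC"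
          by (rule mh_comp[OF L.lift_hom E.J.clins_hom[OF Tw]])
        fix i a assume i: "i \<in> wd p" and a: "a \<in> carrier (fst M i)"
        have iT: "i \<in> wd (Td (Td p))" using wdT[OF wdT[OF i]] .
        have ile: "i \<le> Td p" using wdle[OF i] pT order.trans by metis
        have "E.J.cl (E.J.ins (Td p) (L.lift (E.I.cl (E.I.ins i a)))) = E.J.cl (E.J.ins (Td p) (snd M i (Td p) a))"
          using L.lift_ins[OF i a] by simp
        also have "\<dots> = E.J.cl (E.J.ins i a)" by (rule E.J.gen_eq[OF iT Tw ile a])
        also have "\<dots> = E.cext (E.I.cl (E.I.ins i a))" using E.cext_ins[OF i a] by simp
        finally show "E.J.cl (E.J.ins (Td p) (L.lift (E.I.cl (E.I.ins i a)))) = E.cext (E.I.cl (E.I.ins i a))" .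
      qed
    qed
  qed
qed

context tfam begin

lemma part_iii: assumes M: "persistence_module R M" and N: "persistence_module R N"
  shows "d_a R T M N = d_a R T (pm_over R M) (pm_over R N)"
proof (rule d_a_close[OF persistence_pm_func[OF M] persistence_pm_func[OF N] over_func[OF M] over_func[OF N]])
  fix d :: real assume d: "0 < d"
  show "pm_interleaved R (T d) M (pm_over R M)" by (rule over_close[OF M Ttr Twb cp]) (use d in auto)
  show "pm_interleaved R (T d) N (pm_over R N)" by (rule over_close[OF N Ttr Twb cp]) (use d in auto)
qed

end



definition psh_func :: "('k,'r) ring_scheme \<Rightarrow> ('p::order, 'k, 'm) psh \<Rightarrow> bool" where
  "psh_func R F \<longleftrightarrow> (\<forall>U. scott_open U \<longrightarrow> Module.module R (fst F U)) \<and>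
     (\<forall>U V. scott_open U \<and> scott_open V \<and> V \<subseteq> U \<longrightarrow> snd F U V \<in> module_hom R (fst F U) (fst F V)) \<and>
     (\<forall>U V W. scott_open U \<and> scott_open V \<and> scott_open W \<and> W \<subseteq> V \<and> V \<subseteq> U \<longrightarrow>
        (\<forall>x\<in>carrier (fst F U). snd F V W (snd F U V x) = snd F U W x))"

lemma sheaf_psh: "scott_sheaf R F \<Longrightarrow> psh_func R F"
  unfolding scott_sheaf_def scott_presheaf_def psh_func_def
  apply (elim conjE)
  apply (intro conjI)
    apply assumption+
  done

lemma psh_mod: "psh_func R F \<Longrightarrow> scott_open U \<Longrightarrow> Module.module R (fst F U)"
  unfolding psh_func_def by simp
lemma psh_hom: "psh_func R F \<Longrightarrow> scott_open U \<Longrightarrow> scott_open V \<Longrightarrow> V \<subseteq> U \<Longrightarrow> snd F U V \<in> module_hom R (fst F U) (fst F V)"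
  unfolding psh_func_def by simp
lemma psh_comp: "psh_func R F \<Longrightarrow> scott_open U \<Longrightarrow> scott_open V \<Longrightarrow> scott_open W \<Longrightarrow> W \<subseteq> V \<Longrightarrow> V \<subseteq> U \<Longrightarrow>
   x \<in> carrier (fst F U) \<Longrightarrow> snd F V W (snd F U V x) = snd F U W x"
  unfolding psh_func_def by simp
lemma psh_carr: "psh_func R F \<Longrightarrow> scott_open U \<Longrightarrow> scott_open V \<Longrightarrow> V \<subseteq> U \<Longrightarrow> x \<in> carrier (fst F U) \<Longrightarrow> snd F U V x \<in> carrier (fst F V)"
  by (rule mh_carr[OF psh_hom])
lemma psh_cring: "psh_func R F \<Longrightarrow> cring R"
  using Module.module.axioms(1)[OF psh_mod[OF _ sopen_UNIV]] by blast

lemma nbhds_iff: "U \<in> nbhds p \<longleftrightarrow> scott_open U \<and> p \<in> U" unfolding nbhds_def by simp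

lemma nbhds_mono: "p \<le> q \<Longrightarrow> nbhds p \<subseteq> nbhds q"
  unfolding nbhds_def using open_up by blast

lemma stalk_diag: "psh_func R F \<Longrightarrow> cdiag2 R (nbhds p) (fst F) (\<lambda>U V. V \<subseteq> U) (snd F)"
  unfolding cdiag2_def cdiag_def cdiag2_axioms_def nbhds_iff
  using psh_cring psh_mod psh_hom by blast

lemma stalk_ext: "psh_func R F \<Longrightarrow> p \<le> q \<Longrightarrow> cext R (nbhds p) (nbhds q) (fst F) (\<lambda>U V. V \<subseteq> U) (snd F)"
  unfolding cext_def cext_axioms_def using stalk_diag nbhds_mono by blast

lemma jstar_func: fixes F :: "('p::order, 'k, 'm) psh" assumes F: "psh_func R F" shows "pm_func R (j_upper_star R F)"
  unfolding pm_func_def j_upper_star_def fst_conv snd_conv stalk_def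
proof (intro conjI allI impI ballI)
  fix p q :: 'p assume "p \<le> q"
  then interpret E: cext R "nbhds p" "nbhds q" "fst F" "\<lambda>U V. V \<subseteq> U" "snd F" using stalk_ext[OF F] by blast
  show "E.cext \<in> module_hom R E.I.CC E.J.CC" by (rule E.cext_hom)
next
  fix p q r :: 'p and x assume pqr: "p \<le> q \<and> q \<le> r" and x: "x \<in> carrier (colim_module R (nbhds p) (\<lambda>U V. V \<subseteq> U) (fst F) (snd F))"
  show "colim_ext R (nbhds q) (nbhds r) (\<lambda>U V. V \<subseteq> U) (fst F) (snd F) (colim_ext R (nbhds p) (nbhds q) (\<lambda>U V. V \<subseteq> U) (fst F) (snd F) x) =
        colim_ext R (nbhds p) (nbhds r) (\<lambda>U V. V \<subseteq> U) (fst F) (snd F) x"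
    by (rule cext_comp[OF stalk_ext[OF F] stalk_ext[OF F] stalk_ext[OF F] x]) (use pqr order.trans in blast)+
qed

lemma jshriek_func: fixes F :: "('p::order, 'k, 'm) psh" assumes F: "psh_func R F" shows "pm_func R (j_shriek F)"
  unfolding pm_func_def j_shriek_def fst_conv snd_conv
proof (intro conjI allI impI ballI)
  fix p q :: 'p assume "p \<le> q"
  then show "snd F (Iu p) (Iu q) \<in> module_hom R (fst F (Iu p)) (fst F (Iu q))"
    using psh_hom[OF F Iu_open Iu_open Iu_anti] by blast
next
  fix p q r :: 'p and x assume pqr: "p \<le> q \<and> q \<le> r" and x: "x \<in> carrier (fst F (Iu p))"
  show "snd F (Iu q) (Iu r) (snd F (Iu p) (Iu q) x) = snd F (Iu p) (Iu r) x"
    using psh_comp[OF F Iu_open Iu_open Iu_open Iu_anti Iu_anti x] pqr by blast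
qed

lemma stalk_close:
  fixes F :: "('p::order, 'k, 'm) psh"
  assumes F: "psh_func R F" and Td: "translation Td" and wTd: "\<And>p. way_below p (Td p)"
    and cp: "continuous_poset TYPE('p)"
  shows "pm_interleaved R Td (j_shriek F) (j_upper_star R F)"
proof -
  let ?r = "\<lambda>U V. V \<subseteq> (U::'p set)"
  have ne: "nbhds p \<noteq> {}" for p :: 'p using sopen_UNIV nbhds_iff by blast
  have pT: "p \<le> Td p" for p using tr_inc[OF Td] .
  have IT: "Td p \<in> Iu p" for p using wbu_Iu[OF cp] wTd by blast
  have Inb: "Iu p \<in> nbhds (Td p)" for p using IT Iu_open nbhds_iff by blast
  have nbT: "U \<in> nbhds p \<Longrightarrow> U \<in> nbhds (Td p)" for U p using nbhds_mono[OF pT] by blast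
  have IuU: "U \<in> nbhds p \<Longrightarrow> Iu (Td p) \<subseteq> U" for U p
    using Iu_anti[OF pT] Iu_in_open nbhds_iff by blast
  define f where "f = (\<lambda>p x. qclass (dsum_module (nbhds (Td p)) (fst F)) (colim_rel R (nbhds (Td p)) ?r (fst F) (snd F)) (dsum_ins (nbhds (Td p)) (fst F) (Iu p) x))"
  define g where "g = (\<lambda>p A. clift.lift (nbhds p) (fst F) (fst F (Iu (Td p))) (\<lambda>U. snd F U (Iu (Td p))) A)"
  have CL: "clift R (nbhds p) (fst F) ?r (snd F) (fst F (Iu (Td p))) (\<lambda>U. snd F U (Iu (Td p)))" for p
    unfolding clift_def clift_axioms_def
  proof (intro conjI allI impI stalk_diag[OF F] psh_mod[OF F Iu_open])
    fix i assume "i \<in> nbhds p"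
    then show "snd F i (Iu (Td p)) \<in> module_hom R (fst F i) (fst F (Iu (Td p)))"
      using psh_hom[OF F _ Iu_open IuU] nbhds_iff by blast
  next
    fix i j a assume "i \<in> nbhds p" "j \<in> nbhds p" "j \<subseteq> i" "a \<in> carrier (fst F i)"
    then show "snd F j (Iu (Td p)) (snd F i j a) = snd F i (Iu (Td p)) a"
      using psh_comp[OF F _ _ Iu_open IuU] nbhds_iff by blast
  qed
  show ?thesis unfolding pm_interleaved_def
  proof (intro exI conjI)
    show "pm_morph R (j_shriek F) (pm_pull Td (j_upper_star R F)) f"
      unfolding pm_morph_def pm_pull_def j_upper_star_def j_shriek_def stalk_def fst_conv snd_conv
    proof (intro conjI allI impI ballI)
      fix p
      interpret C: cdiag2 R "nbhds (Td p)" "fst F" ?r "snd F" by (rule stalk_diag[OF F])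
      show "f p \<in> module_hom R (fst F (Iu p)) C.CC" unfolding f_def by (rule C.clins_hom[OF Inb])
    next
      fix p q x assume pq: "p \<le> q" and x: "x \<in> carrier (fst F (Iu p))"
      interpret E: cext R "nbhds (Td p)" "nbhds (Td q)" "fst F" ?r "snd F" by (rule stalk_ext[OF F tr_mono[OF Td pq]])
      have p1: "Iu p \<in> nbhds (Td q)" using nbhds_mono[OF tr_mono[OF Td pq]] Inb by blast
      have "f q (snd F (Iu p) (Iu q) x) = E.J.cl (E.J.ins (Iu p) x)"
        unfolding f_def by (rule E.J.gen_eq[OF p1 Inb Iu_anti[OF pq] x])
      also have "\<dots> = E.cext (E.I.cl (E.I.ins (Iu p) x))" using E.cext_ins[OF Inb x] by simp
      finally show "f q (snd F (Iu p) (Iu q) x) = E.cext (f p x)" unfolding f_def .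
    qed
  next
    show "pm_morph R (j_upper_star R F) (pm_pull Td (j_shriek F)) g"
      unfolding pm_morph_def pm_pull_def j_upper_star_def j_shriek_def stalk_def fst_conv snd_conv
    proof (intro conjI allI impI ballI)
      fix p
      interpret L: clift R "nbhds p" "fst F" ?r "snd F" "fst F (Iu (Td p))" "\<lambda>U. snd F U (Iu (Td p))" by (rule CL)
      show "g p \<in> module_hom R L.CC (fst F (Iu (Td p)))" unfolding g_def by (rule L.lift_hom)
    next
      fix p q A assume pq: "p \<le> q" and A: "A \<in> carrier (colim_module R (nbhds p) ?r (fst F) (snd F))"
      interpret E: cext R "nbhds p" "nbhds q" "fst F" ?r "snd F" by (rule stalk_ext[OF F pq])
      interpret Lp: clift R "nbhds p" "fst F" ?r "snd F" "fst F (Iu (Td p))" "\<lambda>U. snd F U (Iu (Td p))" by (rule CL)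
      interpret Lq: clift R "nbhds q" "fst F" ?r "snd F" "fst F (Iu (Td q))" "\<lambda>U. snd F U (Iu (Td q))" by (rule CL)
      have TT: "Iu (Td q) \<subseteq> Iu (Td p)" using Iu_anti[OF tr_mono[OF Td pq]] .
      show "g q (E.cext A) = snd F (Iu (Td p)) (Iu (Td q)) (g p A)" unfolding g_def
      proof (rule E.I.CC_uniq2[OF _ _ ne _ A])
        show "(\<lambda>A. Lq.lift (E.cext A)) \<in> module_hom R E.I.CC (fst F (Iu (Td q)))" by (rule mh_comp[OF E.cext_hom Lq.lift_hom])
        show "(\<lambda>A. snd F (Iu (Td p)) (Iu (Td q)) (Lp.lift A)) \<in> module_hom R E.I.CC (fst F (Iu (Td q)))"
          by (rule mh_comp[OF Lp.lift_hom psh_hom[OF F Iu_open Iu_open TT]])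
        fix i a assume i: "i \<in> nbhds p" and a: "a \<in> carrier (fst F i)"
        have iq: "i \<in> nbhds q" using nbhds_mono[OF pq] i by blast
        have io: "scott_open i" using i nbhds_iff by blast
        have "Lq.lift (E.cext (E.I.cl (E.I.ins i a))) = snd F i (Iu (Td q)) a"
          using E.cext_ins[OF i a] Lq.lift_ins[OF iq a] by simp
        moreover have "snd F (Iu (Td p)) (Iu (Td q)) (Lp.lift (E.I.cl (E.I.ins i a))) = snd F i (Iu (Td q)) a"
          using Lp.lift_ins[OF i a] psh_comp[OF F io Iu_open Iu_open TT IuU[OF i] a] by simp
        ultimately show "Lq.lift (E.cext (E.I.cl (E.I.ins i a))) = snd F (Iu (Td p)) (Iu (Td q)) (Lp.lift (E.I.cl (E.I.ins i a)))" by simp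
      qed
    qed
  next
    show "\<forall>p. \<forall>x\<in>carrier (fst (j_shriek F) p). g (Td p) (f p x) = snd (j_shriek F) p (Td (Td p)) x"
      unfolding j_shriek_def fst_conv snd_conv
    proof (intro allI ballI)
      fix p x assume x: "x \<in> carrier (fst F (Iu p))"
      interpret L: clift R "nbhds (Td p)" "fst F" ?r "snd F" "fst F (Iu (Td (Td p)))" "\<lambda>U. snd F U (Iu (Td (Td p)))" by (rule CL)
      show "g (Td p) (f p x) = snd F (Iu p) (Iu (Td (Td p))) x" unfolding g_def f_def
        by (rule L.lift_ins[OF Inb x])
    qed
  next
    show "\<forall>p. \<forall>A\<in>carrier (fst (j_upper_star R F) p). f (Td p) (g p A) = snd (j_upper_star R F) p (Td (Td p)) A"
      unfolding j_upper_star_def stalk_def fst_conv snd_conv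
    proof (intro allI ballI)
      fix p A assume A: "A \<in> carrier (colim_module R (nbhds p) ?r (fst F) (snd F))"
      have pTT: "p \<le> Td (Td p)" using pT order.trans by metis
      interpret E: cext R "nbhds p" "nbhds (Td (Td p))" "fst F" ?r "snd F" by (rule stalk_ext[OF F pTT])
      interpret L: clift R "nbhds p" "fst F" ?r "snd F" "fst F (Iu (Td p))" "\<lambda>U. snd F U (Iu (Td p))" by (rule CL)
      show "f (Td p) (g p A) = E.cext A" unfolding g_def f_def
      proof (rule E.I.CC_uniq2[OF _ E.cext_hom ne _ A])
        show "(\<lambda>A. E.J.cl (E.J.ins (Iu (Td p)) (L.lift A))) \<in> module_hom R E.I.CC E.J.CC"
          by (rule mh_comp[OF L.lift_hom E.J.clins_hom[OF Inb]])
        fix i a assume i: "i \<in> nbhds p" and a: "a \<in> carrier (fst F i)"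
        have iT: "i \<in> nbhds (Td (Td p))" using nbhds_mono[OF pTT] i by blast
        have "E.J.cl (E.J.ins (Iu (Td p)) (L.lift (E.I.cl (E.I.ins i a)))) = E.J.cl (E.J.ins (Iu (Td p)) (snd F i (Iu (Td p)) a))"
          using L.lift_ins[OF i a] by simp
        also have "\<dots> = E.J.cl (E.J.ins i a)" by (rule E.J.gen_eq[OF iT Inb IuU[OF i] a])
        also have "\<dots> = E.cext (E.I.cl (E.I.ins i a))" using E.cext_ins[OF i a] by simp
        finally show "E.J.cl (E.J.ins (Iu (Td p)) (L.lift (E.I.cl (E.I.ins i a)))) = E.cext (E.I.cl (E.I.ins i a))" .
      qed
    qed
  qed
qed

context tfam begin

lemma jstar_jshriek: assumes F: "psh_func R F" and G: "psh_func R G"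
  shows "d_a R T (j_upper_star R F) (j_upper_star R G) = d_a R T (j_shriek F) (j_shriek G)"
proof -
  have "d_a R T (j_shriek F) (j_shriek G) = d_a R T (j_upper_star R F) (j_upper_star R G)"
  proof (rule d_a_close[OF jshriek_func[OF F] jshriek_func[OF G] jstar_func[OF F] jstar_func[OF G]])
    fix d :: real assume d: "0 < d"
    show "pm_interleaved R (T d) (j_shriek F) (j_upper_star R F)" by (rule stalk_close[OF F Ttr Twb cp]) (use d in auto)
    show "pm_interleaved R (T d) (j_shriek G) (j_upper_star R G)" by (rule stalk_close[OF G Ttr Twb cp]) (use d in auto)
  qed
  then show ?thesis by simp
qed

end



lemma shm_hom: "sh_morph R F G f \<Longrightarrow> scott_open U \<Longrightarrow> f U \<in> module_hom R (fst F U) (fst G U)"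
  unfolding sh_morph_def by simp
lemma shm_nat: "sh_morph R F G f \<Longrightarrow> scott_open U \<Longrightarrow> scott_open V \<Longrightarrow> V \<subseteq> U \<Longrightarrow> x \<in> carrier (fst F U) \<Longrightarrow>
   f V (snd F U V x) = snd G U V (f U x)"
  unfolding sh_morph_def by simp

lemma sh_sep:
  assumes F: "scott_sheaf R F" and U: "\<forall>V\<in>\<U>. scott_open V"
    and s: "s \<in> carrier (fst F (\<Union>\<U>))" and t: "t \<in> carrier (fst F (\<Union>\<U>))"
    and e: "\<And>V. V \<in> \<U> \<Longrightarrow> snd F (\<Union>\<U>) V s = snd F (\<Union>\<U>) V t"
  shows "s = t"
proof -
  have "\<forall>\<U>. (\<forall>V\<in>\<U>. scott_open V) \<longrightarrow>
        (\<forall>s\<in>carrier (fst F (\<Union>\<U>)). \<forall>t\<in>carrier (fst F (\<Union>\<U>)).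
           (\<forall>V\<in>\<U>. snd F (\<Union>\<U>) V s = snd F (\<Union>\<U>) V t) \<longrightarrow> s = t)"
    using F unfolding scott_sheaf_def by simp
  then show ?thesis using U s t e by simp
qed

lemma sh_glue:
  assumes F: "scott_sheaf R F" and U: "\<forall>V\<in>\<U>. scott_open V"
    and s: "\<And>V. V \<in> \<U> \<Longrightarrow> s V \<in> carrier (fst F V)"
    and c: "\<And>V W. V \<in> \<U> \<Longrightarrow> W \<in> \<U> \<Longrightarrow> snd F V (V \<inter> W) (s V) = snd F W (V \<inter> W) (s W)"
  shows "\<exists>t\<in>carrier (fst F (\<Union>\<U>)). \<forall>V\<in>\<U>. snd F (\<Union>\<U>) V t = s V"
proof -
  have H: "\<forall>s. (\<forall>V\<in>\<U>. s V \<in> carrier (fst F V)) \<and>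
             (\<forall>V\<in>\<U>. \<forall>W\<in>\<U>. snd F V (V \<inter> W) (s V) = snd F W (V \<inter> W) (s W)) \<longrightarrow>
           (\<exists>t\<in>carrier (fst F (\<Union>\<U>)). \<forall>V\<in>\<U>. snd F (\<Union>\<U>) V t = s V)"
    using mp[OF spec[OF conjunct2[OF F[unfolded scott_sheaf_def]], of \<U>] U] by (rule conjunct2)
  show ?thesis using mp[OF spec[OF H, of s]] s c by blast
qed

lemma sh_id: "scott_sheaf R F \<Longrightarrow> scott_open U \<Longrightarrow> x \<in> carrier (fst F U) \<Longrightarrow> snd F U U x = x"
  unfolding scott_sheaf_def scott_presheaf_def by simp

lemma sh_sep_idx:
  assumes F: "scott_sheaf R F" and Oc: "\<And>p. p \<in> P \<Longrightarrow> scott_open (Oc p)" and WW: "W = \<Union>(Oc ` P)"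
    and s: "s \<in> carrier (fst F W)" and t: "t \<in> carrier (fst F W)"
    and e: "\<And>p. p \<in> P \<Longrightarrow> snd F W (Oc p) s = snd F W (Oc p) t"
  shows "s = t"
  using sh_sep[OF F, of "Oc ` P" s t] Oc s t e WW by auto

lemma sh_glue_idx:
  assumes F: "scott_sheaf R F" and Oc: "\<And>p. p \<in> P \<Longrightarrow> scott_open (Oc p)"
    and s: "\<And>p. p \<in> P \<Longrightarrow> \<sigma> p \<in> carrier (fst F (Oc p))"
    and c: "\<And>p q. p \<in> P \<Longrightarrow> q \<in> P \<Longrightarrow> snd F (Oc p) (Oc p \<inter> Oc q) (\<sigma> p) = snd F (Oc q) (Oc p \<inter> Oc q) (\<sigma> q)"
  shows "\<exists>t\<in>carrier (fst F (\<Union>(Oc ` P))). \<forall>p\<in>P. snd F (\<Union>(Oc ` P)) (Oc p) t = \<sigma> p"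
proof -
  define sV where "sV = (\<lambda>V. \<sigma> (SOME p. p \<in> P \<and> V = Oc p))"
  have ch: "V \<in> Oc ` P \<Longrightarrow> (SOME p. p \<in> P \<and> V = Oc p) \<in> P \<and> V = Oc (SOME p. p \<in> P \<and> V = Oc p)" for V
  proof -
    assume "V \<in> Oc ` P" then obtain q where "q \<in> P \<and> V = Oc q" by blast
    then show ?thesis by (rule someI[where P="\<lambda>p. p \<in> P \<and> V = Oc p"])
  qed
  have same: "\<sigma> p = \<sigma> q" if "p \<in> P" "q \<in> P" "Oc p = Oc q" for p q
  proof -
    have "snd F (Oc p) (Oc p \<inter> Oc q) (\<sigma> p) = snd F (Oc q) (Oc p \<inter> Oc q) (\<sigma> q)" using c that by blast
    then show ?thesis using that sh_id[OF F Oc s, of p] sh_id[OF F Oc s, of q] by simp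
  qed
  have sVp: "sV (Oc p) = \<sigma> p" if p: "p \<in> P" for p
  proof -
    have "(SOME q. q \<in> P \<and> Oc p = Oc q) \<in> P" "Oc p = Oc (SOME q. q \<in> P \<and> Oc p = Oc q)"
      using ch[of "Oc p"] p by auto
    then show ?thesis unfolding sV_def using same[OF p] by metis
  qed
  have "\<exists>t\<in>carrier (fst F (\<Union>(Oc ` P))). \<forall>V\<in>Oc ` P. snd F (\<Union>(Oc ` P)) V t = sV V"
  proof (rule sh_glue[OF F])
    show "\<forall>V\<in>Oc ` P. scott_open V" using Oc by blast
  next
    fix V assume "V \<in> Oc ` P"
    then obtain p where p: "p \<in> P" "V = Oc p" by blast
    show "sV V \<in> carrier (fst F V)" unfolding p(2) sVp[OF p(1)] by (rule s[OF p(1)])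
  next
    fix V W assume "V \<in> Oc ` P" "W \<in> Oc ` P"
    then obtain p q where p: "p \<in> P" "V = Oc p" and q: "q \<in> P" "W = Oc q" by blast
    show "snd F V (V \<inter> W) (sV V) = snd F W (V \<inter> W) (sV W)"
      unfolding p(2) q(2) sVp[OF p(1)] sVp[OF q(1)] by (rule c[OF p(1) q(1)])
  qed
  then obtain t where t: "t \<in> carrier (fst F (\<Union>(Oc ` P)))" "\<forall>V\<in>Oc ` P. snd F (\<Union>(Oc ` P)) V t = sV V" by blast
  have "\<forall>p\<in>P. snd F (\<Union>(Oc ` P)) (Oc p) t = \<sigma> p"
  proof
    fix p assume p: "p \<in> P"
    then have "Oc p \<in> Oc ` P" by blast
    then show "snd F (\<Union>(Oc ` P)) (Oc p) t = \<sigma> p" using t(2) sVp[OF p] p by simp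
  qed
  then show ?thesis using t(1) by blast
qed

section \<open>From sheaf interleavings to interleavings of j-shriek\<close>

lemma F1_morph:
  fixes A :: "('p::order, 'k, 'c) psh" and B :: "('p, 'k, 'd) psh"
  assumes Te: "order_iso Te" and h: "sh_morph R A (sh_pull Te B) h"
  shows "pm_morph R (j_shriek A) (pm_pull Te (j_shriek B)) (\<lambda>p. h (Iu p))"
  unfolding pm_morph_def j_shriek_def pm_pull_def fst_conv snd_conv
proof (intro conjI allI impI ballI)
  have TI: "Te ` Iu p = Iu (Te p)" for p using oiso_Iu[OF Te] .
  fix p show "h (Iu p) \<in> module_hom R (fst A (Iu p)) (fst B (Iu (Te p)))"
    using shm_hom[OF h Iu_open] TI by (simp add: sh_pull_def)
next
  have TI: "Te ` Iu p = Iu (Te p)" for p using oiso_Iu[OF Te] .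
  fix p q x assume "p \<le> q" "x \<in> carrier (fst A (Iu p))"
  then show "h (Iu q) (snd A (Iu p) (Iu q) x) = snd B (Iu (Te p)) (Iu (Te q)) (h (Iu p) x)"
    using shm_nat[OF h Iu_open Iu_open Iu_anti] TI by (simp add: sh_pull_def)
qed

lemma F1:
  fixes F :: "('p::order, 'k, 'a) psh" and G :: "('p, 'k, 'b) psh"
  assumes Te: "order_iso Te" and SI: "sh_interleaved R Te F G"
  shows "pm_interleaved R Te (j_shriek F) (j_shriek G)"
proof -
  obtain f g where fg: "sh_morph R F (sh_pull Te G) f" "sh_morph R G (sh_pull Te F) g"
    "\<forall>U. scott_open U \<longrightarrow> (\<forall>x\<in>carrier (fst F U). g (Te ` U) (f U x) = snd F U (Te ` Te ` U) x)"
    "\<forall>U. scott_open U \<longrightarrow> (\<forall>y\<in>carrier (fst G U). f (Te ` U) (g U y) = snd G U (Te ` Te ` U) y)"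
    using SI unfolding sh_interleaved_def by blast
  have TI: "Te ` Iu p = Iu (Te p)" for p using oiso_Iu[OF Te] .
  show ?thesis unfolding pm_interleaved_def
  proof (intro exI conjI)
    show "pm_morph R (j_shriek F) (pm_pull Te (j_shriek G)) (\<lambda>p. f (Iu p))" by (rule F1_morph[OF Te fg(1)])
    show "pm_morph R (j_shriek G) (pm_pull Te (j_shriek F)) (\<lambda>p. g (Iu p))" by (rule F1_morph[OF Te fg(2)])
    show "\<forall>p. \<forall>x\<in>carrier (fst (j_shriek F) p). g (Iu (Te p)) (f (Iu p) x) = snd (j_shriek F) p (Te (Te p)) x"
    proof (intro allI ballI)
      fix p x assume "x \<in> carrier (fst (j_shriek F) p)"
      then show "g (Iu (Te p)) (f (Iu p) x) = snd (j_shriek F) p (Te (Te p)) x"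
        using fg(3) Iu_open[of p] TI[of p] TI[of "Te p"] unfolding j_shriek_def fst_conv snd_conv by metis
    qed
    show "\<forall>p. \<forall>x\<in>carrier (fst (j_shriek G) p). f (Iu (Te p)) (g (Iu p) x) = snd (j_shriek G) p (Te (Te p)) x"
    proof (intro allI ballI)
      fix p x assume "x \<in> carrier (fst (j_shriek G) p)"
      then show "f (Iu (Te p)) (g (Iu p) x) = snd (j_shriek G) p (Te (Te p)) x"
        using fg(4) Iu_open[of p] TI[of p] TI[of "Te p"] unfolding j_shriek_def fst_conv snd_conv by metis
    qed
  qed
qed

section \<open>From interleavings of M, N to sheaf interleavings of j_* M, j_* N\<close>

definition jPhi :: "('p \<Rightarrow> 'p) \<Rightarrow> ('p \<Rightarrow> 'c \<Rightarrow> 'd) \<Rightarrow> 'p set \<Rightarrow> ('p \<Rightarrow> 'c) \<Rightarrow> 'p \<Rightarrow> 'd" where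
  "jPhi Te h U s y = (if y \<in> Te ` U then h (finv Te y) (s (finv Te y)) else undefined)"

lemma jlow_morph:
fixes A :: "('p::order, 'k, 'c) pmod" and B :: "('p, 'k, 'd) pmod"
assumes Te: "order_iso Te" "translation Te" and h: "pm_morph R A (pm_pull Te B) h"
shows "sh_morph R (j_lower_star A) (sh_pull Te (j_lower_star B)) (jPhi Te h)"
  unfolding sh_morph_def j_lower_star_def sh_pull_def fst_conv snd_conv
proof (intro conjI allI impI ballI)
  have fi: "finv Te (Te u) = u" for u using oiso_if[OF Te(1)] .
  have le: "Te u \<le> Te v \<longleftrightarrow> u \<le> v" for u v using oiso_le[OF Te(1)] .
  fix U :: "'p set" assume U: "scott_open U"
  have hc: "h u a \<in> carrier (fst B (Te u))" if "a \<in> carrier (fst A u)" for u a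
    using mh_carr[OF pmm_hom[OF h] that] by (simp add: pm_pull_def)
  show "jPhi Te h U \<in> module_hom R (lim_module U (\<le>) (fst A) (snd A)) (lim_module (Te ` U) (\<le>) (fst B) (snd B))"
  proof (rule mhI)
    fix s assume s: "s \<in> carrier (lim_module U (\<le>) (fst A) (snd A))"
    show "jPhi Te h U s \<in> carrier (lim_module (Te ` U) (\<le>) (fst B) (snd B))" unfolding lim_carrier_iff
    proof (intro conjI ballI allI impI)
      fix y assume "y \<in> Te ` U" then obtain u where u: "u \<in> U" "y = Te u" by blast
      show "jPhi Te h U s y \<in> carrier (fst B y)" using s u hc fi unfolding jPhi_def lim_carrier_iff by auto
    next
      fix y y' assume "y \<in> Te ` U" "y' \<in> Te ` U" "y \<le> y'"
      then obtain u u' where u: "u \<in> U" "y = Te u" "u' \<in> U" "y' = Te u'" "u \<le> u'" using le by blast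
      have su: "s u \<in> carrier (fst A u)" "snd A u u' (s u) = s u'" using s u unfolding lim_carrier_iff by auto
      show "snd B y y' (jPhi Te h U s y) = jPhi Te h U s y'"
        using pmm_nat[OF h u(5) su(1)] su(2) u fi unfolding jPhi_def by (simp add: pm_pull_def)
    next
      fix y assume "y \<notin> Te ` U" then show "jPhi Te h U s y = undefined" unfolding jPhi_def by simp
    qed
  next
    fix s t assume s: "s \<in> carrier (lim_module U (\<le>) (fst A) (snd A))" and t: "t \<in> carrier (lim_module U (\<le>) (fst A) (snd A))"
    show "jPhi Te h U (add (lim_module U (\<le>) (fst A) (snd A)) s t) = add (lim_module (Te ` U) (\<le>) (fst B) (snd B)) (jPhi Te h U s) (jPhi Te h U t)"
      unfolding jPhi_def lim_add
    proof (rule ext)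
      fix y show "(if y \<in> Te ` U then h (finv Te y) (if finv Te y \<in> U then add (fst A (finv Te y)) (s (finv Te y)) (t (finv Te y)) else undefined) else undefined) =
        (if y \<in> Te ` U then add (fst B y) (if y \<in> Te ` U then h (finv Te y) (s (finv Te y)) else undefined) (if y \<in> Te ` U then h (finv Te y) (t (finv Te y)) else undefined) else undefined)"
      proof (cases "y \<in> Te ` U")
        case True
        then obtain u where u: "u \<in> U" "y = Te u" by blast
        have "s u \<in> carrier (fst A u)" "t u \<in> carrier (fst A u)" using s t u unfolding lim_carrier_iff by auto
        then show ?thesis using u fi mh_add[OF pmm_hom[OF h]] by (simp add: pm_pull_def)
      qed simp
    qed
  next
    fix r s assume r: "r \<in> carrier R" and s: "s \<in> carrier (lim_module U (\<le>) (fst A) (snd A))"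
    show "jPhi Te h U (smult (lim_module U (\<le>) (fst A) (snd A)) r s) = smult (lim_module (Te ` U) (\<le>) (fst B) (snd B)) r (jPhi Te h U s)"
      unfolding jPhi_def lim_smult
    proof (rule ext)
      fix y show "(if y \<in> Te ` U then h (finv Te y) (if finv Te y \<in> U then smult (fst A (finv Te y)) r (s (finv Te y)) else undefined) else undefined) =
        (if y \<in> Te ` U then smult (fst B y) r (if y \<in> Te ` U then h (finv Te y) (s (finv Te y)) else undefined) else undefined)"
      proof (cases "y \<in> Te ` U")
        case True
        then obtain u where u: "u \<in> U" "y = Te u" by blast
        have "s u \<in> carrier (fst A u)" using s u unfolding lim_carrier_iff by auto
        then show ?thesis using u fi mh_smult[OF pmm_hom[OF h] r] by (simp add: pm_pull_def)
      qed simp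
    qed
  qed
next
  have fi: "finv Te (Te u) = u" for u using oiso_if[OF Te(1)] .
  fix U V :: "'p set" and s assume "scott_open U \<and> scott_open V \<and> V \<subseteq> U" and s: "s \<in> carrier (lim_module U (\<le>) (fst A) (snd A))"
  then have VU: "V \<subseteq> U" by blast
  show "jPhi Te h V (lim_restr V s) = lim_restr (Te ` V) (jPhi Te h U s)"
    unfolding jPhi_def lim_restr_def
  proof (rule ext)
    fix y show "(if y \<in> Te ` V then h (finv Te y) (if finv Te y \<in> V then s (finv Te y) else undefined) else undefined) =
      (if y \<in> Te ` V then if y \<in> Te ` U then h (finv Te y) (s (finv Te y)) else undefined else undefined)"
      using VU fi by auto
  qed
qed

lemma jlow_comp:
fixes A :: "('p::order, 'k, 'c) pmod" and h :: "'p \<Rightarrow> 'c \<Rightarrow> 'd"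
assumes Te: "order_iso Te" "translation Te"
    and hh: "\<forall>p. \<forall>x\<in>carrier (fst A p). h' (Te p) (h p x) = snd A p (Te (Te p)) x"
    and U: "scott_open U" and s: "s \<in> carrier (lim_module U (\<le>) (fst A) (snd A))"
shows "jPhi Te h' (Te ` U) (jPhi Te h U s) = lim_restr (Te ` Te ` U) s"
  unfolding jPhi_def lim_restr_def
proof (rule ext)
  have fi: "finv Te (Te u) = u" for u using oiso_if[OF Te(1)] .
  fix z show "(if z \<in> Te ` Te ` U then h' (finv Te z) (if finv Te z \<in> Te ` U then h (finv Te (finv Te z)) (s (finv Te (finv Te z))) else undefined) else undefined) =
    (if z \<in> Te ` Te ` U then s z else undefined)"
  proof (cases "z \<in> Te ` Te ` U")
    case True
    then obtain u where u: "u \<in> U" "z = Te (Te u)" by blast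
    have uT: "u \<le> Te (Te u)" using tr_inc[OF Te(2), of u] tr_inc[OF Te(2), of "Te u"] by (metis order.trans)
    then have TT: "Te (Te u) \<in> U" using open_up[OF U u(1)] by blast
    have "s u \<in> carrier (fst A u)" "snd A u (Te (Te u)) (s u) = s (Te (Te u))" using s u TT uT unfolding lim_carrier_iff by auto
    then show ?thesis using u fi hh by auto
  qed simp
qed

lemma jlow_sh:
  fixes M :: "('p::order, 'k, 'a) pmod" and N :: "('p, 'k, 'b) pmod"
  assumes M: "persistence_module R M" and N: "persistence_module R N"
    and Te: "order_iso Te" "translation Te" and PI: "pm_interleaved R Te M N"
  shows "sh_interleaved R Te (j_lower_star M) (j_lower_star N)"
proof -
  obtain f g where fg: "pm_morph R M (pm_pull Te N) f" "pm_morph R N (pm_pull Te M) g"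
    "\<forall>p. \<forall>x\<in>carrier (fst M p). g (Te p) (f p x) = snd M p (Te (Te p)) x"
    "\<forall>p. \<forall>y\<in>carrier (fst N p). f (Te p) (g p y) = snd N p (Te (Te p)) y"
    using PI unfolding pm_interleaved_def by blast
  show ?thesis unfolding sh_interleaved_def
  proof (intro exI conjI)
    show "sh_morph R (j_lower_star M) (sh_pull Te (j_lower_star N)) (jPhi Te f)" by (rule jlow_morph[OF Te fg(1)])
    show "sh_morph R (j_lower_star N) (sh_pull Te (j_lower_star M)) (jPhi Te g)" by (rule jlow_morph[OF Te fg(2)])
    show "\<forall>U. scott_open U \<longrightarrow> (\<forall>x\<in>carrier (fst (j_lower_star M) U). jPhi Te g (Te ` U) (jPhi Te f U x) = snd (j_lower_star M) U (Te ` Te ` U) x)"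
      unfolding j_lower_star_def fst_conv snd_conv using jlow_comp[where A=M and h=f and h'=g, OF Te fg(3)] by blast
    show "\<forall>U. scott_open U \<longrightarrow> (\<forall>x\<in>carrier (fst (j_lower_star N) U). jPhi Te f (Te ` U) (jPhi Te g U x) = snd (j_lower_star N) U (Te ` Te ` U) x)"
      unfolding j_lower_star_def fst_conv snd_conv using jlow_comp[where A=N and h=g and h'=f, OF Te fg(4)] by blast
  qed
qed



locale f2 =
  fixes R :: "('k,'r) ring_scheme" and F :: "('p::order,'k,'a) psh" and G :: "('p,'k,'b) psh"
    and Te S :: "'p \<Rightarrow> 'p" and f :: "'p \<Rightarrow> 'a \<Rightarrow> 'b"
  assumes FS: "scott_sheaf R F" and GS: "scott_sheaf R G"
    and Te: "order_iso Te" "translation Te" and S: "order_iso S" "translation S"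
    and TS: "\<And>u. way_below (Te u) (S u)"
    and cp: "continuous_poset TYPE('p)"
    and fm: "pm_morph R (j_shriek F) (pm_pull Te (j_shriek G)) f"
begin

definition Oc where "Oc p = wbu (Te p)"
definition sig where "sig U s p = snd G (Iu (Te p)) (Oc p) (f p (snd F U (Iu p) s))"
definition WW where "WW U = \<Union>(Oc ` U)"
definition glued where "glued U s = (SOME t. t \<in> carrier (fst G (WW U)) \<and> (\<forall>p\<in>U. snd G (WW U) (Oc p) t = sig U s p))"
definition Phi where "Phi U s = snd G (WW U) (S ` U) (glued U s)"

lemma psF: "psh_func R F" using sheaf_psh[OF FS] .
lemma psG: "psh_func R G" using sheaf_psh[OF GS] .

lemma Oc_open: "scott_open (Oc p)" unfolding Oc_def by (rule wbu_open[OF cp])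
lemma Oc_sub: "Oc p \<subseteq> Iu (Te p)" unfolding Oc_def by (rule wbu_Iu[OF cp])
lemma WW_open: "scott_open (WW U)" unfolding WW_def by (rule sopen_Union) (auto simp: Oc_open)
lemma Oc_WW: "p \<in> U \<Longrightarrow> Oc p \<subseteq> WW U" unfolding WW_def by blast
lemma SU_open: "scott_open U \<Longrightarrow> scott_open (S ` U)" by (rule oiso_open[OF S(1)])
lemma S_in_Oc: "S u \<in> Oc u" unfolding Oc_def using TS by simp
lemma SU_WW: "S ` U \<subseteq> WW U" unfolding WW_def using S_in_Oc by blast
lemma Te_le_S: "Te u \<le> S u" using wb_le[OF TS] .
lemma Oc_anti: "p \<le> r \<Longrightarrow> Oc r \<subseteq> Oc p"
  unfolding Oc_def using wb_mono[OF tr_mono[OF Te(2)] _ order.refl] by blast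
lemma Iu_Oc: "q \<in> S ` U \<Longrightarrow> u \<in> U \<Longrightarrow> q = S u \<Longrightarrow> Iu q \<subseteq> Oc u"
proof
  fix y assume "q = S u" "y \<in> Iu q"
  then have "S u \<le> y" using Iu_sub by simp
  then have "way_below (Te u) y" by (rule wb_mono[OF order.refl TS])
  then show "y \<in> Oc u" unfolding Oc_def by simp
qed

lemma resG: "scott_open A \<Longrightarrow> scott_open B \<Longrightarrow> scott_open C \<Longrightarrow> C \<subseteq> B \<Longrightarrow> B \<subseteq> A \<Longrightarrow> x \<in> carrier (fst G A) \<Longrightarrow>
   snd G B C (snd G A B x) = snd G A C x"
  by (rule psh_comp[OF psG])
lemma resF: "scott_open A \<Longrightarrow> scott_open B \<Longrightarrow> scott_open C \<Longrightarrow> C \<subseteq> B \<Longrightarrow> B \<subseteq> A \<Longrightarrow> x \<in> carrier (fst F A) \<Longrightarrow>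
   snd F B C (snd F A B x) = snd F A C x"
  by (rule psh_comp[OF psF])
lemma carrG: "scott_open A \<Longrightarrow> scott_open B \<Longrightarrow> B \<subseteq> A \<Longrightarrow> x \<in> carrier (fst G A) \<Longrightarrow> snd G A B x \<in> carrier (fst G B)"
  by (rule psh_carr[OF psG])
lemma carrF: "scott_open A \<Longrightarrow> scott_open B \<Longrightarrow> B \<subseteq> A \<Longrightarrow> x \<in> carrier (fst F A) \<Longrightarrow> snd F A B x \<in> carrier (fst F B)"
  by (rule psh_carr[OF psF])

lemma fhom: "f p \<in> module_hom R (fst F (Iu p)) (fst G (Iu (Te p)))"
  using pmm_hom[OF fm, of p] unfolding j_shriek_def pm_pull_def by simp
lemma fnat: "p \<le> q \<Longrightarrow> x \<in> carrier (fst F (Iu p)) \<Longrightarrow> f q (snd F (Iu p) (Iu q) x) = snd G (Iu (Te p)) (Iu (Te q)) (f p x)"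
  using pmm_nat[OF fm, of p q x] unfolding j_shriek_def pm_pull_def by simp

lemma sig_carr: assumes U: "scott_open U" and p: "p \<in> U" and s: "s \<in> carrier (fst F U)"
  shows "sig U s p \<in> carrier (fst G (Oc p))"
  unfolding sig_def
  by (rule carrG[OF Iu_open Oc_open Oc_sub mh_carr[OF fhom carrF[OF U Iu_open Iu_in_open[OF U p] s]]])

lemma sig_mono: assumes U: "scott_open U" and p: "p \<in> U" and pr: "p \<le> r" and s: "s \<in> carrier (fst F U)"
  shows "snd G (Oc p) (Oc r) (sig U s p) = sig U s r"
proof -
  define x where "x = snd F U (Iu p) s"
  have x: "x \<in> carrier (fst F (Iu p))" unfolding x_def by (rule carrF[OF U Iu_open Iu_in_open[OF U p] s])
  have fx: "f p x \<in> carrier (fst G (Iu (Te p)))" using mh_carr[OF fhom x] .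
  have TT: "Iu (Te r) \<subseteq> Iu (Te p)" using Iu_anti[OF tr_mono[OF Te(2) pr]] .
  have r: "r \<in> U" using open_up[OF U p pr] .
  have "snd G (Oc p) (Oc r) (sig U s p) = snd G (Iu (Te p)) (Oc r) (f p x)"
    unfolding sig_def x_def[symmetric] by (rule resG[OF Iu_open Oc_open Oc_open Oc_anti[OF pr] Oc_sub fx])
  also have "\<dots> = snd G (Iu (Te r)) (Oc r) (snd G (Iu (Te p)) (Iu (Te r)) (f p x))"
    by (rule resG[OF Iu_open Iu_open Oc_open Oc_sub TT fx, symmetric])
  also have "snd G (Iu (Te p)) (Iu (Te r)) (f p x) = f r (snd F (Iu p) (Iu r) x)"
    using fnat[OF pr x] by simp
  also have "snd F (Iu p) (Iu r) x = snd F U (Iu r) s"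
    unfolding x_def by (rule resF[OF U Iu_open Iu_open Iu_anti[OF pr] Iu_in_open[OF U p] s])
  finally show ?thesis unfolding sig_def .
qed

lemma Oc_int: "Oc p \<inter> Oc q = \<Union>(Oc ` {r. p \<le> r \<and> q \<le> r})"
proof (intro equalityI subsetI)
  fix y assume "y \<in> Oc p \<inter> Oc q"
  then have y: "way_below (Te p) y" "way_below (Te q) y" unfolding Oc_def by auto
  define z where "z = finv Te y"
  have yz: "y = Te z" unfolding z_def using oiso_fi[OF Te(1)] by simp
  have "way_below p z" "way_below q z" using y oiso_wb_iff[OF Te(1)] yz by auto
  moreover have "directed {x. way_below x z}" using cp unfolding continuous_poset_def by blast
  ultimately obtain r where r: "way_below r z" "p \<le> r" "q \<le> r" unfolding directed_def by blast
  have "way_below (Te r) y" using r(1) oiso_wb_iff[OF Te(1)] yz by auto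
  then show "y \<in> \<Union>(Oc ` {r. p \<le> r \<and> q \<le> r})" using r unfolding Oc_def by blast
next
  fix y assume "y \<in> \<Union>(Oc ` {r. p \<le> r \<and> q \<le> r})"
  then obtain r where "p \<le> r" "q \<le> r" "y \<in> Oc r" by blast
  then show "y \<in> Oc p \<inter> Oc q" using Oc_anti by blast
qed

lemma sig_compat: assumes U: "scott_open U" and p: "p \<in> U" and q: "q \<in> U" and s: "s \<in> carrier (fst F U)"
  shows "snd G (Oc p) (Oc p \<inter> Oc q) (sig U s p) = snd G (Oc q) (Oc p \<inter> Oc q) (sig U s q)"
proof (rule sh_sep_idx[OF GS _ Oc_int])
  show "\<And>r. r \<in> {r. p \<le> r \<and> q \<le> r} \<Longrightarrow> scott_open (Oc r)" by (rule Oc_open)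
  have io: "scott_open (Oc p \<inter> Oc q)" using sopen_Int[OF Oc_open Oc_open] .
  show "snd G (Oc p) (Oc p \<inter> Oc q) (sig U s p) \<in> carrier (fst G (Oc p \<inter> Oc q))"
    by (rule carrG[OF Oc_open io _ sig_carr[OF U p s]]) blast
  show "snd G (Oc q) (Oc p \<inter> Oc q) (sig U s q) \<in> carrier (fst G (Oc p \<inter> Oc q))"
    by (rule carrG[OF Oc_open io _ sig_carr[OF U q s]]) blast
  fix r assume r: "r \<in> {r. p \<le> r \<and> q \<le> r}"
  have rs: "Oc r \<subseteq> Oc p \<inter> Oc q" using Oc_anti r by blast
  have "snd G (Oc p \<inter> Oc q) (Oc r) (snd G (Oc p) (Oc p \<inter> Oc q) (sig U s p)) = snd G (Oc p) (Oc r) (sig U s p)"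
    by (rule resG[OF Oc_open io Oc_open rs _ sig_carr[OF U p s]]) blast
  also have "\<dots> = sig U s r" using sig_mono[OF U p _ s] r by blast
  also have "\<dots> = snd G (Oc q) (Oc r) (sig U s q)" using sig_mono[OF U q _ s] r by simp
  also have "\<dots> = snd G (Oc p \<inter> Oc q) (Oc r) (snd G (Oc q) (Oc p \<inter> Oc q) (sig U s q))"
    by (rule resG[OF Oc_open io Oc_open rs _ sig_carr[OF U q s], symmetric]) blast
  finally show "snd G (Oc p \<inter> Oc q) (Oc r) (snd G (Oc p) (Oc p \<inter> Oc q) (sig U s p)) =
    snd G (Oc p \<inter> Oc q) (Oc r) (snd G (Oc q) (Oc p \<inter> Oc q) (sig U s q))" .
qed

lemma glued: assumes U: "scott_open U" and s: "s \<in> carrier (fst F U)"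
  shows "glued U s \<in> carrier (fst G (WW U))" "\<And>p. p \<in> U \<Longrightarrow> snd G (WW U) (Oc p) (glued U s) = sig U s p"
proof -
  have "\<exists>t\<in>carrier (fst G (\<Union>(Oc ` U))). \<forall>p\<in>U. snd G (\<Union>(Oc ` U)) (Oc p) t = sig U s p"
    by (rule sh_glue_idx[OF GS Oc_open sig_carr[OF U _ s] sig_compat[OF U _ _ s]])
  then have "\<exists>t. t \<in> carrier (fst G (WW U)) \<and> (\<forall>p\<in>U. snd G (WW U) (Oc p) t = sig U s p)"
    unfolding WW_def by blast
  then have "glued U s \<in> carrier (fst G (WW U)) \<and> (\<forall>p\<in>U. snd G (WW U) (Oc p) (glued U s) = sig U s p)"
    unfolding glued_def by (rule someI_ex)
  then show "glued U s \<in> carrier (fst G (WW U))" "\<And>p. p \<in> U \<Longrightarrow> snd G (WW U) (Oc p) (glued U s) = sig U s p" by auto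
qed

lemma glued_uniq: assumes U: "scott_open U" and s: "s \<in> carrier (fst F U)"
  and t: "t \<in> carrier (fst G (WW U))" and e: "\<And>p. p \<in> U \<Longrightarrow> snd G (WW U) (Oc p) t = sig U s p"
  shows "t = glued U s"
  by (rule sh_sep_idx[OF GS Oc_open WW_def t glued(1)[OF U s]]) (simp add: e glued(2)[OF U s])

lemma sig_add: assumes U: "scott_open U" and p: "p \<in> U" and s: "s \<in> carrier (fst F U)" and s': "s' \<in> carrier (fst F U)"
  shows "sig U (add (fst F U) s s') p = add (fst G (Oc p)) (sig U s p) (sig U s' p)"
proof -
  have h1: "snd F U (Iu p) \<in> module_hom R (fst F U) (fst F (Iu p))" by (rule psh_hom[OF psF U Iu_open Iu_in_open[OF U p]])
  have h2: "snd G (Iu (Te p)) (Oc p) \<in> module_hom R (fst G (Iu (Te p))) (fst G (Oc p))" by (rule psh_hom[OF psG Iu_open Oc_open Oc_sub])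
  have "(\<lambda>s. sig U s p) \<in> module_hom R (fst F U) (fst G (Oc p))" unfolding sig_def
    by (rule mh_comp[OF mh_comp[OF h1 fhom] h2])
  then show ?thesis using mh_add s s' by fastforce
qed

lemma sig_smult: assumes U: "scott_open U" and p: "p \<in> U" and r: "r \<in> carrier R" and s: "s \<in> carrier (fst F U)"
  shows "sig U (smult (fst F U) r s) p = smult (fst G (Oc p)) r (sig U s p)"
proof -
  have h1: "snd F U (Iu p) \<in> module_hom R (fst F U) (fst F (Iu p))" by (rule psh_hom[OF psF U Iu_open Iu_in_open[OF U p]])
  have h2: "snd G (Iu (Te p)) (Oc p) \<in> module_hom R (fst G (Iu (Te p))) (fst G (Oc p))" by (rule psh_hom[OF psG Iu_open Oc_open Oc_sub])
  have "(\<lambda>s. sig U s p) \<in> module_hom R (fst F U) (fst G (Oc p))" unfolding sig_def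
    by (rule mh_comp[OF mh_comp[OF h1 fhom] h2])
  then show ?thesis using mh_smult r s by fastforce
qed

lemma glued_add: assumes U: "scott_open U" and s: "s \<in> carrier (fst F U)" and s': "s' \<in> carrier (fst F U)"
  shows "glued U (add (fst F U) s s') = add (fst G (WW U)) (glued U s) (glued U s')"
proof -
  interpret GW: Module.module R "fst G (WW U)" by (rule psh_mod[OF psG WW_open])
  interpret FU: Module.module R "fst F U" by (rule psh_mod[OF psF U])
  have gs: "glued U s \<in> carrier (fst G (WW U))" "glued U s' \<in> carrier (fst G (WW U))" using glued(1) U s s' by auto
  show ?thesis
  proof (rule glued_uniq[OF U _ _, symmetric])
    show "add (fst F U) s s' \<in> carrier (fst F U)" using s s' by simp
    show "add (fst G (WW U)) (glued U s) (glued U s') \<in> carrier (fst G (WW U))" using gs by simp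
    fix p assume p: "p \<in> U"
    have "snd G (WW U) (Oc p) (add (fst G (WW U)) (glued U s) (glued U s')) =
      add (fst G (Oc p)) (snd G (WW U) (Oc p) (glued U s)) (snd G (WW U) (Oc p) (glued U s'))"
      by (rule mh_add[OF psh_hom[OF psG WW_open Oc_open Oc_WW[OF p]] gs])
    also have "\<dots> = sig U (add (fst F U) s s') p" using glued(2)[OF U s p] glued(2)[OF U s' p] sig_add[OF U p s s'] by simp
    finally show "snd G (WW U) (Oc p) (add (fst G (WW U)) (glued U s) (glued U s')) = sig U (add (fst F U) s s') p" .
  qed
qed

lemma glued_smult: assumes U: "scott_open U" and r: "r \<in> carrier R" and s: "s \<in> carrier (fst F U)"
  shows "glued U (smult (fst F U) r s) = smult (fst G (WW U)) r (glued U s)"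
proof -
  interpret GW: Module.module R "fst G (WW U)" by (rule psh_mod[OF psG WW_open])
  interpret FU: Module.module R "fst F U" by (rule psh_mod[OF psF U])
  have gs: "glued U s \<in> carrier (fst G (WW U))" using glued(1) U s by auto
  show ?thesis
  proof (rule glued_uniq[OF U _ _, symmetric])
    show "smult (fst F U) r s \<in> carrier (fst F U)" using s r by simp
    show "smult (fst G (WW U)) r (glued U s) \<in> carrier (fst G (WW U))" using gs r by simp
    fix p assume p: "p \<in> U"
    have "snd G (WW U) (Oc p) (smult (fst G (WW U)) r (glued U s)) = smult (fst G (Oc p)) r (snd G (WW U) (Oc p) (glued U s))"
      by (rule mh_smult[OF psh_hom[OF psG WW_open Oc_open Oc_WW[OF p]] r gs])
    also have "\<dots> = sig U (smult (fst F U) r s) p" using glued(2)[OF U s p] sig_smult[OF U p r s] by simp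
    finally show "snd G (WW U) (Oc p) (smult (fst G (WW U)) r (glued U s)) = sig U (smult (fst F U) r s) p" .
  qed
qed

lemma Phi_hom: assumes U: "scott_open U" shows "Phi U \<in> module_hom R (fst F U) (fst G (S ` U))"
proof -
  have h: "snd G (WW U) (S ` U) \<in> module_hom R (fst G (WW U)) (fst G (S ` U))"
    by (rule psh_hom[OF psG WW_open SU_open[OF U] SU_WW])
  show ?thesis
  proof (rule mhI)
    fix s assume "s \<in> carrier (fst F U)" then show "Phi U s \<in> carrier (fst G (S ` U))"
      unfolding Phi_def using mh_carr[OF h glued(1)[OF U]] by blast
  next
    fix s s' assume s: "s \<in> carrier (fst F U)" and s': "s' \<in> carrier (fst F U)"
    show "Phi U (add (fst F U) s s') = add (fst G (S ` U)) (Phi U s) (Phi U s')"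
      unfolding Phi_def glued_add[OF U s s'] by (rule mh_add[OF h glued(1)[OF U s] glued(1)[OF U s']])
  next
    fix r s assume r: "r \<in> carrier R" and s: "s \<in> carrier (fst F U)"
    show "Phi U (smult (fst F U) r s) = smult (fst G (S ` U)) r (Phi U s)"
      unfolding Phi_def glued_smult[OF U r s] by (rule mh_smult[OF h r glued(1)[OF U s]])
  qed
qed

lemma sig_restr: assumes U: "scott_open U" and V: "scott_open V" and VU: "V \<subseteq> U" and p: "p \<in> V" and s: "s \<in> carrier (fst F U)"
  shows "sig V (snd F U V s) p = sig U s p"
  unfolding sig_def using resF[OF U V Iu_open Iu_in_open[OF V p] VU s] by simp

lemma Phi_nat: assumes U: "scott_open U" and V: "scott_open V" and VU: "V \<subseteq> U" and s: "s \<in> carrier (fst F U)"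
  shows "Phi V (snd F U V s) = snd G (S ` U) (S ` V) (Phi U s)"
proof -
  define s' where "s' = snd F U V s"
  have s': "s' \<in> carrier (fst F V)" unfolding s'_def by (rule carrF[OF U V VU s])
  have SV: "scott_open (S ` V)" "scott_open (S ` U)" using SU_open U V by auto
  have SVU: "S ` V \<subseteq> S ` U" using VU by blast
  define Oc' where "Oc' = (\<lambda>p. Oc p \<inter> S ` V)"
  have Oc'o: "scott_open (Oc' p)" for p unfolding Oc'_def by (rule sopen_Int[OF Oc_open SV(1)])
  have cov: "S ` V = \<Union>(Oc' ` V)" unfolding Oc'_def using S_in_Oc by blast
  have gV: "glued V s' \<in> carrier (fst G (WW V))" using glued(1)[OF V s'] .
  have gU: "glued U s \<in> carrier (fst G (WW U))" using glued(1)[OF U s] .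
  have PV: "Phi V s' \<in> carrier (fst G (S ` V))" unfolding Phi_def by (rule carrG[OF WW_open SV(1) SU_WW gV])
  have PU: "Phi U s \<in> carrier (fst G (S ` U))" unfolding Phi_def by (rule carrG[OF WW_open SV(2) SU_WW gU])
  show ?thesis unfolding s'_def[symmetric]
  proof (rule sh_sep_idx[OF GS Oc'o cov PV carrG[OF SV(2) SV(1) SVU PU]])
    fix p assume p: "p \<in> V"
    have pU: "p \<in> U" using p VU by blast
    have o1: "Oc' p \<subseteq> S ` V" "Oc' p \<subseteq> Oc p" unfolding Oc'_def by auto
    have "snd G (S ` V) (Oc' p) (Phi V s') = snd G (WW V) (Oc' p) (glued V s')"
      unfolding Phi_def by (rule resG[OF WW_open SV(1) Oc'o o1(1) SU_WW gV])
    also have "\<dots> = snd G (Oc p) (Oc' p) (snd G (WW V) (Oc p) (glued V s'))"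
      by (rule resG[OF WW_open Oc_open Oc'o o1(2) Oc_WW[OF p] gV, symmetric])
    also have "\<dots> = snd G (Oc p) (Oc' p) (sig U s p)"
      using glued(2)[OF V s' p] sig_restr[OF U V VU p s] s'_def by simp
    finally have L: "snd G (S ` V) (Oc' p) (Phi V s') = snd G (Oc p) (Oc' p) (sig U s p)" .
    have "snd G (S ` V) (Oc' p) (snd G (S ` U) (S ` V) (Phi U s)) = snd G (S ` U) (Oc' p) (Phi U s)"
      by (rule resG[OF SV(2) SV(1) Oc'o o1(1) SVU PU])
    also have "\<dots> = snd G (WW U) (Oc' p) (glued U s)"
      unfolding Phi_def by (rule resG[OF WW_open SV(2) Oc'o _ SU_WW gU]) (use o1 SVU in blast)
    also have "\<dots> = snd G (Oc p) (Oc' p) (snd G (WW U) (Oc p) (glued U s))"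
      by (rule resG[OF WW_open Oc_open Oc'o o1(2) Oc_WW[OF pU] gU, symmetric])
    also have "\<dots> = snd G (Oc p) (Oc' p) (sig U s p)" using glued(2)[OF U s pU] by simp
    finally show "snd G (S ` V) (Oc' p) (Phi V s') = snd G (S ` V) (Oc' p) (snd G (S ` U) (S ` V) (Phi U s))"
      using L by simp
  qed
qed

lemma Phi_morph: "sh_morph R F (sh_pull S G) Phi"
  unfolding sh_morph_def sh_pull_def fst_conv snd_conv
  using Phi_hom Phi_nat by blast

end

locale f2pair = A: f2 R F G Te S f + B: f2 R G F Te S g
  for R :: "('k,'r) ring_scheme" and F :: "('p::order,'k,'a) psh" and G :: "('p,'k,'b) psh"
    and Te S :: "'p \<Rightarrow> 'p" and f :: "'p \<Rightarrow> 'a \<Rightarrow> 'b" and g +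
  assumes fg: "\<And>p x. x \<in> carrier (fst F (Iu p)) \<Longrightarrow> g (Te p) (f p x) = snd F (Iu p) (Iu (Te (Te p))) x"
begin

lemma SSUU: assumes U: "scott_open U" shows "S ` S ` U \<subseteq> U"
proof
  fix y assume "y \<in> S ` S ` U" then obtain u where u: "u \<in> U" "y = S (S u)" by blast
  have "u \<le> S (S u)" using tr_inc[OF A.S(2), of u] tr_inc[OF A.S(2), of "S u"] by (metis order.trans)
  then show "y \<in> U" using open_up[OF U u(1)] u by blast
qed

lemma comp_x: assumes U: "scott_open U" and s: "s \<in> carrier (fst F U)" and u: "u \<in> U"
  shows "snd G (S ` U) (Iu (S u)) (A.Phi U s) = snd G (Iu (Te u)) (Iu (S u)) (f u (snd F U (Iu u) s))"
proof -
  define q where "q = S u"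
  have q: "q \<in> S ` U" using u q_def by blast
  have SU: "scott_open (S ` U)" using A.SU_open[OF U] .
  have IqSU: "Iu q \<subseteq> S ` U" by (rule Iu_in_open[OF SU q])
  have IqO: "Iu q \<subseteq> A.Oc u" by (rule A.Iu_Oc[OF q u q_def])
  have OcSU: "A.Oc u \<subseteq> A.WW U" using A.Oc_WW[OF u] .
  define y where "y = snd F U (Iu u) s"
  have y: "y \<in> carrier (fst F (Iu u))" unfolding y_def by (rule A.carrF[OF U Iu_open Iu_in_open[OF U u] s])
  have fy: "f u y \<in> carrier (fst G (Iu (Te u)))" using mh_carr[OF A.fhom y] .
  have gU: "A.glued U s \<in> carrier (fst G (A.WW U))" using A.glued(1)[OF U s] .
  have "snd G (S ` U) (Iu q) (A.Phi U s) = snd G (A.WW U) (Iu q) (A.glued U s)"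
    unfolding A.Phi_def by (rule A.resG[OF A.WW_open SU Iu_open IqSU A.SU_WW gU])
  also have "\<dots> = snd G (A.Oc u) (Iu q) (snd G (A.WW U) (A.Oc u) (A.glued U s))"
    by (rule A.resG[OF A.WW_open A.Oc_open Iu_open IqO OcSU gU, symmetric])
  also have "\<dots> = snd G (A.Oc u) (Iu q) (A.sig U s u)" using A.glued(2)[OF U s u] by simp
  also have "\<dots> = snd G (Iu (Te u)) (Iu q) (f u y)"
    unfolding A.sig_def y_def[symmetric] by (rule A.resG[OF Iu_open A.Oc_open Iu_open IqO A.Oc_sub fy])
  finally show ?thesis unfolding q_def y_def .
qed

lemma comp_g: assumes U: "scott_open U" and s: "s \<in> carrier (fst F U)" and u: "u \<in> U"
  shows "g (S u) (snd G (S ` U) (Iu (S u)) (A.Phi U s)) = snd F U (Iu (Te (S u))) s"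
proof -
  define q where "q = S u"
  define y where "y = snd F U (Iu u) s"
  have y: "y \<in> carrier (fst F (Iu u))" unfolding y_def by (rule A.carrF[OF U Iu_open Iu_in_open[OF U u] s])
  have fy: "f u y \<in> carrier (fst G (Iu (Te u)))" using mh_carr[OF A.fhom y] .
  have uq: "Te u \<le> q" using A.Te_le_S q_def by simp
  have TTq: "Te (Te u) \<le> Te q" using tr_mono[OF A.Te(2) uq] .
  have uTq: "u \<le> Te q" using tr_inc[OF A.Te(2), of u] uq tr_inc[OF A.Te(2), of q] by (metis order.trans)
  have uTT: "u \<le> Te (Te u)" using tr_inc[OF A.Te(2), of u] tr_inc[OF A.Te(2), of "Te u"] by (metis order.trans)
  have "g q (snd G (S ` U) (Iu q) (A.Phi U s)) = g q (snd G (Iu (Te u)) (Iu q) (f u y))"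
    using comp_x[OF U s u] q_def y_def by simp
  also have "\<dots> = snd F (Iu (Te (Te u))) (Iu (Te q)) (g (Te u) (f u y))" by (rule B.fnat[OF uq fy])
  also have "\<dots> = snd F (Iu (Te (Te u))) (Iu (Te q)) (snd F (Iu u) (Iu (Te (Te u))) y)" using fg[OF y] by simp
  also have "\<dots> = snd F (Iu u) (Iu (Te q)) y"
    by (rule A.resF[OF Iu_open Iu_open Iu_open Iu_anti[OF TTq] Iu_anti[OF uTT] y])
  also have "\<dots> = snd F U (Iu (Te q)) s"
    unfolding y_def by (rule A.resF[OF U Iu_open Iu_open Iu_anti[OF uTq] Iu_in_open[OF U u] s])
  finally show ?thesis unfolding q_def .
qed

lemma comp_sig: assumes U: "scott_open U" and s: "s \<in> carrier (fst F U)" and u: "u \<in> U"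
  shows "B.sig (S ` U) (A.Phi U s) (S u) = snd F U (A.Oc (S u)) s"
proof -
  have uq: "Te u \<le> S u" using A.Te_le_S by simp
  have uTq: "u \<le> Te (S u)" using tr_inc[OF A.Te(2), of u] uq tr_inc[OF A.Te(2), of "S u"] by (metis order.trans)
  have ITqU: "Iu (Te (S u)) \<subseteq> U" using Iu_anti[OF uTq] Iu_in_open[OF U u] by blast
  have "B.sig (S ` U) (A.Phi U s) (S u) = snd F (Iu (Te (S u))) (B.Oc (S u)) (snd F U (Iu (Te (S u))) s)"
    unfolding B.sig_def comp_g[OF U s u] ..
  also have "\<dots> = snd F U (B.Oc (S u)) s"
    by (rule A.resF[OF U Iu_open B.Oc_open B.Oc_sub ITqU s])
  finally show ?thesis unfolding A.Oc_def B.Oc_def .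
qed

lemma comp: assumes U: "scott_open U" and s: "s \<in> carrier (fst F U)"
  shows "B.Phi (S ` U) (A.Phi U s) = snd F U (S ` S ` U) s"
proof -
  define x where "x = A.Phi U s"
  have SU: "scott_open (S ` U)" using A.SU_open[OF U] .
  have SSU: "scott_open (S ` S ` U)" using A.SU_open[OF SU] .
  have x: "x \<in> carrier (fst G (S ` U))" unfolding x_def using mh_carr[OF A.Phi_hom[OF U] s] .
  define Oc' where "Oc' = (\<lambda>q. B.Oc q \<inter> S ` S ` U)"
  have Oc'o: "scott_open (Oc' q)" for q unfolding Oc'_def by (rule sopen_Int[OF B.Oc_open SSU])
  have cov: "S ` S ` U = \<Union>(Oc' ` (S ` U))"
  proof (intro equalityI subsetI)
    fix y assume y: "y \<in> S ` S ` U"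
    then obtain q where q: "q \<in> S ` U" "y = S q" by blast
    then have "y \<in> Oc' q" unfolding Oc'_def using B.S_in_Oc y by simp
    then show "y \<in> \<Union>(Oc' ` (S ` U))" using q(1) by blast
  next
    fix y assume "y \<in> \<Union>(Oc' ` (S ` U))" then show "y \<in> S ` S ` U" unfolding Oc'_def by blast
  qed
  have gB: "B.glued (S ` U) x \<in> carrier (fst F (B.WW (S ` U)))" using B.glued(1)[OF SU x] .
  have L: "B.Phi (S ` U) x \<in> carrier (fst F (S ` S ` U))" unfolding B.Phi_def by (rule B.carrG[OF B.WW_open SSU B.SU_WW gB])
  show ?thesis unfolding x_def[symmetric]
  proof (rule sh_sep_idx[OF A.FS Oc'o cov L A.carrF[OF U SSU SSUU[OF U] s]])
    fix q assume q: "q \<in> S ` U"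
    then obtain u where u: "u \<in> U" "q = S u" by blast
    have o1: "Oc' q \<subseteq> S ` S ` U" "Oc' q \<subseteq> B.Oc q" unfolding Oc'_def by (rule Int_lower2, rule Int_lower1)
    have uq: "Te u \<le> S u" using A.Te_le_S by simp
    have uTq: "u \<le> Te (S u)" using tr_inc[OF A.Te(2), of u] uq tr_inc[OF A.Te(2), of "S u"] by (metis order.trans)
    have OU: "B.Oc q \<subseteq> U" using Iu_anti[OF uTq] Iu_in_open[OF U u(1)] B.Oc_sub u(2) by blast
    have Bsig: "B.sig (S ` U) x q = snd F U (B.Oc q) s" using comp_sig[OF U s u(1)] u(2) x_def unfolding A.Oc_def B.Oc_def by simp
    have "snd F (S ` S ` U) (Oc' q) (B.Phi (S ` U) x) = snd F (B.WW (S ` U)) (Oc' q) (B.glued (S ` U) x)"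
      unfolding B.Phi_def by (rule B.resG[OF B.WW_open SSU Oc'o o1(1) B.SU_WW gB])
    also have "\<dots> = snd F (B.Oc q) (Oc' q) (snd F (B.WW (S ` U)) (B.Oc q) (B.glued (S ` U) x))"
      by (rule B.resG[OF B.WW_open B.Oc_open Oc'o o1(2) B.Oc_WW[OF q] gB, symmetric])
    also have "\<dots> = snd F (B.Oc q) (Oc' q) (B.sig (S ` U) x q)" using B.glued(2)[OF SU x q] by simp
    also have "\<dots> = snd F (B.Oc q) (Oc' q) (snd F U (B.Oc q) s)" unfolding Bsig ..
    also have "\<dots> = snd F U (Oc' q) s"
      by (rule A.resF[OF U B.Oc_open Oc'o o1(2) OU s])
    also have "\<dots> = snd F (S ` S ` U) (Oc' q) (snd F U (S ` S ` U) s)"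
      by (rule A.resF[OF U SSU Oc'o o1(1) SSUU[OF U] s, symmetric])
    finally show "snd F (S ` S ` U) (Oc' q) (B.Phi (S ` U) x) = snd F (S ` S ` U) (Oc' q) (snd F U (S ` S ` U) s)" .
  qed
qed

end

lemma F2:
  fixes F :: "('p::order,'k,'a) psh" and G :: "('p,'k,'b) psh"
  assumes FS: "scott_sheaf R F" and GS: "scott_sheaf R G"
    and Te: "order_iso Te" "translation Te" and S: "order_iso S" "translation S"
    and TS: "\<And>u. way_below (Te u) (S u)"
    and cp: "continuous_poset TYPE('p)"
    and PI: "pm_interleaved R Te (j_shriek F) (j_shriek G)"
  shows "sh_interleaved R S F G"
proof -
  obtain f g where fg: "pm_morph R (j_shriek F) (pm_pull Te (j_shriek G)) f" "pm_morph R (j_shriek G) (pm_pull Te (j_shriek F)) g"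
    "\<forall>p. \<forall>x\<in>carrier (fst (j_shriek F) p). g (Te p) (f p x) = snd (j_shriek F) p (Te (Te p)) x"
    "\<forall>p. \<forall>y\<in>carrier (fst (j_shriek G) p). f (Te p) (g p y) = snd (j_shriek G) p (Te (Te p)) y"
    using PI unfolding pm_interleaved_def by blast
  interpret P1: f2pair R F G Te S f g
    unfolding f2pair_def f2pair_axioms_def f2_def
    using FS GS Te S TS cp fg(1,2) fg(3)[unfolded j_shriek_def] by simp
  interpret P2: f2pair R G F Te S g f
    unfolding f2pair_def f2pair_axioms_def f2_def
    using FS GS Te S TS cp fg(1,2) fg(4)[unfolded j_shriek_def] by simp
  show ?thesis unfolding sh_interleaved_def
    using P1.A.Phi_morph P1.B.Phi_morph P1.comp P2.comp by blast
qed



lemma Inf_mono_imp: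
  assumes "\<And>e. 0 \<le> e \<Longrightarrow> P e \<Longrightarrow> Q e"
  shows "Inf {ereal e |e. 0 \<le> e \<and> Q e} \<le> Inf {ereal e |e. 0 \<le> e \<and> P e}"
  by (rule Inf_superset_mono) (use assms in blast)

lemma Inf_eps:
  assumes "\<And>e d. 0 \<le> e \<Longrightarrow> P e \<Longrightarrow> 0 < d \<Longrightarrow> Q (e + d)"
  shows "Inf {ereal e |e. 0 \<le> e \<and> Q e} \<le> Inf {ereal e |e. 0 \<le> e \<and> P e}"
proof (rule Inf_greatest, clarify)
  fix e assume e: "0 \<le> e" "P e"
  show "Inf {ereal e |e. 0 \<le> e \<and> Q e} \<le> ereal e"
  proof (rule ereal_le_epsilon2)
    fix d :: real assume d: "0 < d"
    have "ereal (e + d) \<in> {ereal e |e. 0 \<le> e \<and> Q e}" using assms[OF e d] e d by auto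
    then have "Inf {ereal e |e. 0 \<le> e \<and> Q e} \<le> ereal (e + d)" by (rule Inf_lower)
    then show "Inf {ereal e |e. 0 \<le> e \<and> Q e} \<le> ereal e + ereal d" by simp
  qed
qed

context tfam begin

lemma sigma_shriek:
  fixes F :: "('p, 'k, 'a) psh" and G :: "('p, 'k, 'b) psh"
  assumes FS: "scott_sheaf R F" and GS: "scott_sheaf R G"
  shows "d_sigma R T F G = d_a R T (j_shriek F) (j_shriek G)"
proof (rule order_antisym)
  show "d_sigma R T F G \<le> d_a R T (j_shriek F) (j_shriek G)"
    unfolding d_sigma_def d_a_def
  proof (rule Inf_eps)
    fix e d :: real assume e: "0 \<le> e" and PI: "pm_interleaved R (T e) (j_shriek F) (j_shriek G)" and d: "0 < d"
    show "sh_interleaved R (T (e + d)) F G"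
    proof (rule F2[OF FS GS Tiso[OF e] Ttr[OF e] Tiso Ttr _ cp PI])
      show "0 \<le> e + d" using e d by simp
      show "0 \<le> e + d" using e d by simp
      fix u
      have "way_below (T e u) (T d (T e u))" using Twb[OF d] .
      moreover have "T d (T e u) \<le> T (e + d) u" using Tcomp[of d e u] e d by (simp add: add.commute)
      ultimately show "way_below (T e u) (T (e + d) u)" using wb_mono[OF order.refl] by blast
    qed
  qed
  show "d_a R T (j_shriek F) (j_shriek G) \<le> d_sigma R T F G"
    unfolding d_sigma_def d_a_def
    by (rule Inf_mono_imp) (rule F1[OF Tiso])
qed

lemma part_iv:
  assumes M: "persistence_module R M" and N: "persistence_module R N"
  shows "d_a R T M N = d_sigma R T (j_lower_star M) (j_lower_star N)"
proof (rule order_antisym)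
  have "d_a R T M N = d_a R T (j_shriek (j_lower_star M)) (j_shriek (j_lower_star N))" by (rule jlj_close[OF M N])
  also have "\<dots> \<le> d_sigma R T (j_lower_star M) (j_lower_star N)"
    unfolding d_sigma_def d_a_def by (rule Inf_mono_imp) (rule F1[OF Tiso])
  finally show "d_a R T M N \<le> d_sigma R T (j_lower_star M) (j_lower_star N)" .
  show "d_sigma R T (j_lower_star M) (j_lower_star N) \<le> d_a R T M N"
    unfolding d_sigma_def d_a_def by (rule Inf_mono_imp) (rule jlow_sh[OF M N Tiso Ttr])
qed

end

theorem mainTheorem19:
  fixes R :: "('k, 'r) ring_scheme"
    and T :: "real \<Rightarrow> 'p::order \<Rightarrow> 'p"
    and F :: "('p, 'k, 'a) psh" and G :: "('p, 'k, 'b) psh"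
    and M :: "('p, 'k, 'c) pmod" and N :: "('p, 'k, 'd) pmod"
  assumes "cring R"
    and "continuous_poset TYPE('p)"
    and "\<forall>\<epsilon>\<ge>0. translation (T \<epsilon>) \<and> scott_continuous (T \<epsilon>)"
    and "superlinear T" and "TR1 T" and "TR2 T"
    and "scott_sheaf R F" and "scott_sheaf R G"
    and "persistence_module R M" and "persistence_module R N"
  shows "d_sigma R T F G = d_a R T (j_upper_star R F) (j_upper_star R G)
       \<and> d_a R T (j_upper_star R F) (j_upper_star R G) = d_a R T (j_shriek F) (j_shriek G)
       \<and> d_a R T M N = d_a R T (pm_under M) (pm_under N)
       \<and> d_a R T M N = d_a R T (pm_over R M) (pm_over R N)
       \<and> d_a R T M N = d_sigma R T (j_lower_star M) (j_lower_star N)"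
proof -
  interpret tfam T using assms(2-6) unfolding tfam_def by blast
  have e2: "d_a R T (j_upper_star R F) (j_upper_star R G) = d_a R T (j_shriek F) (j_shriek G)"
    by (rule jstar_jshriek[OF sheaf_psh[OF assms(7)] sheaf_psh[OF assms(8)]])
  have e1: "d_sigma R T F G = d_a R T (j_upper_star R F) (j_upper_star R G)"
    using sigma_shriek[OF assms(7,8)] e2 by simp
  show ?thesis using e1 e2 part_ii[OF assms(9,10)] part_iii[OF assms(9,10)] part_iv[OF assms(9,10)] by blast
qed


end
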